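(* Let $k$ be a commutative ring, $P,P'$ invertible $k$-modules, $Q'=P'^*$. Let $A$ be a $P$-Frobenius $k$-algebra and $B$ a $P'$-Frobenius $k$-algebra such that $B$ is a subalgebra of $A$, $A_B$ is a finitely generated projective right $B$-module, and some Nakayama automorphism $\nu_A$ of $A$ satisfies $\nu_A(B)=B$. Let $\nu_B$ be a Nakayama automorphism of $B$ and $\beta=\nu_B\circ\nu_A^{-1}$ (restricted to $B$). Then $A$ is a $W$-Frobenius extension of $B$, where $W={}_\beta B\otimes_kQ'\otimes_kP$.
   Context: For an invertible (finitely generated projective rank-one) $k$-module $P$, a $k$-algebra $A$ is $P$-Frobenius if it is finitely generated projective over $k$ and $A_A\cong\mathrm{Hom}_k(A,P)_A$ as right $A$-modules, where $\mathrm{Hom}_k(A,P)$ is an $A$-bimodule via $(bfc)(a)=f(cab)$. A Frobenius homomorphism is $\phi\in\mathrm{Hom}_k(A,P)$ such that $a\mapsto\phi a$ is such an isomorphism; its Nakayama automorphism is the algebra automorphism $\nu$ with $a\phi=\phi\nu(a)$, i.e. $\phi(xa)=\phi(\nu(a)x)$ for all $a,x$; a Nakayama automorphism of $A$ is one arising from some Frobenius homomorphism. ${}_\beta B$ denotes $B$ with right regular action and left action $b\cdot x=\beta(b)x$; $W$ is a $B$-bimodule via its first factor. For a subring $B\subseteq A$ and an invertible $B$-bimodule $W$, $A$ is a $W$-Frobenius extension of $B$ if $A_B$ is finitely generated projective and ${}_BA_A\cong{}_B\mathrm{Hom}_B(A_B,W_B)_A$, where $(bfa)(x)=bf(ax)$.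 *)

theory Defs
  imports Main
begin

record ('k, 'm) kmod =
  carr  :: "'m set"
  addm  :: "'m \<Rightarrow> 'm \<Rightarrow> 'm"
  zerom :: "'m"
  smulm :: "'k \<Rightarrow> 'm \<Rightarrow> 'm"

record ('k, 'a) kalg = "('k, 'a) kmod" +
  mulm :: "'a \<Rightarrow> 'a \<Rightarrow> 'a"
  onem :: "'a"

definition kmodule :: "('k::comm_ring_1, 'm, 'z) kmod_scheme \<Rightarrow> bool" where
  "kmodule M \<longleftrightarrow>
     zerom M \<in> carr M \<and>
     (\<forall>x\<in>carr M. \<forall>y\<in>carr M. addm M x y \<in> carr M) \<and>
     (\<forall>r. \<forall>x\<in>carr M. smulm M r x \<in> carr M) \<and>
     (\<forall>x\<in>carr M. \<forall>y\<in>carr M. \<forall>z\<in>carr M. addm M (addm M x y) z = addm M x (addm M y z)) \<and>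
     (\<forall>x\<in>carr M. \<forall>y\<in>carr M. addm M x y = addm M y x) \<and>
     (\<forall>x\<in>carr M. addm M (zerom M) x = x) \<and>
     (\<forall>x\<in>carr M. \<exists>y\<in>carr M. addm M x y = zerom M) \<and>
     (\<forall>r. \<forall>x\<in>carr M. \<forall>y\<in>carr M. smulm M r (addm M x y) = addm M (smulm M r x) (smulm M r y)) \<and>
     (\<forall>r s. \<forall>x\<in>carr M. smulm M (r + s) x = addm M (smulm M r x) (smulm M s x)) \<and>
     (\<forall>r s. \<forall>x\<in>carr M. smulm M (r * s) x = smulm M r (smulm M s x)) \<and>
     (\<forall>x\<in>carr M. smulm M 1 x = x)"

text \<open>k-linear maps, and the set Hom_k(M,N) (maps are made extensional: zero off the carrier).\<close>

definition klinear :: "('k::comm_ring_1, 'm, 'z1) kmod_scheme \<Rightarrow> ('k, 'n, 'z2) kmod_scheme \<Rightarrow> ('m \<Rightarrow> 'n) \<Rightarrow> bool" where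
  "klinear M N f \<longleftrightarrow>
     (\<forall>x\<in>carr M. f x \<in> carr N) \<and>
     (\<forall>x\<in>carr M. \<forall>y\<in>carr M. f (addm M x y) = addm N (f x) (f y)) \<and>
     (\<forall>r. \<forall>x\<in>carr M. f (smulm M r x) = smulm N r (f x))"

definition homk :: "('k::comm_ring_1, 'm, 'z1) kmod_scheme \<Rightarrow> ('k, 'n, 'z2) kmod_scheme \<Rightarrow> ('m \<Rightarrow> 'n) set" where
  "homk M N = {f. klinear M N f \<and> (\<forall>x. x \<notin> carr M \<longrightarrow> f x = zerom N)}"

definition kring :: "('k::comm_ring_1, 'k) kmod" where
  "kring = \<lparr>carr = UNIV, addm = (+), zerom = 0, smulm = (*)\<rparr>"

definition kdual :: "('k::comm_ring_1, 'm, 'z) kmod_scheme \<Rightarrow> ('k, 'm \<Rightarrow> 'k) kmod" where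
  "kdual M = \<lparr>carr = homk M kring, addm = (\<lambda>f g x. f x + g x), zerom = (\<lambda>x. 0),
              smulm = (\<lambda>r f x. r * f x)\<rparr>"

primrec msum :: "('m \<Rightarrow> 'm \<Rightarrow> 'm) \<Rightarrow> 'm \<Rightarrow> (nat \<Rightarrow> 'm) \<Rightarrow> nat \<Rightarrow> 'm" where
  "msum ad z f 0 = z"
| "msum ad z f (Suc n) = ad (msum ad z f n) (f n)"

text \<open>Finitely generated projective k-module (dual basis lemma form: direct summand of k^n).\<close>

definition kfgp :: "('k::comm_ring_1, 'm, 'z) kmod_scheme \<Rightarrow> bool" where
  "kfgp M \<longleftrightarrow> (\<exists>n x \<phi>. (\<forall>i<n. x i \<in> carr M \<and> \<phi> i \<in> homk M kring) \<and>
      (\<forall>y\<in>carr M. y = msum (addm M) (zerom M) (\<lambda>i. smulm M (\<phi> i y) (x i)) n))"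

text \<open>Invertible k-module: finitely generated projective of constant rank one.  For a finitely
  generated projective module P this is equivalent to the structure map k \<rightarrow> End_k(P)
  being bijective (checked locally: k_p \<rightarrow> M_n(k_p) is bijective iff n = 1).\<close>

definition invertible_kmod :: "('k::comm_ring_1, 'm, 'z) kmod_scheme \<Rightarrow> bool" where
  "invertible_kmod P \<longleftrightarrow> kmodule P \<and> kfgp P \<and>
     bij_betw (\<lambda>r x. if x \<in> carr P then smulm P r x else zerom P) UNIV (homk P P)"

definition kalgebra :: "('k::comm_ring_1, 'a, 'z) kalg_scheme \<Rightarrow> bool" where
  "kalgebra A \<longleftrightarrow> kmodule A \<and> onem A \<in> carr A \<and>
     (\<forall>x\<in>carr A. \<forall>y\<in>carr A. mulm A x y \<in> carr A) \<and>
     (\<forall>x\<in>carr A. \<forall>y\<in>carr A. \<forall>z\<in>carr A. mulm A (mulm A x y) z = mulm A x (mulm A y z)) \<and>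
     (\<forall>x\<in>carr A. mulm A (onem A) x = x \<and> mulm A x (onem A) = x) \<and>
     (\<forall>x\<in>carr A. \<forall>y\<in>carr A. \<forall>z\<in>carr A.
        mulm A x (addm A y z) = addm A (mulm A x y) (mulm A x z) \<and>
        mulm A (addm A y z) x = addm A (mulm A y x) (mulm A z x)) \<and>
     (\<forall>r. \<forall>x\<in>carr A. \<forall>y\<in>carr A.
        smulm A r (mulm A x y) = mulm A (smulm A r x) y \<and>
        smulm A r (mulm A x y) = mulm A x (smulm A r y))"

definition subalgebra :: "('k::comm_ring_1, 'a, 'z1) kalg_scheme \<Rightarrow> ('k, 'a, 'z2) kalg_scheme \<Rightarrow> bool" where
  "subalgebra B A \<longleftrightarrow> kalgebra A \<and> kalgebra B \<and> carr B \<subseteq> carr A \<and>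
     zerom B = zerom A \<and> onem B = onem A \<and>
     (\<forall>x\<in>carr B. \<forall>y\<in>carr B. addm B x y = addm A x y \<and> mulm B x y = mulm A x y) \<and>
     (\<forall>r. \<forall>x\<in>carr B. smulm B r x = smulm A r x)"

definition alg_aut :: "('k::comm_ring_1, 'a, 'z) kalg_scheme \<Rightarrow> ('a \<Rightarrow> 'a) \<Rightarrow> bool" where
  "alg_aut A \<nu> \<longleftrightarrow> bij_betw \<nu> (carr A) (carr A) \<and> \<nu> (onem A) = onem A \<and>
     (\<forall>x\<in>carr A. \<forall>y\<in>carr A. \<nu> (addm A x y) = addm A (\<nu> x) (\<nu> y) \<and>
                              \<nu> (mulm A x y) = mulm A (\<nu> x) (\<nu> y)) \<and>
     (\<forall>r. \<forall>x\<in>carr A. \<nu> (smulm A r x) = smulm A r (\<nu> x))"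

definition hom_ract :: "('k::comm_ring_1, 'a, 'z1) kalg_scheme \<Rightarrow> ('k, 'p, 'z2) kmod_scheme \<Rightarrow>
    ('a \<Rightarrow> 'p) \<Rightarrow> 'a \<Rightarrow> ('a \<Rightarrow> 'p)" where
  "hom_ract A P f c = (\<lambda>a. if a \<in> carr A then f (mulm A c a) else zerom P)"

text \<open>P-Frobenius algebra: A is f.g. projective over k and A_A \<cong> Hom_k(A,P)_A.\<close>

definition frobenius :: "('k::comm_ring_1, 'a, 'z1) kalg_scheme \<Rightarrow> ('k, 'p, 'z2) kmod_scheme \<Rightarrow> bool" where
  "frobenius A P \<longleftrightarrow> kalgebra A \<and> kmodule P \<and> kfgp A \<and>
     (\<exists>h. bij_betw h (carr A) (homk A P) \<and>
        (\<forall>x\<in>carr A. \<forall>y\<in>carr A. h (addm A x y) =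
              (\<lambda>a. if a \<in> carr A then addm P (h x a) (h y a) else zerom P)) \<and>
        (\<forall>x\<in>carr A. \<forall>c\<in>carr A. h (mulm A x c) = hom_ract A P (h x) c))"

text \<open>Frobenius homomorphism: a \<mapsto> \<phi> a is such an isomorphism (it is automatically additive
  and right A-linear).\<close>

definition frobenius_hom :: "('k::comm_ring_1, 'a, 'z1) kalg_scheme \<Rightarrow> ('k, 'p, 'z2) kmod_scheme \<Rightarrow>
    ('a \<Rightarrow> 'p) \<Rightarrow> bool" where
  "frobenius_hom A P \<phi> \<longleftrightarrow> \<phi> \<in> homk A P \<and> bij_betw (hom_ract A P \<phi>) (carr A) (homk A P)"

definition nakayama_aut :: "('k::comm_ring_1, 'a, 'z1) kalg_scheme \<Rightarrow> ('k, 'p, 'z2) kmod_scheme \<Rightarrow>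
    ('a \<Rightarrow> 'a) \<Rightarrow> bool" where
  "nakayama_aut A P \<nu> \<longleftrightarrow> (\<exists>\<phi>. frobenius_hom A P \<phi> \<and> alg_aut A \<nu> \<and>
      (\<forall>a\<in>carr A. \<forall>x\<in>carr A. \<phi> (mulm A x a) = \<phi> (mulm A (\<nu> a) x)))"

record ('m, 'b) bimod =
  bcarr :: "'m set"
  badd  :: "'m \<Rightarrow> 'm \<Rightarrow> 'm"
  bzero :: "'m"
  lact  :: "'b \<Rightarrow> 'm \<Rightarrow> 'm"
  ract  :: "'m \<Rightarrow> 'b \<Rightarrow> 'm"

definition bimodule :: "('k::comm_ring_1, 'b, 'z1) kalg_scheme \<Rightarrow> ('m, 'b, 'z2) bimod_scheme \<Rightarrow> bool" where
  "bimodule B W \<longleftrightarrow>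
     bzero W \<in> bcarr W \<and>
     (\<forall>x\<in>bcarr W. \<forall>y\<in>bcarr W. badd W x y \<in> bcarr W) \<and>
     (\<forall>x\<in>bcarr W. \<forall>y\<in>bcarr W. \<forall>z\<in>bcarr W. badd W (badd W x y) z = badd W x (badd W y z)) \<and>
     (\<forall>x\<in>bcarr W. \<forall>y\<in>bcarr W. badd W x y = badd W y x) \<and>
     (\<forall>x\<in>bcarr W. badd W (bzero W) x = x) \<and>
     (\<forall>x\<in>bcarr W. \<exists>y\<in>bcarr W. badd W x y = bzero W) \<and>
     (\<forall>b\<in>carr B. \<forall>x\<in>bcarr W. lact W b x \<in> bcarr W \<and> ract W x b \<in> bcarr W) \<and>
     (\<forall>b\<in>carr B. \<forall>x\<in>bcarr W. \<forall>y\<in>bcarr W.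
        lact W b (badd W x y) = badd W (lact W b x) (lact W b y) \<and>
        ract W (badd W x y) b = badd W (ract W x b) (ract W y b)) \<and>
     (\<forall>b\<in>carr B. \<forall>c\<in>carr B. \<forall>x\<in>bcarr W.
        lact W (addm B b c) x = badd W (lact W b x) (lact W c x) \<and>
        ract W x (addm B b c) = badd W (ract W x b) (ract W x c) \<and>
        lact W (mulm B b c) x = lact W b (lact W c x) \<and>
        ract W x (mulm B b c) = ract W (ract W x b) c \<and>
        lact W b (ract W x c) = ract W (lact W b x) c) \<and>
     (\<forall>x\<in>bcarr W. lact W (onem B) x = x \<and> ract W x (onem B) = x)"

definition alg_bimod :: "('k, 'a, 'z) kalg_scheme \<Rightarrow> ('a, 'a) bimod" where
  "alg_bimod A = \<lparr>bcarr = carr A, badd = addm A, bzero = zerom A, lact = mulm A, ract = mulm A\<rparr>"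

definition rhom :: "('k::comm_ring_1, 'b, 'z1) kalg_scheme \<Rightarrow> ('m, 'b, 'z2) bimod_scheme \<Rightarrow>
    ('n, 'b, 'z3) bimod_scheme \<Rightarrow> ('m \<Rightarrow> 'n) set" where
  "rhom B M N = {f. (\<forall>x\<in>bcarr M. f x \<in> bcarr N) \<and>
      (\<forall>x\<in>bcarr M. \<forall>y\<in>bcarr M. f (badd M x y) = badd N (f x) (f y)) \<and>
      (\<forall>x\<in>bcarr M. \<forall>b\<in>carr B. f (ract M x b) = ract N (f x) b) \<and>
      (\<forall>x. x \<notin> bcarr M \<longrightarrow> f x = bzero N)}"

definition rfgp :: "('k::comm_ring_1, 'b, 'z1) kalg_scheme \<Rightarrow> ('m, 'b, 'z2) bimod_scheme \<Rightarrow> bool" where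
  "rfgp B M \<longleftrightarrow> (\<exists>n x \<phi>. (\<forall>i<n. x i \<in> bcarr M \<and> \<phi> i \<in> rhom B M (alg_bimod B)) \<and>
      (\<forall>y\<in>bcarr M. y = msum (badd M) (bzero M) (\<lambda>i. ract M (x i) (\<phi> i y)) n))"

text \<open>Invertible B-bimodule (Morita characterisation): W_B is a progenerator and the left
  action B \<rightarrow> End(W_B) is bijective.\<close>

definition invertible_bimod :: "('k::comm_ring_1, 'b, 'z1) kalg_scheme \<Rightarrow> ('m, 'b, 'z2) bimod_scheme \<Rightarrow> bool" where
  "invertible_bimod B W \<longleftrightarrow> bimodule B W \<and> rfgp B W \<and>
     (\<exists>n w f. (\<forall>i<n. w i \<in> bcarr W \<and> f i \<in> rhom B W (alg_bimod B)) \<and>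
         msum (addm B) (zerom B) (\<lambda>i. f i (w i)) n = onem B) \<and>
     bij_betw (\<lambda>b x. if x \<in> bcarr W then lact W b x else bzero W) (carr B) (rhom B W W)"

text \<open>A is a W-Frobenius extension of B: A_B f.g. projective and
  {}_B A_A \<cong> {}_B Hom_B(A_B, W_B)_A with (b f a)(x) = b f(a x).\<close>

definition frobenius_ext :: "('k::comm_ring_1, 'a, 'z1) kalg_scheme \<Rightarrow> ('k, 'a, 'z2) kalg_scheme \<Rightarrow>
    ('m, 'a, 'z3) bimod_scheme \<Rightarrow> bool" where
  "frobenius_ext B A W \<longleftrightarrow> subalgebra B A \<and> invertible_bimod B W \<and>
     rfgp B (alg_bimod A) \<and>
     (\<exists>H. bij_betw H (carr A) (rhom B (alg_bimod A) W) \<and>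
        (\<forall>x\<in>carr A. \<forall>y\<in>carr A. H (addm A x y) =
            (\<lambda>z. if z \<in> carr A then badd W (H x z) (H y z) else bzero W)) \<and>
        (\<forall>b\<in>carr B. \<forall>x\<in>carr A. \<forall>a\<in>carr A.
            H (mulm A (mulm A b x) a) =
            (\<lambda>z. if z \<in> carr A then lact W b (H x (mulm A a z)) else bzero W)))"

section \<open>Tensor products over k (free module on M \<times> N modulo bilinearity relations)\<close>

definition tdelta :: "'m \<times> 'n \<Rightarrow> ('m \<times> 'n \<Rightarrow> 'k::comm_ring_1)" where
  "tdelta z = (\<lambda>w. if w = z then 1 else 0)"

definition tfree :: "('k::comm_ring_1, 'm, 'z1) kmod_scheme \<Rightarrow> ('k, 'n, 'z2) kmod_scheme \<Rightarrow>
    ('m \<times> 'n \<Rightarrow> 'k) set" where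
  "tfree M N = {u. finite {z. u z \<noteq> 0} \<and> {z. u z \<noteq> 0} \<subseteq> carr M \<times> carr N}"

definition tgens :: "('k::comm_ring_1, 'm, 'z1) kmod_scheme \<Rightarrow> ('k, 'n, 'z2) kmod_scheme \<Rightarrow>
    ('m \<times> 'n \<Rightarrow> 'k) set" where
  "tgens M N =
     {(\<lambda>z. tdelta (addm M m m', n) z - tdelta (m, n) z - tdelta (m', n) z) | m m' n.
         m \<in> carr M \<and> m' \<in> carr M \<and> n \<in> carr N} \<union>
     {(\<lambda>z. tdelta (m, addm N n n') z - tdelta (m, n) z - tdelta (m, n') z) | m n n'.
         m \<in> carr M \<and> n \<in> carr N \<and> n' \<in> carr N} \<union>
     {(\<lambda>z. tdelta (smulm M r m, n) z - r * tdelta (m, n) z) | r m n.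
         m \<in> carr M \<and> n \<in> carr N} \<union>
     {(\<lambda>z. tdelta (m, smulm N r n) z - r * tdelta (m, n) z) | r m n.
         m \<in> carr M \<and> n \<in> carr N}"

definition tspan :: "('k::comm_ring_1, 'm, 'z1) kmod_scheme \<Rightarrow> ('k, 'n, 'z2) kmod_scheme \<Rightarrow>
    ('m \<times> 'n \<Rightarrow> 'k) set" where
  "tspan M N = {(\<lambda>z. \<Sum>i<(n::nat). c i * g i z) | n c g. \<forall>i<n. g i \<in> tgens M N}"

definition tcoset :: "('k::comm_ring_1, 'm, 'z1) kmod_scheme \<Rightarrow> ('k, 'n, 'z2) kmod_scheme \<Rightarrow>
    ('m \<times> 'n \<Rightarrow> 'k) \<Rightarrow> ('m \<times> 'n \<Rightarrow> 'k) set" where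
  "tcoset M N u = {(\<lambda>z. u z + v z) | v. v \<in> tspan M N}"

definition tensor :: "('k::comm_ring_1, 'm, 'z1) kmod_scheme \<Rightarrow> ('k, 'n, 'z2) kmod_scheme \<Rightarrow>
    ('k, ('m \<times> 'n \<Rightarrow> 'k) set) kmod" where
  "tensor M N = \<lparr>carr = tcoset M N ` tfree M N,
     addm = (\<lambda>X Y. {(\<lambda>z. x z + y z) | x y. x \<in> X \<and> y \<in> Y}),
     zerom = tspan M N,
     smulm = (\<lambda>r X. {(\<lambda>z. r * x z + v z) | x v. x \<in> X \<and> v \<in> tspan M N})\<rparr>"

text \<open>f \<otimes> g : M \<otimes> N \<rightarrow> M' \<otimes> N' for k-linear f, g (computed on a representative).\<close>

definition tmap :: "('k::comm_ring_1, 'm2, 'z1) kmod_scheme \<Rightarrow> ('k, 'n2, 'z2) kmod_scheme \<Rightarrow>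
    ('m \<Rightarrow> 'm2) \<Rightarrow> ('n \<Rightarrow> 'n2) \<Rightarrow> ('m \<times> 'n \<Rightarrow> 'k) set \<Rightarrow> ('m2 \<times> 'n2 \<Rightarrow> 'k) set" where
  "tmap M' N' f g X = (let u = (SOME u. u \<in> X) in
     tcoset M' N' (\<lambda>w. \<Sum>z\<in>{z. u z \<noteq> 0 \<and> (f (fst z), g (snd z)) = w}. u z))"

text \<open>W = (beta-twisted B) \<otimes>_k Q \<otimes>_k P as a B-bimodule via its first factor:
  b (x \<otimes> q \<otimes> p) c = \<beta>(b) x c \<otimes> q \<otimes> p.\<close>

definition W_bimod :: "('k::comm_ring_1, 'b, 'z1) kalg_scheme \<Rightarrow> ('b \<Rightarrow> 'b) \<Rightarrow>
    ('k, 'q, 'z2) kmod_scheme \<Rightarrow> ('k, 'p, 'z3) kmod_scheme \<Rightarrow>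
    (((('b \<times> 'q \<Rightarrow> 'k) set) \<times> 'p \<Rightarrow> 'k) set, 'b) bimod" where
  "W_bimod B \<beta> Q P =
     (let BQ = tensor B Q; W = tensor BQ P in
      \<lparr>bcarr = carr W, badd = addm W, bzero = zerom W,
       lact = (\<lambda>b w. tmap BQ P (tmap B Q (\<lambda>x. mulm B (\<beta> b) x) id) id w),
       ract = (\<lambda>w c. tmap BQ P (tmap B Q (\<lambda>x. mulm B x c) id) id w)\<rparr>)"

end

theory Submission
  imports Defs "HOL-Algebra.FiniteProduct"
begin



definition amon :: "('k::comm_ring_1, 'm, 'z) kmod_scheme \<Rightarrow> 'm monoid" where
 "amon L = \<lparr>carrier = carr L, mult = addm L, one = zerom L\<rparr>"

definition ks :: "('k::comm_ring_1, 'm, 'z) kmod_scheme \<Rightarrow> ('i \<Rightarrow> 'm) \<Rightarrow> 'i set \<Rightarrow> 'm" where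
 "ks L f A = finprod (amon L) f A"

locale km =
  fixes M :: "('k::comm_ring_1, 'm, 'z) kmod_scheme"
  assumes kmod: "kmodule M"
begin

lemmas K = kmod[unfolded kmodule_def]

lemma zero_closed[simp,intro]: "zerom M \<in> carr M"
  using conjunct1[OF K] by blast
lemma add_closed[simp,intro]: "x \<in> carr M \<Longrightarrow> y \<in> carr M \<Longrightarrow> addm M x y \<in> carr M"
  using conjunct1[OF conjunct2[OF K]] by blast
lemma smul_closed[simp,intro]: "x \<in> carr M \<Longrightarrow> smulm M r x \<in> carr M"
  using conjunct1[OF conjunct2[OF conjunct2[OF K]]] by blast
lemma add_assoc: "x \<in> carr M \<Longrightarrow> y \<in> carr M \<Longrightarrow> z \<in> carr M \<Longrightarrow>
   addm M (addm M x y) z = addm M x (addm M y z)"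
  using conjunct1[OF conjunct2[OF conjunct2[OF conjunct2[OF K]]]] by blast
lemma add_comm: "x \<in> carr M \<Longrightarrow> y \<in> carr M \<Longrightarrow> addm M x y = addm M y x"
  using conjunct1[OF conjunct2[OF conjunct2[OF conjunct2[OF conjunct2[OF K]]]]] by blast
lemma zero_add[simp]: "x \<in> carr M \<Longrightarrow> addm M (zerom M) x = x"
  using conjunct1[OF conjunct2[OF conjunct2[OF conjunct2[OF conjunct2[OF conjunct2[OF K]]]]]] by blast
lemma add_zero[simp]: "x \<in> carr M \<Longrightarrow> addm M x (zerom M) = x"
  using add_comm zero_add by simp
lemma smul_add: "x \<in> carr M \<Longrightarrow> y \<in> carr M \<Longrightarrow> smulm M r (addm M x y) = addm M (smulm M r x) (smulm M r y)"
  using conjunct1[OF conjunct2[OF conjunct2[OF conjunct2[OF conjunct2[OF conjunct2[OF conjunct2[OF conjunct2[OF K]]]]]]]] by blast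
lemma add_smul: "x \<in> carr M \<Longrightarrow> smulm M (r + s) x = addm M (smulm M r x) (smulm M s x)"
  using conjunct1[OF conjunct2[OF conjunct2[OF conjunct2[OF conjunct2[OF conjunct2[OF conjunct2[OF conjunct2[OF conjunct2[OF K]]]]]]]]] by blast
lemma smul_smul: "x \<in> carr M \<Longrightarrow> smulm M (r * s) x = smulm M r (smulm M s x)"
  using conjunct1[OF conjunct2[OF conjunct2[OF conjunct2[OF conjunct2[OF conjunct2[OF conjunct2[OF conjunct2[OF conjunct2[OF conjunct2[OF K]]]]]]]]]] by blast
lemma one_smul[simp]: "x \<in> carr M \<Longrightarrow> smulm M 1 x = x"
  using conjunct2[OF conjunct2[OF conjunct2[OF conjunct2[OF conjunct2[OF conjunct2[OF conjunct2[OF conjunct2[OF conjunct2[OF conjunct2[OF K]]]]]]]]]] by blast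
lemma add_lcomm: "x \<in> carr M \<Longrightarrow> y \<in> carr M \<Longrightarrow> z \<in> carr M \<Longrightarrow>
   addm M x (addm M y z) = addm M y (addm M x z)"
  by (metis add_assoc add_comm)
lemma neg_ex: "x \<in> carr M \<Longrightarrow> \<exists>y\<in>carr M. addm M x y = zerom M"
  using conjunct1[OF conjunct2[OF conjunct2[OF conjunct2[OF conjunct2[OF conjunct2[OF conjunct2[OF K]]]]]]] by blast
lemma add_left_cancel: assumes "x \<in> carr M" "y \<in> carr M" "z \<in> carr M" "addm M x y = addm M x z"
  shows "y = z"
proof -
  obtain n where n: "n \<in> carr M" "addm M x n = zerom M" using neg_ex assms by blast
  have nx: "addm M n x = zerom M" using n assms add_comm by metis
  have "y = addm M (addm M n x) y" using nx assms by simp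
  also have "... = addm M n (addm M x y)" using add_assoc assms n by blast
  also have "... = addm M n (addm M x z)" using assms by simp
  also have "... = addm M (addm M n x) z" using add_assoc assms n by metis
  also have "... = z" using nx assms by simp
  finally show ?thesis .
qed
lemma add_right_cancel: "x \<in> carr M \<Longrightarrow> y \<in> carr M \<Longrightarrow> z \<in> carr M \<Longrightarrow> addm M y x = addm M z x \<Longrightarrow> y = z"
  using add_left_cancel add_comm by metis
lemma add_eq_self: "x \<in> carr M \<Longrightarrow> y \<in> carr M \<Longrightarrow> addm M x y = x \<Longrightarrow> y = zerom M"
  using add_left_cancel[of x y "zerom M"] by simp
lemma zero_smul[simp]: "x \<in> carr M \<Longrightarrow> smulm M 0 x = zerom M"
  using add_smul[of x 0 0] add_eq_self[of "smulm M 0 x" "smulm M 0 x"] by simp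
lemma smul_zero[simp]: "smulm M r (zerom M) = zerom M"
  using smul_add[of "zerom M" "zerom M" r] add_eq_self[of "smulm M r (zerom M)" "smulm M r (zerom M)"] by simp
lemma neg_add: "x \<in> carr M \<Longrightarrow> addm M x (smulm M (-1) x) = zerom M"
  using add_smul[of x 1 "-1"] by simp
lemma sub_eq_zero: assumes "x \<in> carr M" "y \<in> carr M" "addm M x (smulm M (-1) y) = zerom M"
  shows "x = y"
proof -
  have "addm M x (smulm M (-1) y) = addm M y (smulm M (-1) y)" using assms neg_add by simp
  thus ?thesis using add_right_cancel assms by blast
qed

lemma cm: "comm_monoid (amon M)"
  apply (unfold_locales)
  apply (auto simp: amon_def add_assoc add_comm)
  by (metis add_assoc add_comm)

lemma ks_empty[simp]: "ks M f {} = zerom M"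
  unfolding ks_def using comm_monoid.finprod_empty[OF cm] by (simp add: amon_def)

lemma ks_infinite: "\<not> finite A \<Longrightarrow> ks M f A = zerom M"
  unfolding ks_def using comm_monoid.finprod_infinite[OF cm] by (simp add: amon_def)

lemma ks_closed[simp,intro]: "(\<And>i. i \<in> A \<Longrightarrow> f i \<in> carr M) \<Longrightarrow> ks M f A \<in> carr M"
  unfolding ks_def using comm_monoid.finprod_closed[OF cm, of f A] by (auto simp: amon_def)

lemma ks_insert: "finite A \<Longrightarrow> a \<notin> A \<Longrightarrow> f a \<in> carr M \<Longrightarrow> (\<And>i. i \<in> A \<Longrightarrow> f i \<in> carr M) \<Longrightarrow>
   ks M f (insert a A) = addm M (f a) (ks M f A)"
  unfolding ks_def using comm_monoid.finprod_insert[OF cm, of A a f] by (auto simp: amon_def)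

lemma ks_cong: "A = B \<Longrightarrow> (\<And>i. i \<in> B \<Longrightarrow> f i = g i) \<Longrightarrow> (\<And>i. i \<in> B \<Longrightarrow> g i \<in> carr M) \<Longrightarrow> ks M f A = ks M g B"
  unfolding ks_def using comm_monoid.finprod_cong'[OF cm, of A B g f] by (auto simp: amon_def)

lemma ks_add: "(\<And>i. i \<in> A \<Longrightarrow> f i \<in> carr M) \<Longrightarrow> (\<And>i. i \<in> A \<Longrightarrow> g i \<in> carr M) \<Longrightarrow>
   ks M (\<lambda>i. addm M (f i) (g i)) A = addm M (ks M f A) (ks M g A)"
  unfolding ks_def using comm_monoid.finprod_multf[OF cm, of f A g] by (auto simp: amon_def)

lemma ks_Un: "finite A \<Longrightarrow> finite B \<Longrightarrow> A \<inter> B = {} \<Longrightarrow> (\<And>i. i \<in> A \<union> B \<Longrightarrow> f i \<in> carr M) \<Longrightarrow>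
   ks M f (A \<union> B) = addm M (ks M f A) (ks M f B)"
  unfolding ks_def using comm_monoid.finprod_Un_disjoint[OF cm, of A B f] by (auto simp: amon_def)

lemma ks_reindex: "inj_on h A \<Longrightarrow> (\<And>i. i \<in> h ` A \<Longrightarrow> f i \<in> carr M) \<Longrightarrow> ks M f (h ` A) = ks M (f \<circ> h) A"
  unfolding ks_def using comm_monoid.finprod_reindex[OF cm, of f h A] by (auto simp: amon_def comp_def)

lemma ks_zero: "(\<And>i. i \<in> A \<Longrightarrow> f i = zerom M) \<Longrightarrow> ks M f A = zerom M"
  unfolding ks_def using comm_monoid.finprod_one_eqI[OF cm, of A f] by (auto simp: amon_def)

lemma ks_single[simp]: "f a \<in> carr M \<Longrightarrow> ks M f {a} = f a"
  using ks_insert[of "{}" a f] by simp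

lemma ks_smul: "(\<And>i. i \<in> A \<Longrightarrow> f i \<in> carr M) \<Longrightarrow> smulm M r (ks M f A) = ks M (\<lambda>i. smulm M r (f i)) A"
proof (induction A rule: infinite_finite_induct)
  case (infinite A) thus ?case by (simp add: ks_infinite)
next
  case empty thus ?case by simp
next
  case (insert x F) thus ?case by (simp add: ks_insert smul_add)
qed

lemma smul_ks: "x \<in> carr M \<Longrightarrow> smulm M (\<Sum>i\<in>A. c i) x = ks M (\<lambda>i. smulm M (c i) x) A"
proof (induction A rule: infinite_finite_induct)
  case (infinite A) thus ?case by (simp add: ks_infinite)
next
  case empty thus ?case by simp
next
  case (insert y F) thus ?case by (simp add: ks_insert add_smul)
qed

lemma ks_swap: "finite A \<Longrightarrow> finite B \<Longrightarrow> (\<And>i j. i \<in> A \<Longrightarrow> j \<in> B \<Longrightarrow> f i j \<in> carr M) \<Longrightarrow>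
  ks M (\<lambda>i. ks M (\<lambda>j. f i j) B) A = ks M (\<lambda>j. ks M (\<lambda>i. f i j) A) B"
proof (induction A rule: finite_induct)
  case empty thus ?case by (simp add: ks_zero)
next
  case (insert x F)
  have "ks M (\<lambda>i. ks M (f i) B) (insert x F) = addm M (ks M (f x) B) (ks M (\<lambda>i. ks M (f i) B) F)"
    using insert by (intro ks_insert) auto
  also have "... = addm M (ks M (f x) B) (ks M (\<lambda>j. ks M (\<lambda>i. f i j) F) B)" using insert by simp
  also have "... = ks M (\<lambda>j. addm M (f x j) (ks M (\<lambda>i. f i j) F)) B"
    using insert by (simp add: ks_add)
  also have "... = ks M (\<lambda>j. ks M (\<lambda>i. f i j) (insert x F)) B"
    using insert by (intro ks_cong) (auto simp: ks_insert)
  finally show ?case .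
qed

lemma msum_ks: "msum (addm M) (zerom M) f n = ks M f {..<n}" if "\<And>i. i < n \<Longrightarrow> f i \<in> carr M"
  using that
proof (induction n)
  case 0 thus ?case by simp
next
  case (Suc n)
  have "ks M f {..<Suc n} = addm M (f n) (ks M f {..<n})"
    using Suc.prems unfolding lessThan_Suc by (intro ks_insert) auto
  moreover have "ks M f {..<n} \<in> carr M" using Suc.prems by (intro ks_closed) auto
  ultimately show ?case using Suc add_comm[of "f n" "ks M f {..<n}"] by simp
qed

end

definition klin :: "('k::comm_ring_1, 'm, 'z1) kmod_scheme \<Rightarrow> ('k, 'n, 'z2) kmod_scheme \<Rightarrow> ('m \<Rightarrow> 'n) \<Rightarrow> bool" where
  "klin M N f = klinear M N f"

locale km2 = M: km M + N: km N for M :: "('k::comm_ring_1, 'm, 'z1) kmod_scheme" and N :: "('k, 'n, 'z2) kmod_scheme"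
begin

lemma lin_zero: "klinear M N f \<Longrightarrow> f (zerom M) = zerom N"
  unfolding klinear_def
  by (metis M.zero_closed M.add_zero N.add_eq_self)

lemma lin_add: "klinear M N f \<Longrightarrow> x \<in> carr M \<Longrightarrow> y \<in> carr M \<Longrightarrow> f (addm M x y) = addm N (f x) (f y)"
  unfolding klinear_def by blast
lemma lin_smul: "klinear M N f \<Longrightarrow> x \<in> carr M \<Longrightarrow> f (smulm M r x) = smulm N r (f x)"
  unfolding klinear_def by blast
lemma lin_closed: "klinear M N f \<Longrightarrow> x \<in> carr M \<Longrightarrow> f x \<in> carr N"
  unfolding klinear_def by blast

lemma add_ks: "(\<And>x y. x \<in> carr M \<Longrightarrow> y \<in> carr M \<Longrightarrow> h (addm M x y) = addm N (h x) (h y)) \<Longrightarrow>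
  (\<And>x. x \<in> carr M \<Longrightarrow> h x \<in> carr N) \<Longrightarrow> (\<And>i. i \<in> A \<Longrightarrow> f i \<in> carr M) \<Longrightarrow>
  h (zerom M) = zerom N \<Longrightarrow> h (ks M f A) = ks N (\<lambda>i. h (f i)) A"
proof (induction A rule: infinite_finite_induct)
  case (infinite A) thus ?case by (simp add: M.ks_infinite N.ks_infinite)
next
  case empty thus ?case by simp
next
  case (insert x F) thus ?case by (simp add: M.ks_insert N.ks_insert)
qed

lemma addhom_zero: "(\<And>x y. x \<in> carr M \<Longrightarrow> y \<in> carr M \<Longrightarrow> h (addm M x y) = addm N (h x) (h y)) \<Longrightarrow>
  (\<And>x. x \<in> carr M \<Longrightarrow> h x \<in> carr N) \<Longrightarrow> h (zerom M) = zerom N"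
  by (metis M.zero_closed M.add_zero N.add_eq_self)

lemma lin_ks: "klinear M N h \<Longrightarrow> (\<And>i. i \<in> A \<Longrightarrow> f i \<in> carr M) \<Longrightarrow> h (ks M f A) = ks N (\<lambda>i. h (f i)) A"
  using add_ks[of h A f] lin_zero[of h] unfolding klinear_def by blast

end




lemma sum_lessThan_add: "(\<Sum>i<(n::nat)+m. f i) = (\<Sum>i<n. f i) + (\<Sum>i<m. f (i + n))"
  by (induction m) (simp_all add: ac_simps)

definition tens :: "('k::comm_ring_1, 'm, 'z1) kmod_scheme \<Rightarrow> ('k, 'n, 'z2) kmod_scheme \<Rightarrow> 'm \<Rightarrow> 'n \<Rightarrow> ('m \<times> 'n \<Rightarrow> 'k) set" where
  "tens M N m n = tcoset M N (tdelta (m, n))"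

definition supp :: "('x \<Rightarrow> 'k::zero) \<Rightarrow> 'x set" where "supp u = {z. u z \<noteq> 0}"

definition bil :: "('k::comm_ring_1, 'm, 'z1) kmod_scheme \<Rightarrow> ('k, 'n, 'z2) kmod_scheme \<Rightarrow> ('k, 'l, 'z3) kmod_scheme \<Rightarrow> ('m \<Rightarrow> 'n \<Rightarrow> 'l) \<Rightarrow> bool" where
  "bil M N L f \<longleftrightarrow> (\<forall>m\<in>carr M. \<forall>n\<in>carr N. f m n \<in> carr L) \<and>
     (\<forall>m\<in>carr M. \<forall>m'\<in>carr M. \<forall>n\<in>carr N. f (addm M m m') n = addm L (f m n) (f m' n)) \<and>
     (\<forall>m\<in>carr M. \<forall>n\<in>carr N. \<forall>n'\<in>carr N. f m (addm N n n') = addm L (f m n) (f m n')) \<and>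
     (\<forall>r. \<forall>m\<in>carr M. \<forall>n\<in>carr N. f (smulm M r m) n = smulm L r (f m n)) \<and>
     (\<forall>r. \<forall>m\<in>carr M. \<forall>n\<in>carr N. f m (smulm N r n) = smulm L r (f m n))"

definition lam :: "('k::comm_ring_1, 'l, 'z3) kmod_scheme \<Rightarrow> ('m \<Rightarrow> 'n \<Rightarrow> 'l) \<Rightarrow> ('m \<times> 'n \<Rightarrow> 'k) \<Rightarrow> 'l" where
  "lam L f u = ks L (\<lambda>z. smulm L (u z) (f (fst z) (snd z))) (supp u)"

definition tlift :: "('k::comm_ring_1, 'l, 'z3) kmod_scheme \<Rightarrow> ('m \<Rightarrow> 'n \<Rightarrow> 'l) \<Rightarrow> ('m \<times> 'n \<Rightarrow> 'k) set \<Rightarrow> 'l" where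
  "tlift L f X = lam L f (SOME u. u \<in> X)"

context km2 begin

abbreviation "S \<equiv> tspan M N"
abbreviation "T \<equiv> tensor M N"

lemma tspan_iff: "(u::'m \<times> 'n \<Rightarrow> 'k) \<in> S \<longleftrightarrow> (\<exists>(n::nat) c g. u = (\<lambda>z. \<Sum>i<n. c i * g i z) \<and> (\<forall>i<n. g i \<in> tgens M N))"
  unfolding tspan_def by (simp add: eq_commute)

lemma tspan_zero: "(\<lambda>z. 0) \<in> S"
  unfolding tspan_iff by (rule exI[of _ 0]) auto

lemma tspan_add: assumes "u \<in> S" "v \<in> S" shows "(\<lambda>z. u z + v z) \<in> S"
proof -
  obtain n1 :: nat and c1 g1 where 1: "u = (\<lambda>z. \<Sum>i<n1. c1 i * g1 i z)" "\<forall>i<n1. g1 i \<in> tgens M N"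
    using tspan_iff[THEN iffD1, OF assms(1)] by blast
  obtain n2 :: nat and c2 g2 where 2: "v = (\<lambda>z. \<Sum>i<n2. c2 i * g2 i z)" "\<forall>i<n2. g2 i \<in> tgens M N"
    using tspan_iff[THEN iffD1, OF assms(2)] by blast
  define c where "c i = (if i < n1 then c1 i else c2 (i - n1))" for i
  define g where "g i = (if i < n1 then g1 i else g2 (i - n1))" for i
  have "(\<lambda>z. u z + v z) = (\<lambda>z. \<Sum>i<n1+n2. c i * g i z)"
    unfolding 1 2 sum_lessThan_add c_def g_def by auto
  moreover have "\<forall>i<n1+n2. g i \<in> tgens M N" using 1 2 unfolding g_def by auto
  ultimately show ?thesis unfolding tspan_iff
    by (intro exI[of _ "n1+n2"] exI[of _ c] exI[of _ g] conjI)
qed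

lemma tspan_smul: assumes "u \<in> S" shows "(\<lambda>z. r * u z) \<in> S"
proof -
  obtain n1 :: nat and c1 g1 where 1: "u = (\<lambda>z. \<Sum>i<n1. c1 i * g1 i z)" "\<forall>i<n1. g1 i \<in> tgens M N"
    using tspan_iff[THEN iffD1, OF assms(1)] by blast
  have "(\<lambda>z. r * u z) = (\<lambda>z. \<Sum>i<n1. (r * c1 i) * g1 i z)"
    unfolding 1 by (auto simp: sum_distrib_left mult.assoc)
  thus ?thesis using 1 unfolding tspan_iff
    by (intro exI[of _ "n1"] exI[of _ "\<lambda>i. r * c1 i"] exI[of _ g1] conjI)
qed

lemma tspan_gen: assumes "g \<in> tgens M N" shows "g \<in> S"
proof -
  have "g = (\<lambda>z. \<Sum>i<(1::nat). (\<lambda>_. 1) i * (\<lambda>_. g) i z)" by simp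
  thus ?thesis using assms unfolding tspan_iff
    by (intro exI[of _ "1::nat"] exI[of _ "\<lambda>_. 1"] exI[of _ "\<lambda>_. g"] conjI) auto
qed

lemma tspan_diff: "u \<in> S \<Longrightarrow> v \<in> S \<Longrightarrow> (\<lambda>z. u z - v z) \<in> S"
  using tspan_add[of u "\<lambda>z. (-1) * v z"] tspan_smul[of v "-1"] by simp

lemma tspan_neg: "u \<in> S \<Longrightarrow> (\<lambda>z. - u z) \<in> S"
  using tspan_smul[of u "-1"] by simp

lemma tfree_iff: "u \<in> tfree M N \<longleftrightarrow> finite (supp u) \<and> supp u \<subseteq> carr M \<times> carr N"
  unfolding tfree_def supp_def by simp

lemma tfree_zero: "(\<lambda>z. 0) \<in> tfree M N" unfolding tfree_def by simp

lemma tfree_add: assumes "u \<in> tfree M N" "v \<in> tfree M N" shows "(\<lambda>z. u z + v z) \<in> tfree M N"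
proof -
  have "supp (\<lambda>z. u z + v z) \<subseteq> supp u \<union> supp v" unfolding supp_def by auto
  thus ?thesis using assms unfolding tfree_iff by (meson finite_Un infinite_super le_sup_iff subset_trans)
qed

lemma tfree_smul: assumes "u \<in> tfree M N" shows "(\<lambda>z. r * u z) \<in> tfree M N"
proof -
  have "supp (\<lambda>z. r * u z) \<subseteq> supp u" unfolding supp_def by auto
  thus ?thesis using assms unfolding tfree_iff by (meson infinite_super subset_trans)
qed

lemma tfree_delta: "m \<in> carr M \<Longrightarrow> n \<in> carr N \<Longrightarrow> tdelta (m, n) \<in> tfree M N"
proof -
  assume a: "m \<in> carr M" "n \<in> carr N"
  have "supp (tdelta (m, n)) \<subseteq> {(m, n)}" unfolding supp_def tdelta_def by auto
  thus ?thesis using a unfolding tfree_iff by (meson finite.emptyI finite_insert infinite_super insert_subset subset_trans mem_Sigma_iff empty_subsetI)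
qed

lemma tfree_sum: "(\<And>i. i \<in> F \<Longrightarrow> g i \<in> tfree M N) \<Longrightarrow> (\<lambda>z. \<Sum>i\<in>F. c i * g i z) \<in> tfree M N"
proof (induction F rule: infinite_finite_induct)
  case (infinite A) thus ?case using tfree_zero by simp
next
  case empty thus ?case using tfree_zero by simp
next
  case (insert x F)
  have "(\<lambda>z. \<Sum>i\<in>insert x F. c i * g i z) = (\<lambda>z. c x * g x z + (\<Sum>i\<in>F. c i * g i z))"
    using insert by simp
  thus ?case using insert tfree_add tfree_smul by simp
qed

lemma tfree_diff: "u \<in> tfree M N \<Longrightarrow> v \<in> tfree M N \<Longrightarrow> (\<lambda>z. u z - v z) \<in> tfree M N"
  using tfree_add[of u "\<lambda>z. (-1) * v z"] tfree_smul[of v "-1"] by simp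

lemma tgens_tfree: assumes "g \<in> tgens M N" shows "g \<in> tfree M N"
proof -
  have d: "\<And>m n. m \<in> carr M \<Longrightarrow> n \<in> carr N \<Longrightarrow> (\<lambda>z. tdelta (m, n) z) \<in> tfree M N"
    using tfree_delta by simp
  have d3: "\<And>a b c. a \<in> tfree M N \<Longrightarrow> b \<in> tfree M N \<Longrightarrow> c \<in> tfree M N \<Longrightarrow>
       (\<lambda>z. a z - b z - c z) \<in> tfree M N"
    using tfree_diff by (metis (no_types))
  have d2: "\<And>a b r. a \<in> tfree M N \<Longrightarrow> b \<in> tfree M N \<Longrightarrow> (\<lambda>z. a z - r * b z) \<in> tfree M N"
    using tfree_diff tfree_smul by (metis (no_types))
  show ?thesis using assms unfolding tgens_def
    apply (elim UnE CollectE exE conjE)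
    subgoal by (simp only:) (rule d3; rule d; simp)
    subgoal by (simp only:) (rule d3; rule d; simp)
    subgoal by (simp only:) (rule d2; rule d; simp)
    subgoal by (simp only:) (rule d2; rule d; simp)
    done
qed

end



context km2 begin

lemma tspan_tfree: assumes "u \<in> S" shows "u \<in> tfree M N"
proof -
  obtain n :: nat and c g where 1: "u = (\<lambda>z. \<Sum>i<n. c i * g i z)" "\<forall>i<n. g i \<in> tgens M N"
    using tspan_iff[THEN iffD1, OF assms] by blast
  show ?thesis unfolding 1 using 1(2) tgens_tfree by (intro tfree_sum) auto
qed

lemma tcoset_iff: "x \<in> tcoset M N u \<longleftrightarrow> (\<lambda>z. x z - u z) \<in> S"
proof
  assume "x \<in> tcoset M N u"
  then obtain v where "v \<in> S" "x = (\<lambda>z. u z + v z)" unfolding tcoset_def by blast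
  thus "(\<lambda>z. x z - u z) \<in> S" by simp
next
  assume "(\<lambda>z. x z - u z) \<in> S"
  thus "x \<in> tcoset M N u" unfolding tcoset_def
    by (intro CollectI exI[of _ "\<lambda>z. x z - u z"]) simp
qed

lemma tcoset_self: "u \<in> tcoset M N u"
  unfolding tcoset_iff using tspan_zero by simp

lemma tcoset_eq: "tcoset M N u = tcoset M N v \<longleftrightarrow> (\<lambda>z. u z - v z) \<in> S"
proof
  assume "tcoset M N u = tcoset M N v"
  thus "(\<lambda>z. u z - v z) \<in> S" using tcoset_self[of u] tcoset_iff by blast
next
  assume a: "(\<lambda>z. u z - v z) \<in> S"
  show "tcoset M N u = tcoset M N v"
  proof (auto simp: tcoset_iff)
    fix x assume "(\<lambda>z. x z - u z) \<in> S"
    from tspan_add[OF this a] show "(\<lambda>z. x z - v z) \<in> S" by simp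
  next
    fix x assume "(\<lambda>z. x z - v z) \<in> S"
    from tspan_diff[OF this a] show "(\<lambda>z. x z - u z) \<in> S" by simp
  qed
qed

lemma tcoset_mem_eq: "x \<in> tcoset M N u \<Longrightarrow> tcoset M N x = tcoset M N u"
  using tcoset_eq tcoset_iff by blast

lemma T_add: "addm T (tcoset M N u) (tcoset M N v) = tcoset M N (\<lambda>z. u z + v z)"
proof (auto simp: tensor_def tcoset_iff)
  fix x y assume "(\<lambda>z. x z - u z) \<in> S" "(\<lambda>z. y z - v z) \<in> S"
  from tspan_add[OF this] show "(\<lambda>z. x z + y z - (u z + v z)) \<in> S" by (simp add: algebra_simps)
next
  fix w assume a: "(\<lambda>z. w z - (u z + v z)) \<in> S"
  have "w = (\<lambda>z. (\<lambda>z. w z - v z) z + v z)" by simp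
  moreover have "(\<lambda>z. (\<lambda>z. w z - v z) z - u z) \<in> S" using a by (simp add: algebra_simps)
  moreover have "(\<lambda>z. v z - v z) \<in> S" using tspan_zero by simp
  ultimately show "\<exists>x y. w = (\<lambda>z. x z + y z) \<and> (\<lambda>z. x z - u z) \<in> S \<and> (\<lambda>z. y z - v z) \<in> S"
    by (intro exI[of _ "\<lambda>z. w z - v z"] exI[of _ v] conjI) simp_all
qed

lemma T_smul: "smulm T r (tcoset M N u) = tcoset M N (\<lambda>z. r * u z)"
proof (auto simp: tensor_def tcoset_iff)
  fix x v assume "(\<lambda>z. x z - u z) \<in> S" "v \<in> S"
  from tspan_add[OF tspan_smul[OF this(1), of r] this(2)]
  show "(\<lambda>z. r * x z + v z - r * u z) \<in> S" by (simp add: algebra_simps)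
next
  fix w assume a: "(\<lambda>z. w z - r * u z) \<in> S"
  have "w = (\<lambda>z. r * u z + (\<lambda>z. w z - r * u z) z)" by simp
  moreover have "(\<lambda>z. u z - u z) \<in> S" using tspan_zero by simp
  ultimately show "\<exists>x v. w = (\<lambda>z. r * x z + v z) \<and> (\<lambda>z. x z - u z) \<in> S \<and> v \<in> S"
    using a by (intro exI[of _ u] exI[of _ "\<lambda>z. w z - r * u z"] conjI) simp_all
qed

lemma T_zero: "zerom T = tcoset M N (\<lambda>z. 0)"
proof -
  have "tcoset M N (\<lambda>z. 0) = S" by (auto simp: tcoset_iff)
  thus ?thesis by (simp add: tensor_def)
qed

lemma T_carr: "X \<in> carr T \<longleftrightarrow> (\<exists>u\<in>tfree M N. X = tcoset M N u)"
  by (auto simp: tensor_def)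

lemma T_kmodule: "kmodule T"
proof -
  have c: "\<And>X. X \<in> carr T \<Longrightarrow> \<exists>u\<in>tfree M N. X = tcoset M N u" using T_carr by blast
  have i: "\<And>u. u \<in> tfree M N \<Longrightarrow> tcoset M N u \<in> carr T" using T_carr by blast
  show ?thesis unfolding kmodule_def
  proof (intro conjI ballI allI)
    show "zerom T \<in> carr T" using T_zero i tfree_zero by simp
  next
    fix X Y assume "X \<in> carr T" "Y \<in> carr T"
    then obtain u v where "u \<in> tfree M N" "X = tcoset M N u" "v \<in> tfree M N" "Y = tcoset M N v" using c by blast
    thus "addm T X Y \<in> carr T" using i T_add tfree_add by simp
  next
    fix r X assume "X \<in> carr T"
    then obtain u where "u \<in> tfree M N" "X = tcoset M N u" using c by blast
    thus "smulm T r X \<in> carr T" using i T_smul tfree_smul by simp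
  next
    fix X Y Z assume "X \<in> carr T" "Y \<in> carr T" "Z \<in> carr T"
    then obtain u v w where "X = tcoset M N u" "Y = tcoset M N v" "Z = tcoset M N w" using c by meson
    thus "addm T (addm T X Y) Z = addm T X (addm T Y Z)" by (simp add: T_add add.assoc)
  next
    fix X Y assume "X \<in> carr T" "Y \<in> carr T"
    then obtain u v where "X = tcoset M N u" "Y = tcoset M N v" using c by meson
    thus "addm T X Y = addm T Y X" by (simp add: T_add add.commute)
  next
    fix X assume "X \<in> carr T"
    then obtain u where "X = tcoset M N u" using c by meson
    thus "addm T (zerom T) X = X" by (simp add: T_add T_zero)
  next
    fix X assume "X \<in> carr T"
    then obtain u where u: "u \<in> tfree M N" "X = tcoset M N u" using c by blast
    have "addm T X (tcoset M N (\<lambda>z. - u z)) = zerom T" using u T_add T_zero by simp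
    moreover have "tcoset M N (\<lambda>z. - u z) \<in> carr T" using i tfree_smul[OF u(1), of "-1"] by simp
    ultimately show "\<exists>Y\<in>carr T. addm T X Y = zerom T" by blast
  next
    fix r X Y assume "X \<in> carr T" "Y \<in> carr T"
    then obtain u v where "X = tcoset M N u" "Y = tcoset M N v" using c by meson
    thus "smulm T r (addm T X Y) = addm T (smulm T r X) (smulm T r Y)"
      by (simp add: T_add T_smul distrib_left)
  next
    fix r s X assume "X \<in> carr T"
    then obtain u where "X = tcoset M N u" using c by meson
    thus "smulm T (r + s) X = addm T (smulm T r X) (smulm T s X)"
      by (simp add: T_add T_smul distrib_right)
  next
    fix r s X assume "X \<in> carr T"
    then obtain u where "X = tcoset M N u" using c by meson
    thus "smulm T (r * s) X = smulm T r (smulm T s X)"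
      by (simp add: T_smul mult.assoc)
  next
    fix X assume "X \<in> carr T"
    then obtain u where "X = tcoset M N u" using c by meson
    thus "smulm T 1 X = X" by (simp add: T_smul)
  qed
qed

end

sublocale km2 \<subseteq> T: km "tensor M N" using T_kmodule by unfold_locales

context km2 begin

lemma tens_closed[simp,intro]: "m \<in> carr M \<Longrightarrow> n \<in> carr N \<Longrightarrow> tens M N m n \<in> carr T"
  unfolding tens_def using T_carr tfree_delta by blast

lemma tg1: "m \<in> carr M \<Longrightarrow> m' \<in> carr M \<Longrightarrow> n \<in> carr N \<Longrightarrow>
  (\<lambda>z. tdelta (addm M m m', n) z - tdelta (m, n) z - tdelta (m', n) z) \<in> tgens M N"
  unfolding tgens_def by (rule UnI1, rule UnI1, rule UnI1, rule CollectI, rule exI[of _ m], rule exI[of _ m'], rule exI[of _ n]) simp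
lemma tg2: "m \<in> carr M \<Longrightarrow> n \<in> carr N \<Longrightarrow> n' \<in> carr N \<Longrightarrow>
  (\<lambda>z. tdelta (m, addm N n n') z - tdelta (m, n) z - tdelta (m, n') z) \<in> tgens M N"
  unfolding tgens_def by (rule UnI1, rule UnI1, rule UnI2, rule CollectI, rule exI[of _ m], rule exI[of _ n], rule exI[of _ n']) simp
lemma tg3: "m \<in> carr M \<Longrightarrow> n \<in> carr N \<Longrightarrow>
  (\<lambda>z. tdelta (smulm M r m, n) z - r * tdelta (m, n) z) \<in> tgens M N"
  unfolding tgens_def by (rule UnI1, rule UnI2, rule CollectI, rule exI[of _ r], rule exI[of _ m], rule exI[of _ n]) simp
lemma tg4: "m \<in> carr M \<Longrightarrow> n \<in> carr N \<Longrightarrow>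
  (\<lambda>z. tdelta (m, smulm N r n) z - r * tdelta (m, n) z) \<in> tgens M N"
  unfolding tgens_def by (rule UnI2, rule CollectI, rule exI[of _ r], rule exI[of _ m], rule exI[of _ n]) simp

lemma gen_eq2: "g \<in> tgens M N \<Longrightarrow> (\<lambda>z. a z + g z) = b \<Longrightarrow> tcoset M N b = tcoset M N a"
  unfolding tcoset_eq using tspan_gen by auto

lemma gen_eq: "g \<in> tgens M N \<Longrightarrow> tcoset M N (\<lambda>z. a z + g z) = tcoset M N a"
  unfolding tcoset_eq using tspan_gen by simp

lemma tens_add1: assumes "m \<in> carr M" "m' \<in> carr M" "n \<in> carr N"
  shows "tens M N (addm M m m') n = addm T (tens M N m n) (tens M N m' n)"
proof -
  let ?g = "\<lambda>z. tdelta (addm M m m', n) z - tdelta (m, n) z - tdelta (m', n) z"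
  have g: "?g \<in> tgens M N" using assms by (rule tg1)
  have "addm T (tens M N m n) (tens M N m' n) = tcoset M N (\<lambda>z. tdelta (m, n) z + tdelta (m', n) z)"
    unfolding tens_def T_add by simp
  also have "... = tens M N (addm M m m') n" unfolding tens_def
    by (rule gen_eq2[OF g, symmetric]) (auto simp: algebra_simps)
  finally show ?thesis by simp
qed

lemma tens_add2: assumes "m \<in> carr M" "n \<in> carr N" "n' \<in> carr N"
  shows "tens M N m (addm N n n') = addm T (tens M N m n) (tens M N m n')"
proof -
  let ?g = "\<lambda>z. tdelta (m, addm N n n') z - tdelta (m, n) z - tdelta (m, n') z"
  have g: "?g \<in> tgens M N" using assms by (rule tg2)
  have "addm T (tens M N m n) (tens M N m n') = tcoset M N (\<lambda>z. tdelta (m, n) z + tdelta (m, n') z)"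
    unfolding tens_def T_add by simp
  also have "... = tens M N m (addm N n n')" unfolding tens_def
    by (rule gen_eq2[OF g, symmetric]) (auto simp: algebra_simps)
  finally show ?thesis by simp
qed

lemma tens_smul1: assumes "m \<in> carr M" "n \<in> carr N"
  shows "tens M N (smulm M r m) n = smulm T r (tens M N m n)"
proof -
  let ?g = "\<lambda>z. tdelta (smulm M r m, n) z - r * tdelta (m, n) z"
  have g: "?g \<in> tgens M N" using assms by (rule tg3)
  have "smulm T r (tens M N m n) = tcoset M N (\<lambda>z. r * tdelta (m, n) z)"
    unfolding tens_def T_smul by simp
  also have "... = tens M N (smulm M r m) n" unfolding tens_def
    by (rule gen_eq2[OF g, symmetric]) (auto simp: algebra_simps)
  finally show ?thesis by simp
qed

lemma tens_smul2: assumes "m \<in> carr M" "n \<in> carr N"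
  shows "tens M N m (smulm N r n) = smulm T r (tens M N m n)"
proof -
  let ?g = "\<lambda>z. tdelta (m, smulm N r n) z - r * tdelta (m, n) z"
  have g: "?g \<in> tgens M N" using assms by (rule tg4)
  have "smulm T r (tens M N m n) = tcoset M N (\<lambda>z. r * tdelta (m, n) z)"
    unfolding tens_def T_smul by simp
  also have "... = tens M N m (smulm N r n)" unfolding tens_def
    by (rule gen_eq2[OF g, symmetric]) (auto simp: algebra_simps)
  finally show ?thesis by simp
qed

lemma tcoset_sum: assumes "finite F" "\<And>i. i \<in> F \<Longrightarrow> d i \<in> tfree M N"
  shows "tcoset M N (\<lambda>w. \<Sum>i\<in>F. c i * d i w) = ks T (\<lambda>i. smulm T (c i) (tcoset M N (d i))) F"
  using assms
proof (induction F rule: finite_induct)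
  case empty thus ?case using T_zero by simp
next
  case (insert x F)
  have cl: "\<And>i. i \<in> insert x F \<Longrightarrow> smulm T (c i) (tcoset M N (d i)) \<in> carr T"
    using insert.prems T_carr by blast
  have "tcoset M N (\<lambda>w. \<Sum>i\<in>insert x F. c i * d i w) = tcoset M N (\<lambda>w. c x * d x w + (\<Sum>i\<in>F. c i * d i w))"
    using insert by simp
  also have "... = addm T (smulm T (c x) (tcoset M N (d x))) (tcoset M N (\<lambda>w. \<Sum>i\<in>F. c i * d i w))"
    by (simp add: T_add T_smul)
  also have "... = ks T (\<lambda>i. smulm T (c i) (tcoset M N (d i))) (insert x F)"
    using insert cl by (subst T.ks_insert) auto
  finally show ?case .
qed

lemma tfree_decomp: assumes "u \<in> tfree M N"
  shows "tcoset M N u = ks T (\<lambda>z. tens M N (smulm M (u z) (fst z)) (snd z)) (supp u)"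
proof -
  have fin: "finite (supp u)" and sub: "supp u \<subseteq> carr M \<times> carr N" using assms tfree_iff by auto
  have "u = (\<lambda>w. \<Sum>z\<in>supp u. u z * tdelta z w)"
  proof
    fix w
    show "u w = (\<Sum>z\<in>supp u. u z * tdelta z w)"
    proof (cases "w \<in> supp u")
      case True
      have "(\<Sum>z\<in>supp u. u z * tdelta z w) = (\<Sum>z\<in>{w}. u z * tdelta z w)"
        using fin True by (intro sum.mono_neutral_right) (auto simp: tdelta_def)
      thus ?thesis by (simp add: tdelta_def)
    next
      case False
      hence "(\<Sum>z\<in>supp u. u z * tdelta z w) = 0" by (intro sum.neutral) (auto simp: tdelta_def)
      thus ?thesis using False by (simp add: supp_def)
    qed
  qed
  hence "tcoset M N u = tcoset M N (\<lambda>w. \<Sum>z\<in>supp u. u z * tdelta z w)" by simp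
  also have "... = ks T (\<lambda>z. smulm T (u z) (tcoset M N (tdelta z))) (supp u)"
    using fin sub tfree_delta by (intro tcoset_sum) auto
  also have "... = ks T (\<lambda>z. tens M N (smulm M (u z) (fst z)) (snd z)) (supp u)"
  proof (rule T.ks_cong)
    fix z assume z: "z \<in> supp u"
    then obtain a b where ab: "z = (a, b)" "a \<in> carr M" "b \<in> carr N" using sub by auto
    show "smulm T (u z) (tcoset M N (tdelta z)) = tens M N (smulm M (u z) (fst z)) (snd z)"
      using ab tens_smul1[of a b "u z"] by (simp add: tens_def)
    show "tens M N (smulm M (u z) (fst z)) (snd z) \<in> carr T" using ab by simp
  qed simp
  finally show ?thesis .
qed

lemma tensor_induct: assumes "X \<in> carr T" and "Pr (zerom T)"
  and "\<And>X Y. X \<in> carr T \<Longrightarrow> Y \<in> carr T \<Longrightarrow> Pr X \<Longrightarrow> Pr Y \<Longrightarrow> Pr (addm T X Y)"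
  and "\<And>m n. m \<in> carr M \<Longrightarrow> n \<in> carr N \<Longrightarrow> Pr (tens M N m n)"
  shows "Pr X"
proof -
  obtain u where u: "u \<in> tfree M N" "X = tcoset M N u" using assms(1) T_carr by blast
  have fin: "finite (supp u)" and sub: "supp u \<subseteq> carr M \<times> carr N" using u tfree_iff by auto
  have "\<And>F. F \<subseteq> supp u \<Longrightarrow> Pr (ks T (\<lambda>z. tens M N (smulm M (u z) (fst z)) (snd z)) F)"
  proof -
    fix F assume F: "F \<subseteq> supp u"
    hence "finite F" using fin finite_subset by blast
    thus "Pr (ks T (\<lambda>z. tens M N (smulm M (u z) (fst z)) (snd z)) F)" using F
    proof (induction F rule: finite_induct)
      case empty thus ?case using assms(2) by simp
    next
      case (insert x F)
      have cl: "\<And>z. z \<in> insert x F \<Longrightarrow> tens M N (smulm M (u z) (fst z)) (snd z) \<in> carr T"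
        using insert.prems sub by (intro tens_closed) auto
      show ?case using insert cl sub
        by (subst T.ks_insert) (auto intro!: assms(3) assms(4))
    qed
  qed
  thus ?thesis using u tfree_decomp by simp
qed

end



locale km3 = km2 M N + L: km L for M :: "('k::comm_ring_1, 'm, 'z1) kmod_scheme" and N :: "('k, 'n, 'z2) kmod_scheme"
  and L :: "('k, 'l, 'z3) kmod_scheme"
begin

context fixes f assumes bf: "bil M N L f"
begin

lemma f_closed: "m \<in> carr M \<Longrightarrow> n \<in> carr N \<Longrightarrow> f m n \<in> carr L"
  using bf unfolding bil_def by blast
lemma f_add1: "m \<in> carr M \<Longrightarrow> m' \<in> carr M \<Longrightarrow> n \<in> carr N \<Longrightarrow> f (addm M m m') n = addm L (f m n) (f m' n)"
  using bf unfolding bil_def by blast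
lemma f_add2: "m \<in> carr M \<Longrightarrow> n \<in> carr N \<Longrightarrow> n' \<in> carr N \<Longrightarrow> f m (addm N n n') = addm L (f m n) (f m n')"
  using bf unfolding bil_def by blast
lemma f_smul1: "m \<in> carr M \<Longrightarrow> n \<in> carr N \<Longrightarrow> f (smulm M r m) n = smulm L r (f m n)"
  using bf unfolding bil_def by blast
lemma f_smul2: "m \<in> carr M \<Longrightarrow> n \<in> carr N \<Longrightarrow> f m (smulm N r n) = smulm L r (f m n)"
  using bf unfolding bil_def by blast

lemma fz_closed: "z \<in> carr M \<times> carr N \<Longrightarrow> smulm L c (f (fst z) (snd z)) \<in> carr L"
  using f_closed by auto

lemma lam_super: assumes "u \<in> tfree M N" "finite F" "supp u \<subseteq> F" "F \<subseteq> carr M \<times> carr N"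
  shows "lam L f u = ks L (\<lambda>z. smulm L (u z) (f (fst z) (snd z))) F"
proof -
  have F: "F = supp u \<union> (F - supp u)" using assms by auto
  have "ks L (\<lambda>z. smulm L (u z) (f (fst z) (snd z))) F =
     addm L (lam L f u) (ks L (\<lambda>z. smulm L (u z) (f (fst z) (snd z))) (F - supp u))"
    unfolding lam_def using assms fz_closed
    by (subst F, subst L.ks_Un) (auto intro: finite_subset)
  also have "ks L (\<lambda>z. smulm L (u z) (f (fst z) (snd z))) (F - supp u) = zerom L"
    using assms f_closed by (intro L.ks_zero) (auto simp: supp_def)
  also have "addm L (lam L f u) (zerom L) = lam L f u"
    unfolding lam_def using assms fz_closed by (intro L.add_zero L.ks_closed) auto
  finally show ?thesis by simp
qed

lemma lam_closed: "u \<in> tfree M N \<Longrightarrow> lam L f u \<in> carr L"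
  unfolding lam_def tfree_iff using fz_closed by (intro L.ks_closed) auto

lemma lam_add: assumes "u \<in> tfree M N" "v \<in> tfree M N"
  shows "lam L f (\<lambda>z. u z + v z) = addm L (lam L f u) (lam L f v)"
proof -
  let ?F = "supp u \<union> supp v"
  have fin: "finite ?F" and sub: "?F \<subseteq> carr M \<times> carr N" using assms tfree_iff by auto
  have s: "supp (\<lambda>z. u z + v z) \<subseteq> ?F" unfolding supp_def by auto
  have "lam L f (\<lambda>z. u z + v z) = ks L (\<lambda>z. smulm L (u z + v z) (f (fst z) (snd z))) ?F"
    using lam_super[OF tfree_add[OF assms] fin s sub] by simp
  also have "... = ks L (\<lambda>z. addm L (smulm L (u z) (f (fst z) (snd z))) (smulm L (v z) (f (fst z) (snd z)))) ?F"
    using sub f_closed by (intro L.ks_cong) (auto simp: L.add_smul)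
  also have "... = addm L (ks L (\<lambda>z. smulm L (u z) (f (fst z) (snd z))) ?F) (ks L (\<lambda>z. smulm L (v z) (f (fst z) (snd z))) ?F)"
    using sub fz_closed by (intro L.ks_add) auto
  also have "... = addm L (lam L f u) (lam L f v)"
    using lam_super[OF assms(1) fin _ sub] lam_super[OF assms(2) fin _ sub] by simp
  finally show ?thesis .
qed

lemma lam_smul: assumes "u \<in> tfree M N"
  shows "lam L f (\<lambda>z. r * u z) = smulm L r (lam L f u)"
proof -
  have fin: "finite (supp u)" and sub: "supp u \<subseteq> carr M \<times> carr N" using assms tfree_iff by auto
  have s: "supp (\<lambda>z. r * u z) \<subseteq> supp u" unfolding supp_def by auto
  have "lam L f (\<lambda>z. r * u z) = ks L (\<lambda>z. smulm L (r * u z) (f (fst z) (snd z))) (supp u)"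
    using lam_super[OF tfree_smul[OF assms] fin s sub] by simp
  also have "... = ks L (\<lambda>z. smulm L r (smulm L (u z) (f (fst z) (snd z)))) (supp u)"
    using sub f_closed by (intro L.ks_cong) (auto simp: L.smul_smul)
  also have "... = smulm L r (lam L f u)"
    unfolding lam_def using sub fz_closed by (intro L.ks_smul[symmetric]) auto
  finally show ?thesis .
qed

lemma lam_delta: assumes "m \<in> carr M" "n \<in> carr N" shows "lam L f (tdelta (m, n)) = f m n"
proof -
  have "supp (tdelta (m, n)) = {(m, n)}" unfolding supp_def tdelta_def by auto
  hence "lam L f (tdelta (m, n)) = ks L (\<lambda>z. smulm L (tdelta (m, n) z) (f (fst z) (snd z))) {(m, n)}"
    unfolding lam_def by (rule arg_cong)
  also have "... = f m n" using assms f_closed by (subst L.ks_single) (auto simp: tdelta_def)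
  finally show ?thesis .
qed

lemma lam_zero: "lam L f (\<lambda>z. 0) = zerom L"
  unfolding lam_def supp_def by simp

lemma L_cancel3: "a \<in> carr L \<Longrightarrow> b \<in> carr L \<Longrightarrow>
   addm L (addm L (addm L a b) (smulm L (-1) a)) (smulm L (-1) b) = zerom L"
  by (smt (verit) L.add_assoc L.add_comm L.add_zero L.neg_add L.smul_closed)

lemma lam_gen: assumes "g \<in> tgens M N" shows "lam L f g = zerom L"
proof -
  have ab: "\<And>a b c. a \<in> tfree M N \<Longrightarrow> b \<in> tfree M N \<Longrightarrow> c \<in> tfree M N \<Longrightarrow>
     lam L f (\<lambda>z. a z - b z - c z) = addm L (addm L (lam L f a) (smulm L (-1) (lam L f b))) (smulm L (-1) (lam L f c))"
  proof -
    fix a b c assume abc: "a \<in> tfree M N" "b \<in> tfree M N" "c \<in> tfree M N"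
    have e: "(\<lambda>z. a z - b z - c z) = (\<lambda>z. (\<lambda>z. a z + (\<lambda>z. (-1) * b z) z) z + (\<lambda>z. (-1) * c z) z)"
      by auto
    have "lam L f (\<lambda>z. a z - b z - c z) = addm L (lam L f (\<lambda>z. a z + (\<lambda>z. (-1) * b z) z)) (lam L f (\<lambda>z. (-1) * c z))"
      unfolding e by (rule lam_add[OF tfree_add[OF abc(1) tfree_smul[OF abc(2)]] tfree_smul[OF abc(3)]])
    also have "lam L f (\<lambda>z. a z + (\<lambda>z. (-1) * b z) z) = addm L (lam L f a) (lam L f (\<lambda>z. (-1) * b z))"
      by (rule lam_add[OF abc(1) tfree_smul[OF abc(2)]])
    finally show "?thesis a b c" using lam_smul[OF abc(2), of "-1"] lam_smul[OF abc(3), of "-1"] by simp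
  qed
  have ab2: "\<And>a b r. a \<in> tfree M N \<Longrightarrow> b \<in> tfree M N \<Longrightarrow>
     lam L f (\<lambda>z. a z - r * b z) = addm L (lam L f a) (smulm L (-1) (smulm L r (lam L f b)))"
  proof -
    fix a b r assume abc: "a \<in> tfree M N" "b \<in> tfree M N"
    have e: "(\<lambda>z. a z - r * b z) = (\<lambda>z. a z + (\<lambda>z. (-1) * (\<lambda>z. r * b z) z) z)"
      by auto
    have "lam L f (\<lambda>z. a z - r * b z) = addm L (lam L f a) (lam L f (\<lambda>z. (-1) * (\<lambda>z. r * b z) z))"
      unfolding e by (rule lam_add[OF abc(1) tfree_smul[OF tfree_smul[OF abc(2)]]])
    also have "lam L f (\<lambda>z. (-1) * (\<lambda>z. r * b z) z) = smulm L (-1) (lam L f (\<lambda>z. r * b z))"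
      by (rule lam_smul[OF tfree_smul[OF abc(2)]])
    finally show "?thesis a b r" using lam_smul[OF abc(2), of r] by simp
  qed
  show ?thesis using assms unfolding tgens_def
  proof (elim UnE CollectE exE conjE)
    fix m m' n assume g: "g = (\<lambda>z. tdelta (addm M m m', n) z - tdelta (m, n) z - tdelta (m', n) z)"
      and c: "m \<in> carr M" "m' \<in> carr M" "n \<in> carr N"
    show ?thesis unfolding g using c
      by (simp add: ab tfree_delta lam_delta f_add1 L_cancel3 f_closed)
  next
    fix m n n' assume g: "g = (\<lambda>z. tdelta (m, addm N n n') z - tdelta (m, n) z - tdelta (m, n') z)"
      and c: "m \<in> carr M" "n \<in> carr N" "n' \<in> carr N"
    show ?thesis unfolding g using c
      by (simp add: ab tfree_delta lam_delta f_add2 L_cancel3 f_closed)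
  next
    fix r m n assume g: "g = (\<lambda>z. tdelta (smulm M r m, n) z - r * tdelta (m, n) z)"
      and c: "m \<in> carr M" "n \<in> carr N"
    show ?thesis unfolding g using c
      by (simp add: ab2 tfree_delta lam_delta f_smul1 L.neg_add f_closed)
  next
    fix r m n assume g: "g = (\<lambda>z. tdelta (m, smulm N r n) z - r * tdelta (m, n) z)"
      and c: "m \<in> carr M" "n \<in> carr N"
    show ?thesis unfolding g using c
      by (simp add: ab2 tfree_delta lam_delta f_smul2 L.neg_add f_closed)
  qed
qed

lemma lam_span: assumes "u \<in> S" shows "lam L f u = zerom L"
proof -
  obtain n :: nat and c g where 1: "u = (\<lambda>z. \<Sum>i<n. c i * g i z)" "\<forall>i<n. g i \<in> tgens M N"
    using tspan_iff[THEN iffD1, OF assms] by blast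
  have "\<And>k. k \<le> n \<Longrightarrow> lam L f (\<lambda>z. \<Sum>i<k. c i * g i z) = zerom L"
  proof -
    fix k show "k \<le> n \<Longrightarrow> lam L f (\<lambda>z. \<Sum>i<k. c i * g i z) = zerom L"
    proof (induction k)
      case 0 thus ?case using lam_zero by simp
    next
      case (Suc k)
      have gk: "g k \<in> tgens M N" using Suc.prems 1 by auto
      have e: "(\<lambda>z. \<Sum>i<Suc k. c i * g i z) = (\<lambda>z. (\<lambda>z. \<Sum>i<k. c i * g i z) z + (\<lambda>z. c k * g k z) z)"
        by (simp add: add.commute)
      have t: "(\<lambda>z. \<Sum>i<k. c i * g i z) \<in> tfree M N" using 1 Suc.prems tgens_tfree by (intro tfree_sum) auto
      show ?case unfolding e using Suc t tgens_tfree[OF gk]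
        by (simp add: lam_add tfree_smul lam_smul lam_gen[OF gk])
    qed
  qed
  thus ?thesis using 1 by simp
qed

lemma tlift_coset: assumes "u \<in> tfree M N" shows "tlift L f (tcoset M N u) = lam L f u"
proof -
  let ?v = "SOME v. v \<in> tcoset M N u"
  have v: "?v \<in> tcoset M N u" by (rule someI[of "\<lambda>v. v \<in> tcoset M N u" u]) (rule tcoset_self)
  hence d: "(\<lambda>z. ?v z - u z) \<in> S" using tcoset_iff by blast
  have e: "?v = (\<lambda>z. u z + (\<lambda>z. ?v z - u z) z)" by simp
  have "lam L f ?v = addm L (lam L f u) (lam L f (\<lambda>z. ?v z - u z))"
    by (subst e, rule lam_add[OF assms tspan_tfree[OF d]])
  also have "... = lam L f u" using lam_span[OF d] lam_closed[OF assms] by simp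
  finally show ?thesis unfolding tlift_def .
qed

lemma tlift_tens: "m \<in> carr M \<Longrightarrow> n \<in> carr N \<Longrightarrow> tlift L f (tens M N m n) = f m n"
  unfolding tens_def using tlift_coset tfree_delta lam_delta by simp

lemma tlift_closed: "X \<in> carr T \<Longrightarrow> tlift L f X \<in> carr L"
  using T_carr tlift_coset lam_closed by auto

lemma tlift_add: "X \<in> carr T \<Longrightarrow> Y \<in> carr T \<Longrightarrow> tlift L f (addm T X Y) = addm L (tlift L f X) (tlift L f Y)"
  using T_carr tlift_coset lam_add T_add tfree_add by auto

lemma tlift_smul: "X \<in> carr T \<Longrightarrow> tlift L f (smulm T r X) = smulm L r (tlift L f X)"
  using T_carr tlift_coset lam_smul T_smul tfree_smul by auto

lemma tlift_lin: "klinear T L (tlift L f)"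
  unfolding klinear_def using tlift_closed tlift_add tlift_smul by blast

end

lemma T_ext: assumes "X \<in> carr T"
  and "\<And>X. X \<in> carr T \<Longrightarrow> h1 X \<in> carr L" "\<And>X. X \<in> carr T \<Longrightarrow> h2 X \<in> carr L"
  and "\<And>X Y. X \<in> carr T \<Longrightarrow> Y \<in> carr T \<Longrightarrow> h1 (addm T X Y) = addm L (h1 X) (h1 Y)"
  and "\<And>X Y. X \<in> carr T \<Longrightarrow> Y \<in> carr T \<Longrightarrow> h2 (addm T X Y) = addm L (h2 X) (h2 Y)"
  and "\<And>m n. m \<in> carr M \<Longrightarrow> n \<in> carr N \<Longrightarrow> h1 (tens M N m n) = h2 (tens M N m n)"
  shows "h1 X = h2 X"
proof -
  have z1: "h1 (zerom T) = zerom L" using assms(2,4) T.zero_closed T.add_zero L.add_eq_self by metis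
  have z2: "h2 (zerom T) = zerom L" using assms(3,5) T.zero_closed T.add_zero L.add_eq_self by metis
  show ?thesis using assms(1)
    by (rule tensor_induct[where Pr="\<lambda>X. h1 X = h2 X"]) (use z1 z2 assms in auto)
qed

end




context km2 begin
lemma some_tfree: assumes "X \<in> carr T" shows "(SOME u. u \<in> X) \<in> tfree M N" "(SOME u. u \<in> X) \<in> X"
proof -
  obtain u0 where u0: "u0 \<in> tfree M N" "X = tcoset M N u0" using assms T_carr by blast
  have "(SOME u. u \<in> X) \<in> X" using tcoset_self[of u0] u0 by (metis someI)
  thus "(SOME u. u \<in> X) \<in> X" .
  hence d: "(\<lambda>z. (SOME u. u \<in> X) z - u0 z) \<in> S" using u0 tcoset_iff by blast
  have "(SOME u. u \<in> X) = (\<lambda>z. u0 z + (\<lambda>z. (SOME u. u \<in> X) z - u0 z) z)" by simp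
  thus "(SOME u. u \<in> X) \<in> tfree M N" using tfree_add[OF u0(1) tspan_tfree[OF d]] by metis
qed
end

locale tm = km2 M N + P2: km2 M' N' for M :: "('k::comm_ring_1, 'm, 'z1) kmod_scheme" and N :: "('k, 'n, 'z2) kmod_scheme"
  and M' :: "('k, 'm2, 'z3) kmod_scheme" and N' :: "('k, 'n2, 'z4) kmod_scheme"
begin

sublocale L3: km3 M N "tensor M' N'"
  by (rule km3.intro, rule km2_axioms, rule P2.T.km_axioms)

context fixes f g assumes lf: "klinear M M' f" and lg: "klinear N N' g"
begin

lemma fc: "x \<in> carr M \<Longrightarrow> f x \<in> carr M'" using lf unfolding klinear_def by blast
lemma gc: "x \<in> carr N \<Longrightarrow> g x \<in> carr N'" using lg unfolding klinear_def by blast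

lemma fa: "x \<in> carr M \<Longrightarrow> y \<in> carr M \<Longrightarrow> f (addm M x y) = addm M' (f x) (f y)" using lf unfolding klinear_def by blast
lemma ga: "x \<in> carr N \<Longrightarrow> y \<in> carr N \<Longrightarrow> g (addm N x y) = addm N' (g x) (g y)" using lg unfolding klinear_def by blast
lemma fs: "x \<in> carr M \<Longrightarrow> f (smulm M r x) = smulm M' r (f x)" using lf unfolding klinear_def by blast
lemma gs: "x \<in> carr N \<Longrightarrow> g (smulm N r x) = smulm N' r (g x)" using lg unfolding klinear_def by blast

lemma fg_bil: "bil M N (tensor M' N') (\<lambda>m n. tens M' N' (f m) (g n))"
  unfolding bil_def
  by (intro conjI ballI allI) (simp_all add: fc gc fa ga fs gs P2.tens_add1 P2.tens_add2 P2.tens_smul1 P2.tens_smul2)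

lemma tmap_eq: assumes "X \<in> carr T"
  shows "tmap M' N' f g X = tlift (tensor M' N') (\<lambda>m n. tens M' N' (f m) (g n)) X"
proof -
  define u where "u = (SOME u. u \<in> X)"
  have u: "u \<in> tfree M N" using some_tfree[OF assms] u_def by simp
  have fin: "finite (supp u)" and sub: "supp u \<subseteq> carr M \<times> carr N" using u tfree_iff by auto
  have e: "(\<lambda>w. \<Sum>z\<in>{z. u z \<noteq> 0 \<and> (f (fst z), g (snd z)) = w}. u z) =
        (\<lambda>w. \<Sum>z\<in>supp u. u z * tdelta (f (fst z), g (snd z)) w)"
  proof
    fix w
    have "{z. u z \<noteq> 0 \<and> (f (fst z), g (snd z)) = w} = {z \<in> supp u. (f (fst z), g (snd z)) = w}"
      unfolding supp_def by auto
    hence "(\<Sum>z\<in>{z. u z \<noteq> 0 \<and> (f (fst z), g (snd z)) = w}. u z) = (\<Sum>z\<in>supp u. if (f (fst z), g (snd z)) = w then u z else 0)"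
      using sum.inter_filter[OF fin] by simp
    also have "... = (\<Sum>z\<in>supp u. u z * tdelta (f (fst z), g (snd z)) w)"
      by (rule sum.cong) (auto simp: tdelta_def)
    finally show "(\<Sum>z\<in>{z. u z \<noteq> 0 \<and> (f (fst z), g (snd z)) = w}. u z) = (\<Sum>z\<in>supp u. u z * tdelta (f (fst z), g (snd z)) w)" .
  qed
  have "tmap M' N' f g X = tcoset M' N' (\<lambda>w. \<Sum>z\<in>supp u. u z * tdelta (f (fst z), g (snd z)) w)"
    unfolding tmap_def Let_def u_def[symmetric] e ..
  also have "... = ks (tensor M' N') (\<lambda>z. smulm (tensor M' N') (u z) (tcoset M' N' (tdelta (f (fst z), g (snd z))))) (supp u)"
  proof (rule P2.tcoset_sum[OF fin])
    fix z assume "z \<in> supp u"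
    hence "fst z \<in> carr M" "snd z \<in> carr N" using sub by auto
    thus "tdelta (f (fst z), g (snd z)) \<in> tfree M' N'" using fc gc by (intro P2.tfree_delta) auto
  qed
  also have "... = lam (tensor M' N') (\<lambda>m n. tens M' N' (f m) (g n)) u"
    unfolding lam_def tens_def ..
  also have "... = tlift (tensor M' N') (\<lambda>m n. tens M' N' (f m) (g n)) X"
    unfolding tlift_def u_def ..
  finally show ?thesis .
qed

lemma tmap_tens: "m \<in> carr M \<Longrightarrow> n \<in> carr N \<Longrightarrow> tmap M' N' f g (tens M N m n) = tens M' N' (f m) (g n)"
  using tmap_eq L3.tlift_tens[OF fg_bil] by simp

lemma tmap_closed: "X \<in> carr T \<Longrightarrow> tmap M' N' f g X \<in> carr (tensor M' N')"
  using tmap_eq L3.tlift_closed[OF fg_bil] by simp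

lemma tmap_add: "X \<in> carr T \<Longrightarrow> Y \<in> carr T \<Longrightarrow> tmap M' N' f g (addm T X Y) = addm (tensor M' N') (tmap M' N' f g X) (tmap M' N' f g Y)"
  using tmap_eq L3.tlift_add[OF fg_bil] by simp

lemma tmap_smul: "X \<in> carr T \<Longrightarrow> tmap M' N' f g (smulm T r X) = smulm (tensor M' N') r (tmap M' N' f g X)"
  using tmap_eq L3.tlift_smul[OF fg_bil] by simp

lemma tmap_lin: "klinear T (tensor M' N') (tmap M' N' f g)"
  unfolding klinear_def using tmap_closed tmap_add tmap_smul by blast

end
end




lemma kring_kmodule: "kmodule (kring :: ('k::comm_ring_1, 'k) kmod)"
  unfolding kmodule_def kring_def by (auto simp: algebra_simps intro: exI[of _ "-x" for x])

interpretation KR: km "kring :: ('k::comm_ring_1, 'k) kmod" by (unfold_locales, rule kring_kmodule)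

lemma kring_simps[simp]: "carr kring = UNIV" "addm kring = (+)" "zerom kring = 0" "smulm kring = (*)"
  by (simp_all add: kring_def)

lemma ks_kring: "ks kring f A = sum f A"
proof (induction A rule: infinite_finite_induct)
  case (infinite A) thus ?case by (simp add: KR.ks_infinite)
next
  case empty thus ?case by simp
next
  case (insert x F) thus ?case by (simp add: KR.ks_insert)
qed

definition sc :: "('k::comm_ring_1, 'm, 'z) kmod_scheme \<Rightarrow> ('m \<Rightarrow> 'm) \<Rightarrow> 'k" where
  "sc P h = the_inv_into UNIV (\<lambda>r x. if x \<in> carr P then smulm P r x else zerom P) h"

context km begin

lemma homk_lin: "h \<in> homk M N \<Longrightarrow> klinear M N h" unfolding homk_def by blast
lemma homk_ext: "h \<in> homk M N \<Longrightarrow> x \<notin> carr M \<Longrightarrow> h x = zerom N" unfolding homk_def by blast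
lemma homk_closed: "h \<in> homk M N \<Longrightarrow> x \<in> carr M \<Longrightarrow> h x \<in> carr N" unfolding homk_def klinear_def by blast
lemma homk_add: "h \<in> homk M N \<Longrightarrow> x \<in> carr M \<Longrightarrow> y \<in> carr M \<Longrightarrow> h (addm M x y) = addm N (h x) (h y)"
  unfolding homk_def klinear_def by blast
lemma homk_smul: "h \<in> homk M N \<Longrightarrow> x \<in> carr M \<Longrightarrow> h (smulm M r x) = smulm N r (h x)"
  unfolding homk_def klinear_def by blast

lemma homkI: "(\<And>x. x \<in> carr M \<Longrightarrow> h x \<in> carr N) \<Longrightarrow>
  (\<And>x y. x \<in> carr M \<Longrightarrow> y \<in> carr M \<Longrightarrow> h (addm M x y) = addm N (h x) (h y)) \<Longrightarrow>
  (\<And>r x. x \<in> carr M \<Longrightarrow> h (smulm M r x) = smulm N r (h x)) \<Longrightarrow>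
  (\<And>x. x \<notin> carr M \<Longrightarrow> h x = zerom N) \<Longrightarrow> h \<in> homk M N"
  unfolding homk_def klinear_def by blast

lemma dual_ks: "q \<in> homk M kring \<Longrightarrow> (\<And>i. i \<in> A \<Longrightarrow> f i \<in> carr M) \<Longrightarrow> q (ks M f A) = (\<Sum>i\<in>A. q (f i))"
proof (induction A rule: infinite_finite_induct)
  case (infinite A)
  hence "ks M f A = zerom M" using ks_infinite by blast
  thus ?case using infinite homk_lin[of q kring] km2.lin_zero[of M kring q]
    by (simp add: km2_def km_axioms KR.km_axioms)
next
  case empty thus ?case using homk_lin[of q kring] km2.lin_zero[of M kring q]
    by (simp add: km2_def km_axioms KR.km_axioms)
next
  case (insert x F) thus ?case by (simp add: ks_insert homk_add)
qed

lemma kdual_carr[simp]: "carr (kdual M) = homk M kring" "addm (kdual M) = (\<lambda>f g x. f x + g x)"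
  "zerom (kdual M) = (\<lambda>x. 0)" "smulm (kdual M) = (\<lambda>r f x. r * f x)"
  by (simp_all add: kdual_def)

lemma kdual_kmodule: "kmodule (kdual M)"
  unfolding kmodule_def kdual_carr
proof (intro conjI ballI allI)
  show "(\<lambda>x. 0) \<in> homk M kring" by (rule homkI) auto
next
  fix f g assume "f \<in> homk M kring" "g \<in> homk M kring"
  thus "(\<lambda>x. f x + g x) \<in> homk M kring"
    by (intro homkI) (auto simp: homk_add homk_smul homk_ext algebra_simps)
next
  fix r f assume "f \<in> homk M kring"
  thus "(\<lambda>x. r * f x) \<in> homk M kring"
    by (intro homkI) (auto simp: homk_add homk_smul homk_ext algebra_simps)
next
  fix f assume f: "f \<in> homk M kring"
  have "(\<lambda>x. - f x) \<in> homk M kring" using f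
    by (intro homkI) (auto simp: homk_add homk_smul homk_ext algebra_simps)
  thus "\<exists>y\<in>homk M kring. (\<lambda>x. f x + y x) = (\<lambda>x. 0)" by (intro bexI[of _ "\<lambda>x. - f x"]) auto
qed (auto simp: algebra_simps)

end

locale inv = km P for P :: "('k::comm_ring_1, 'p, 'z) kmod_scheme" +
  assumes invP: "invertible_kmod P"
begin

definition "smap r = (\<lambda>x. if x \<in> carr P then smulm P r x else zerom P)"

lemma bij: "bij_betw smap UNIV (homk P P)"
  using invP unfolding invertible_kmod_def smap_def by blast

lemma smap_eq: "(\<lambda>r x. if x \<in> carr P then smulm P r x else zerom P) = smap"
  by (rule ext) (simp add: smap_def)

lemma sc_eq: "sc P h = the_inv_into UNIV smap h"
  unfolding sc_def smap_eq ..

lemma smap_inj: "inj smap" using bij unfolding bij_betw_def by blast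

lemma sc_spec: assumes "h \<in> homk P P" "x \<in> carr P" shows "h x = smulm P (sc P h) x"
proof -
  have "h \<in> smap ` UNIV" using bij assms(1) unfolding bij_betw_def by blast
  hence "smap (sc P h) = h" unfolding sc_eq by (rule f_the_inv_into_f[OF smap_inj])
  hence "h x = smap (sc P h) x" by simp
  thus ?thesis using assms(2) unfolding smap_def by simp
qed

lemma smap_homk: "smap r \<in> homk P P"
  using bij unfolding bij_betw_def by blast

lemma faithful: assumes "\<And>x. x \<in> carr P \<Longrightarrow> smulm P r x = smulm P s x" shows "r = s"
proof -
  have "smap r = smap s" unfolding smap_def using assms by (intro ext) auto
  thus ?thesis using smap_inj injD by metis
qed

lemma sc_unique: assumes "h \<in> homk P P" "\<And>x. x \<in> carr P \<Longrightarrow> h x = smulm P c x" shows "sc P h = c"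
proof (rule faithful)
  fix x assume "x \<in> carr P"
  thus "smulm P (sc P h) x = smulm P c x" using sc_spec[OF assms(1)] assms(2) by simp
qed

definition "rr q y = sc P (\<lambda>x. if x \<in> carr P then smulm P (q x) y else zerom P)"

lemma rr_homk: "q \<in> homk P kring \<Longrightarrow> y \<in> carr P \<Longrightarrow> (\<lambda>x. if x \<in> carr P then smulm P (q x) y else zerom P) \<in> homk P P"
  by (intro homkI) (auto simp: homk_add homk_smul add_smul smul_smul)

lemma rr_spec: "q \<in> homk P kring \<Longrightarrow> y \<in> carr P \<Longrightarrow> x \<in> carr P \<Longrightarrow> smulm P (q x) y = smulm P (rr q y) x"
  unfolding rr_def using sc_spec[OF rr_homk] by simp

lemma dualbasis: obtains n :: nat and e \<xi> where "\<forall>i<n. e i \<in> carr P \<and> \<xi> i \<in> homk P kring"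
      "\<forall>y\<in>carr P. y = ks P (\<lambda>i. smulm P (\<xi> i y) (e i)) {..<n}"
proof -
  obtain n e \<xi> where 1: "\<forall>i<n. e i \<in> carr P \<and> \<xi> i \<in> homk P kring"
    "\<forall>y\<in>carr P. y = msum (addm P) (zerom P) (\<lambda>i. smulm P (\<xi> i y) (e i)) n"
  proof -
    have "kfgp P" using invP unfolding invertible_kmod_def by blast
    thus ?thesis unfolding kfgp_def by (elim exE conjE) (rule that, assumption+)
  qed
  have B: "\<forall>y\<in>carr P. y = ks P (\<lambda>i. smulm P (\<xi> i y) (e i)) {..<n}"
  proof
    fix y assume y: "y \<in> carr P"
    have "y = msum (addm P) (zerom P) (\<lambda>i. smulm P (\<xi> i y) (e i)) n" using 1(2) y by (rule bspec)
    also have "... = ks P (\<lambda>i. smulm P (\<xi> i y) (e i)) {..<n}" using 1 by (intro msum_ks) auto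
    finally show "y = ks P (\<lambda>i. smulm P (\<xi> i y) (e i)) {..<n}" .
  qed
  show ?thesis by (rule that[OF 1(1) B])
qed

lemma generator: obtains I :: "(nat \<times> nat) set" and q y where "finite I" "\<forall>i\<in>I. q i \<in> homk P kring \<and> y i \<in> carr P"
   "(\<Sum>i\<in>I. q i (y i)) = 1"
proof -
  obtain n :: nat and e \<xi> where db: "\<forall>i<n. e i \<in> carr P \<and> \<xi> i \<in> homk P kring"
      "\<forall>y\<in>carr P. y = ks P (\<lambda>i. smulm P (\<xi> i y) (e i)) {..<n}"
    by (rule dualbasis)
  define r where "r i = rr (\<xi> i) (e i)" for i
  have s1: "(\<Sum>i<n. r i) = 1"
  proof (rule faithful)
    fix x assume x: "x \<in> carr P"
    have "smulm P (\<Sum>i<n. r i) x = ks P (\<lambda>i. smulm P (r i) x) {..<n}" using x by (rule smul_ks)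
    also have "... = ks P (\<lambda>i. smulm P (\<xi> i x) (e i)) {..<n}"
      using db x by (intro ks_cong) (auto simp: r_def rr_spec)
    also have "... = x" using db x by simp
    finally show "smulm P (\<Sum>i<n. r i) x = smulm P 1 x" using x by simp
  qed
  have s2: "r i * r j = \<xi> i (e j) * rr (\<xi> j) (e i)" if "i < n" "j < n" for i j
  proof (rule faithful)
    fix x assume x: "x \<in> carr P"
    have "smulm P (r i * r j) x = smulm P (r i) (smulm P (\<xi> j x) (e j))"
      using db that x by (simp add: smul_smul r_def rr_spec)
    also have "... = smulm P (\<xi> j x) (smulm P (r i) (e j))"
      using db that x by (simp add: smul_smul[symmetric] mult.commute)
    also have "... = smulm P (\<xi> j x) (smulm P (\<xi> i (e j)) (e i))"
      using db that x by (simp add: r_def rr_spec)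
    also have "... = smulm P (\<xi> i (e j)) (smulm P (\<xi> j x) (e i))"
      using db that x by (simp add: smul_smul[symmetric] mult.commute)
    also have "... = smulm P (\<xi> i (e j) * rr (\<xi> j) (e i)) x"
      using db that x by (simp add: smul_smul rr_spec)
    finally show "smulm P (r i * r j) x = smulm P (\<xi> i (e j) * rr (\<xi> j) (e i)) x" .
  qed
  define I where "I = {..<n} \<times> {..<n}"
  define q where "q (z :: nat \<times> nat) = (\<lambda>x. rr (\<xi> (snd z)) (e (fst z)) * \<xi> (fst z) x)" for z
  define y where "y (z :: nat \<times> nat) = e (snd z)" for z
  have "1 = (\<Sum>i<n. r i) * (\<Sum>j<n. r j)" using s1 by simp
  also have "... = (\<Sum>i<n. \<Sum>j<n. r i * r j)" by (simp add: sum_product)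
  also have "... = (\<Sum>i<n. \<Sum>j<n. q (i, j) (y (i, j)))"
    using s2 by (intro sum.cong refl) (simp add: q_def y_def mult.commute)
  also have "... = (\<Sum>z\<in>I. q z (y z))" unfolding I_def by (simp add: sum.cartesian_product)
  finally have "(\<Sum>z\<in>I. q z (y z)) = 1" by simp
  moreover have "\<forall>z\<in>I. q z \<in> homk P kring \<and> y z \<in> carr P"
  proof
    fix z assume z: "z \<in> I"
    hence h: "\<xi> (fst z) \<in> homk P kring" "e (snd z) \<in> carr P" using db unfolding I_def by auto
    have "q z \<in> homk P kring" unfolding q_def
      by (rule homkI) (simp_all add: homk_add[OF h(1)] homk_smul[OF h(1)] homk_ext[OF h(1)] algebra_simps)
    thus "q z \<in> homk P kring \<and> y z \<in> carr P" using h y_def by simp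
  qed
  moreover have "finite I" unfolding I_def by simp
  ultimately show ?thesis using that by blast
qed

end




locale tt = km2 M N + K: km K for M :: "('k::comm_ring_1, 'm, 'z1) kmod_scheme" and N :: "('k, 'n, 'z2) kmod_scheme"
  and K :: "('k, 'p, 'z3) kmod_scheme"
begin

sublocale O: km2 "tensor M N" K by (rule km2.intro, rule T.km_axioms, rule K.km_axioms)

abbreviation "T3 \<equiv> tensor (tensor M N) K"
definition "t3 x q p = tens (tensor M N) K (tens M N x q) p"

lemma t3_closed[simp,intro]: "x \<in> carr M \<Longrightarrow> q \<in> carr N \<Longrightarrow> p \<in> carr K \<Longrightarrow> t3 x q p \<in> carr T3"
  unfolding t3_def by simp

lemma t3_add1: "x \<in> carr M \<Longrightarrow> x' \<in> carr M \<Longrightarrow> q \<in> carr N \<Longrightarrow> p \<in> carr K \<Longrightarrow>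
  t3 (addm M x x') q p = addm T3 (t3 x q p) (t3 x' q p)"
  unfolding t3_def by (simp add: tens_add1 O.tens_add1)
lemma t3_add2: "x \<in> carr M \<Longrightarrow> q \<in> carr N \<Longrightarrow> q' \<in> carr N \<Longrightarrow> p \<in> carr K \<Longrightarrow>
  t3 x (addm N q q') p = addm T3 (t3 x q p) (t3 x q' p)"
  unfolding t3_def by (simp add: tens_add2 O.tens_add1)
lemma t3_add3: "x \<in> carr M \<Longrightarrow> q \<in> carr N \<Longrightarrow> p \<in> carr K \<Longrightarrow> p' \<in> carr K \<Longrightarrow>
  t3 x q (addm K p p') = addm T3 (t3 x q p) (t3 x q p')"
  unfolding t3_def by (simp add: O.tens_add2)
lemma t3_smul1: "x \<in> carr M \<Longrightarrow> q \<in> carr N \<Longrightarrow> p \<in> carr K \<Longrightarrow>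
  t3 (smulm M r x) q p = smulm T3 r (t3 x q p)"
  unfolding t3_def by (simp add: tens_smul1 O.tens_smul1)
lemma t3_smul2: "x \<in> carr M \<Longrightarrow> q \<in> carr N \<Longrightarrow> p \<in> carr K \<Longrightarrow>
  t3 x (smulm N r q) p = smulm T3 r (t3 x q p)"
  unfolding t3_def by (simp add: tens_smul2 O.tens_smul1)
lemma t3_smul3: "x \<in> carr M \<Longrightarrow> q \<in> carr N \<Longrightarrow> p \<in> carr K \<Longrightarrow>
  t3 x q (smulm K r p) = smulm T3 r (t3 x q p)"
  unfolding t3_def by (simp add: O.tens_smul2)

lemma tens_zero1: "p \<in> carr K \<Longrightarrow> tens (tensor M N) K (zerom (tensor M N)) p = zerom T3"
  using O.tens_smul1[of "zerom (tensor M N)" p 0] by simp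

lemma t3_induct: assumes "w \<in> carr T3" and "Pr (zerom T3)"
  and "\<And>X Y. X \<in> carr T3 \<Longrightarrow> Y \<in> carr T3 \<Longrightarrow> Pr X \<Longrightarrow> Pr Y \<Longrightarrow> Pr (addm T3 X Y)"
  and "\<And>x q p. x \<in> carr M \<Longrightarrow> q \<in> carr N \<Longrightarrow> p \<in> carr K \<Longrightarrow> Pr (t3 x q p)"
  shows "Pr w"
  using assms(1)
proof (rule O.tensor_induct)
  show "Pr (zerom T3)" by (rule assms(2))
next
  fix X Y assume "X \<in> carr T3" "Y \<in> carr T3" "Pr X" "Pr Y" thus "Pr (addm T3 X Y)" by (rule assms(3))
next
  fix X p assume X: "X \<in> carr (tensor M N)" and p: "p \<in> carr K"
  show "Pr (tens (tensor M N) K X p)" using X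
  proof (rule tensor_induct)
    show "Pr (tens (tensor M N) K (zerom (tensor M N)) p)" using tens_zero1[OF p] assms(2) by simp
  next
    fix Y Z assume "Y \<in> carr (tensor M N)" "Z \<in> carr (tensor M N)"
      "Pr (tens (tensor M N) K Y p)" "Pr (tens (tensor M N) K Z p)"
    thus "Pr (tens (tensor M N) K (addm (tensor M N) Y Z) p)"
      using p by (simp add: O.tens_add1 assms(3))
  next
    fix x q assume "x \<in> carr M" "q \<in> carr N"
    thus "Pr (tens (tensor M N) K (tens M N x q) p)" using p assms(4) unfolding t3_def by blast
  qed
qed

lemma T3_ext: assumes "w \<in> carr T3" "kmodule L"
  and "\<And>X. X \<in> carr T3 \<Longrightarrow> h1 X \<in> carr L" "\<And>X. X \<in> carr T3 \<Longrightarrow> h2 X \<in> carr L"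
  and "\<And>X Y. X \<in> carr T3 \<Longrightarrow> Y \<in> carr T3 \<Longrightarrow> h1 (addm T3 X Y) = addm L (h1 X) (h1 Y)"
  and "\<And>X Y. X \<in> carr T3 \<Longrightarrow> Y \<in> carr T3 \<Longrightarrow> h2 (addm T3 X Y) = addm L (h2 X) (h2 Y)"
  and "\<And>x q p. x \<in> carr M \<Longrightarrow> q \<in> carr N \<Longrightarrow> p \<in> carr K \<Longrightarrow> h1 (t3 x q p) = h2 (t3 x q p)"
  shows "h1 w = h2 w"
proof -
  interpret L: km L by (unfold_locales, rule assms(2))
  have z1: "h1 (zerom T3) = zerom L" using assms(3,5) O.T.zero_closed O.T.add_zero L.add_eq_self by metis
  have z2: "h2 (zerom T3) = zerom L" using assms(4,6) O.T.zero_closed O.T.add_zero L.add_eq_self by metis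
  show ?thesis using assms(1)
    by (rule t3_induct[where Pr="\<lambda>X. h1 X = h2 X"]) (use z1 z2 assms in auto)
qed

definition "tril L f \<longleftrightarrow> (\<forall>x\<in>carr M. \<forall>q\<in>carr N. \<forall>p\<in>carr K. f x q p \<in> carr L) \<and>
  (\<forall>p\<in>carr K. bil M N L (\<lambda>x q. f x q p)) \<and>
  (\<forall>x\<in>carr M. \<forall>q\<in>carr N. \<forall>p\<in>carr K. \<forall>p'\<in>carr K. f x q (addm K p p') = addm L (f x q p) (f x q p')) \<and>
  (\<forall>r. \<forall>x\<in>carr M. \<forall>q\<in>carr N. \<forall>p\<in>carr K. f x q (smulm K r p) = smulm L r (f x q p))"

definition "tl3 L f w = tlift L (\<lambda>X p. tlift L (\<lambda>x q. f x q p) X) w"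

lemma tl3: assumes "kmodule L" "tril L f"
  shows "\<And>x q p. x \<in> carr M \<Longrightarrow> q \<in> carr N \<Longrightarrow> p \<in> carr K \<Longrightarrow> tl3 L f (t3 x q p) = f x q p"
    "\<And>w. w \<in> carr T3 \<Longrightarrow> tl3 L f w \<in> carr L"
    "\<And>w w'. w \<in> carr T3 \<Longrightarrow> w' \<in> carr T3 \<Longrightarrow> tl3 L f (addm T3 w w') = addm L (tl3 L f w) (tl3 L f w')"
    "\<And>w. w \<in> carr T3 \<Longrightarrow> tl3 L f (smulm T3 r w) = smulm L r (tl3 L f w)"
proof -
  interpret L: km L by (unfold_locales, rule assms(1))
  interpret I: km3 M N L by unfold_locales
  interpret OL: km3 "tensor M N" K L by unfold_locales
  have b: "\<And>p. p \<in> carr K \<Longrightarrow> bil M N L (\<lambda>x q. f x q p)" using assms(2) unfolding tril_def by blast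
  have fa: "\<And>x q p p'. x \<in> carr M \<Longrightarrow> q \<in> carr N \<Longrightarrow> p \<in> carr K \<Longrightarrow> p' \<in> carr K \<Longrightarrow>
      f x q (addm K p p') = addm L (f x q p) (f x q p')" using assms(2) unfolding tril_def by blast
  have fs: "\<And>x q p r. x \<in> carr M \<Longrightarrow> q \<in> carr N \<Longrightarrow> p \<in> carr K \<Longrightarrow>
      f x q (smulm K r p) = smulm L r (f x q p)" using assms(2) unfolding tril_def by blast
  have bo: "bil (tensor M N) K L (\<lambda>X p. tlift L (\<lambda>x q. f x q p) X)"
    unfolding bil_def
  proof (intro conjI ballI allI)
    fix X p assume "X \<in> carr (tensor M N)" "p \<in> carr K"
    thus "tlift L (\<lambda>x q. f x q p) X \<in> carr L" using I.tlift_closed b by blast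
  next
    fix X X' p assume "X \<in> carr (tensor M N)" "X' \<in> carr (tensor M N)" "p \<in> carr K"
    thus "tlift L (\<lambda>x q. f x q p) (addm (tensor M N) X X') = addm L (tlift L (\<lambda>x q. f x q p) X) (tlift L (\<lambda>x q. f x q p) X')"
      using I.tlift_add b by blast
  next
    fix X p p' assume X: "X \<in> carr (tensor M N)" and p: "p \<in> carr K" "p' \<in> carr K"
    show "tlift L (\<lambda>x q. f x q (addm K p p')) X = addm L (tlift L (\<lambda>x q. f x q p) X) (tlift L (\<lambda>x q. f x q p') X)"
      using X
    proof (rule I.T_ext)
      fix Y assume "Y \<in> carr (tensor M N)"
      thus "tlift L (\<lambda>x q. f x q (addm K p p')) Y \<in> carr L" using I.tlift_closed b p by blast
    next
      fix Y assume "Y \<in> carr (tensor M N)"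
      thus "addm L (tlift L (\<lambda>x q. f x q p) Y) (tlift L (\<lambda>x q. f x q p') Y) \<in> carr L"
        using I.tlift_closed b p by blast
    next
      fix Y Z assume "Y \<in> carr (tensor M N)" "Z \<in> carr (tensor M N)"
      thus "tlift L (\<lambda>x q. f x q (addm K p p')) (addm (tensor M N) Y Z) =
        addm L (tlift L (\<lambda>x q. f x q (addm K p p')) Y) (tlift L (\<lambda>x q. f x q (addm K p p')) Z)"
        using I.tlift_add b p by blast
    next
      fix Y Z assume YZ: "Y \<in> carr (tensor M N)" "Z \<in> carr (tensor M N)"
      have c: "\<And>U p. U \<in> carr (tensor M N) \<Longrightarrow> p \<in> carr K \<Longrightarrow> tlift L (\<lambda>x q. f x q p) U \<in> carr L"
        using I.tlift_closed b by blast
      show "addm L (tlift L (\<lambda>x q. f x q p) (addm (tensor M N) Y Z)) (tlift L (\<lambda>x q. f x q p') (addm (tensor M N) Y Z)) =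
        addm L (addm L (tlift L (\<lambda>x q. f x q p) Y) (tlift L (\<lambda>x q. f x q p') Y))
         (addm L (tlift L (\<lambda>x q. f x q p) Z) (tlift L (\<lambda>x q. f x q p') Z))"
        using YZ p I.tlift_add[OF b] c by (simp add: L.add_assoc L.add_lcomm)
    next
      fix x q assume "x \<in> carr M" "q \<in> carr N"
      thus "tlift L (\<lambda>x q. f x q (addm K p p')) (tens M N x q) =
        addm L (tlift L (\<lambda>x q. f x q p) (tens M N x q)) (tlift L (\<lambda>x q. f x q p') (tens M N x q))"
        using p I.tlift_tens b fa by simp
    qed
  next
    fix r X p assume "X \<in> carr (tensor M N)" "p \<in> carr K"
    thus "tlift L (\<lambda>x q. f x q p) (smulm (tensor M N) r X) = smulm L r (tlift L (\<lambda>x q. f x q p) X)"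
      using I.tlift_smul b by blast
  next
    fix r X p assume X: "X \<in> carr (tensor M N)" and p: "p \<in> carr K"
    show "tlift L (\<lambda>x q. f x q (smulm K r p)) X = smulm L r (tlift L (\<lambda>x q. f x q p) X)"
      using X
    proof (rule I.T_ext)
      fix Y assume "Y \<in> carr (tensor M N)"
      thus "tlift L (\<lambda>x q. f x q (smulm K r p)) Y \<in> carr L" using I.tlift_closed b p by blast
    next
      fix Y assume "Y \<in> carr (tensor M N)"
      thus "smulm L r (tlift L (\<lambda>x q. f x q p) Y) \<in> carr L" using I.tlift_closed b p by blast
    next
      fix Y Z assume "Y \<in> carr (tensor M N)" "Z \<in> carr (tensor M N)"
      thus "tlift L (\<lambda>x q. f x q (smulm K r p)) (addm (tensor M N) Y Z) =
        addm L (tlift L (\<lambda>x q. f x q (smulm K r p)) Y) (tlift L (\<lambda>x q. f x q (smulm K r p)) Z)"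
        using I.tlift_add b p by blast
    next
      fix Y Z assume YZ: "Y \<in> carr (tensor M N)" "Z \<in> carr (tensor M N)"
      have c: "\<And>U. U \<in> carr (tensor M N) \<Longrightarrow> tlift L (\<lambda>x q. f x q p) U \<in> carr L"
        using I.tlift_closed b p by blast
      show "smulm L r (tlift L (\<lambda>x q. f x q p) (addm (tensor M N) Y Z)) =
        addm L (smulm L r (tlift L (\<lambda>x q. f x q p) Y)) (smulm L r (tlift L (\<lambda>x q. f x q p) Z))"
        using YZ p I.tlift_add[OF b] c by (simp add: L.smul_add)
    next
      fix x q assume "x \<in> carr M" "q \<in> carr N"
      thus "tlift L (\<lambda>x q. f x q (smulm K r p)) (tens M N x q) = smulm L r (tlift L (\<lambda>x q. f x q p) (tens M N x q))"
        using p I.tlift_tens b fs by simp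
    qed
  qed
  show "\<And>x q p. x \<in> carr M \<Longrightarrow> q \<in> carr N \<Longrightarrow> p \<in> carr K \<Longrightarrow> tl3 L f (t3 x q p) = f x q p"
    unfolding tl3_def t3_def using OL.tlift_tens[OF bo] I.tlift_tens b by simp
  show "\<And>w. w \<in> carr T3 \<Longrightarrow> tl3 L f w \<in> carr L"
    unfolding tl3_def using OL.tlift_closed[OF bo] by blast
  show "\<And>w w'. w \<in> carr T3 \<Longrightarrow> w' \<in> carr T3 \<Longrightarrow> tl3 L f (addm T3 w w') = addm L (tl3 L f w) (tl3 L f w')"
    unfolding tl3_def using OL.tlift_add[OF bo] by blast
  show "\<And>w. w \<in> carr T3 \<Longrightarrow> tl3 L f (smulm T3 r w) = smulm L r (tl3 L f w)"
    unfolding tl3_def using OL.tlift_smul[OF bo] by blast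
qed


sublocale In: tm M N M N by unfold_locales
sublocale Out: tm "tensor M N" K "tensor M N" K by unfold_locales

definition "tm1 f = tmap (tensor M N) K (tmap M N f id) id"

lemma id_lin: "km A' \<Longrightarrow> klinear A' A' id" unfolding klinear_def km_def kmodule_def by auto

context fixes f assumes lf: "klinear M M f"
begin

lemma inner_lin: "klinear (tensor M N) (tensor M N) (tmap M N f id)"
  using In.tmap_lin[OF lf id_lin[OF N.km_axioms]] .

lemma tm1_t3: "x \<in> carr M \<Longrightarrow> q \<in> carr N \<Longrightarrow> p \<in> carr K \<Longrightarrow> tm1 f (t3 x q p) = t3 (f x) q p"
  unfolding tm1_def t3_def
  using Out.tmap_tens[OF inner_lin id_lin[OF K.km_axioms]] In.tmap_tens[OF lf id_lin[OF N.km_axioms]]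
  by simp

lemma tm1_lin: "klinear T3 T3 (tm1 f)"
  unfolding tm1_def using Out.tmap_lin[OF inner_lin id_lin[OF K.km_axioms]] .

lemma tm1_closed: "w \<in> carr T3 \<Longrightarrow> tm1 f w \<in> carr T3"
  using tm1_lin unfolding klinear_def by blast
lemma tm1_add: "w \<in> carr T3 \<Longrightarrow> w' \<in> carr T3 \<Longrightarrow> tm1 f (addm T3 w w') = addm T3 (tm1 f w) (tm1 f w')"
  using tm1_lin unfolding klinear_def by blast
lemma tm1_smul: "w \<in> carr T3 \<Longrightarrow> tm1 f (smulm T3 r w) = smulm T3 r (tm1 f w)"
  using tm1_lin unfolding klinear_def by blast

end

end




context km begin
lemma ks_prod: assumes "finite A" "finite B" "\<And>a b. a \<in> A \<Longrightarrow> b \<in> B \<Longrightarrow> f (a, b) \<in> carr M"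
  shows "ks M f (A \<times> B) = ks M (\<lambda>a. ks M (\<lambda>b. f (a, b)) B) A"
  using assms
proof (induction A rule: finite_induct)
  case empty thus ?case by simp
next
  case (insert a A)
  have e: "insert a A \<times> B = (\<lambda>b. (a, b)) ` B \<union> A \<times> B" by auto
  have "ks M f (insert a A \<times> B) = addm M (ks M f ((\<lambda>b. (a, b)) ` B)) (ks M f (A \<times> B))"
    unfolding e using insert by (intro ks_Un) auto
  also have "ks M f ((\<lambda>b. (a, b)) ` B) = ks M (\<lambda>b. f (a, b)) B"
    using insert by (subst ks_reindex) (auto simp: inj_on_def comp_def)
  also have "ks M f (A \<times> B) = ks M (\<lambda>a. ks M (\<lambda>b. f (a, b)) B) A" using insert by simp
  also have "addm M (ks M (\<lambda>b. f (a, b)) B) (ks M (\<lambda>a. ks M (\<lambda>b. f (a, b)) B) A) =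
     ks M (\<lambda>a. ks M (\<lambda>b. f (a, b)) B) (insert a A)"
    using insert by (intro ks_insert[symmetric]) auto
  finally show ?case .
qed

lemma ks_enum: assumes "finite I" "\<And>i. i \<in> I \<Longrightarrow> f i \<in> carr M"
  obtains n :: nat and h where "bij_betw h {..<n} I" "ks M f I = msum (addm M) (zerom M) (f \<circ> h) n"
proof -
  obtain h where h: "bij_betw h {..<card I} I" using assms(1) ex_bij_betw_nat_finite lessThan_atLeast0 by metis
  have "ks M f I = ks M f (h ` {..<card I})" using h by (simp add: bij_betw_def)
  also have "... = ks M (f \<circ> h) {..<card I}" using h assms(2) by (intro ks_reindex) (auto simp: bij_betw_def)
  also have "... = msum (addm M) (zerom M) (f \<circ> h) (card I)"
    using h assms(2) by (intro msum_ks[symmetric]) (auto simp: bij_betw_def)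
  finally show ?thesis using that h by blast
qed
end

locale kalg = km A for A :: "('k::comm_ring_1, 'a, 'z) kalg_scheme" + assumes alg: "kalgebra A"
begin
lemmas KA = alg[unfolded kalgebra_def]
lemma one_closed[simp,intro]: "onem A \<in> carr A" using KA by blast
lemma m_closed[simp,intro]: "x \<in> carr A \<Longrightarrow> y \<in> carr A \<Longrightarrow> mulm A x y \<in> carr A" using KA by blast
lemma m_assoc: "x \<in> carr A \<Longrightarrow> y \<in> carr A \<Longrightarrow> z \<in> carr A \<Longrightarrow> mulm A (mulm A x y) z = mulm A x (mulm A y z)"
  using KA by blast
lemma l_one[simp]: "x \<in> carr A \<Longrightarrow> mulm A (onem A) x = x" using KA by blast
lemma r_one[simp]: "x \<in> carr A \<Longrightarrow> mulm A x (onem A) = x" using KA by blast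
lemma distl: "x \<in> carr A \<Longrightarrow> y \<in> carr A \<Longrightarrow> z \<in> carr A \<Longrightarrow> mulm A x (addm A y z) = addm A (mulm A x y) (mulm A x z)"
  using KA by blast
lemma distr: "x \<in> carr A \<Longrightarrow> y \<in> carr A \<Longrightarrow> z \<in> carr A \<Longrightarrow> mulm A (addm A y z) x = addm A (mulm A y x) (mulm A z x)"
  using KA by blast
lemma smul_m1: "x \<in> carr A \<Longrightarrow> y \<in> carr A \<Longrightarrow> mulm A (smulm A r x) y = smulm A r (mulm A x y)"
  using KA by metis
lemma smul_m2: "x \<in> carr A \<Longrightarrow> y \<in> carr A \<Longrightarrow> mulm A x (smulm A r y) = smulm A r (mulm A x y)"
  using KA by metis
lemma lmul_lin: "b \<in> carr A \<Longrightarrow> klinear A A (\<lambda>x. mulm A b x)"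
  unfolding klinear_def by (auto simp: distl smul_m2)
lemma rmul_lin: "b \<in> carr A \<Longrightarrow> klinear A A (\<lambda>x. mulm A x b)"
  unfolding klinear_def by (auto simp: distr smul_m1)
lemma smul_one: "x \<in> carr A \<Longrightarrow> mulm A x (smulm A r (onem A)) = smulm A r x"
  by (simp add: smul_m2)
lemma m_zero[simp]: "x \<in> carr A \<Longrightarrow> mulm A x (zerom A) = zerom A"
  using smul_m2[of x "zerom A" 0] by simp
lemma zero_m[simp]: "x \<in> carr A \<Longrightarrow> mulm A (zerom A) x = zerom A"
  using smul_m1[of "zerom A" x 0] by simp
end




locale frob =
  fixes A B :: "('k::comm_ring_1, 'a) kalg" and P :: "('k, 'p) kmod" and P' :: "('k, 'q) kmod"
    and \<nu>A \<nu>B :: "'a \<Rightarrow> 'a"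
  assumes invP: "invertible_kmod P" and invP': "invertible_kmod P'"
    and frA: "frobenius A P" and frB: "frobenius B P'"
    and sub: "subalgebra B A"
    and rfA: "rfgp B (alg_bimod A)"
    and nA: "nakayama_aut A P \<nu>A" and nAB: "\<nu>A ` carr B = carr B"
    and nB: "nakayama_aut B P' \<nu>B"
begin

lemma A_alg: "kalgebra A" using sub unfolding subalgebra_def by blast
lemma B_alg: "kalgebra B" using sub unfolding subalgebra_def by blast

sublocale KA: kalg A
  by (rule kalg.intro, unfold km_def, use A_alg in \<open>simp add: kalgebra_def\<close>, rule kalg_axioms.intro, rule A_alg)
sublocale KB: kalg B
  by (rule kalg.intro, unfold km_def, use B_alg in \<open>simp add: kalgebra_def\<close>, rule kalg_axioms.intro, rule B_alg)
sublocale iP: inv P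
  by (rule inv.intro, unfold km_def, use invP in \<open>simp add: invertible_kmod_def\<close>, rule inv_axioms.intro, rule invP)
sublocale iP': inv P'
  by (rule inv.intro, unfold km_def, use invP' in \<open>simp add: invertible_kmod_def\<close>, rule inv_axioms.intro, rule invP')

abbreviation "Q \<equiv> kdual P'"
sublocale KQ: km Q by (unfold_locales, rule iP'.kdual_kmodule)
sublocale W3: tt B Q P by unfold_locales

abbreviation "W0 \<equiv> tensor (tensor B Q) P"

lemma subB: "carr B \<subseteq> carr A" using sub unfolding subalgebra_def by blast
lemma subB': "x \<in> carr B \<Longrightarrow> x \<in> carr A" using subB by blast
lemma sub_mul: "x \<in> carr B \<Longrightarrow> y \<in> carr B \<Longrightarrow> mulm B x y = mulm A x y" using sub unfolding subalgebra_def by blast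
lemma sub_add: "x \<in> carr B \<Longrightarrow> y \<in> carr B \<Longrightarrow> addm B x y = addm A x y" using sub unfolding subalgebra_def by blast
lemma sub_smul: "x \<in> carr B \<Longrightarrow> smulm B r x = smulm A r x" using sub unfolding subalgebra_def by blast
lemma sub_one: "onem B = onem A" using sub unfolding subalgebra_def by blast
lemma sub_zero: "zerom B = zerom A" using sub unfolding subalgebra_def by blast

definition "\<phi> = (SOME \<phi>. frobenius_hom A P \<phi> \<and> alg_aut A \<nu>A \<and> (\<forall>a\<in>carr A. \<forall>x\<in>carr A. \<phi> (mulm A x a) = \<phi> (mulm A (\<nu>A a) x)))"
definition "\<psi> = (SOME \<phi>. frobenius_hom B P' \<phi> \<and> alg_aut B \<nu>B \<and> (\<forall>a\<in>carr B. \<forall>x\<in>carr B. \<phi> (mulm B x a) = \<phi> (mulm B (\<nu>B a) x)))"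

lemma phi_spec: "frobenius_hom A P \<phi> \<and> alg_aut A \<nu>A \<and> (\<forall>a\<in>carr A. \<forall>x\<in>carr A. \<phi> (mulm A x a) = \<phi> (mulm A (\<nu>A a) x))"
  using nA unfolding nakayama_aut_def \<phi>_def by (rule someI_ex)
lemma psi_spec: "frobenius_hom B P' \<psi> \<and> alg_aut B \<nu>B \<and> (\<forall>a\<in>carr B. \<forall>x\<in>carr B. \<psi> (mulm B x a) = \<psi> (mulm B (\<nu>B a) x))"
  using nB unfolding nakayama_aut_def \<psi>_def by (rule someI_ex)

lemma phi_homk: "\<phi> \<in> homk A P" using phi_spec unfolding frobenius_hom_def by blast
lemma phi_bij: "bij_betw (hom_ract A P \<phi>) (carr A) (homk A P)" using phi_spec unfolding frobenius_hom_def by blast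
lemma phi_nak: "a \<in> carr A \<Longrightarrow> x \<in> carr A \<Longrightarrow> \<phi> (mulm A x a) = \<phi> (mulm A (\<nu>A a) x)" using phi_spec by blast
lemma psi_homk: "\<psi> \<in> homk B P'" using psi_spec unfolding frobenius_hom_def by blast
lemma psi_bij: "bij_betw (hom_ract B P' \<psi>) (carr B) (homk B P')" using psi_spec unfolding frobenius_hom_def by blast
lemma psi_nak: "a \<in> carr B \<Longrightarrow> x \<in> carr B \<Longrightarrow> \<psi> (mulm B x a) = \<psi> (mulm B (\<nu>B a) x)" using psi_spec by blast
lemma autA: "alg_aut A \<nu>A" using phi_spec by blast
lemma autB: "alg_aut B \<nu>B" using psi_spec by blast

lemma nuA_bij: "bij_betw \<nu>A (carr A) (carr A)" using autA unfolding alg_aut_def by blast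
lemma nuB_bij: "bij_betw \<nu>B (carr B) (carr B)" using autB unfolding alg_aut_def by blast
lemma nuB_add: "x \<in> carr B \<Longrightarrow> y \<in> carr B \<Longrightarrow> \<nu>B (addm B x y) = addm B (\<nu>B x) (\<nu>B y)" using autB unfolding alg_aut_def by blast
lemma nuB_mul: "x \<in> carr B \<Longrightarrow> y \<in> carr B \<Longrightarrow> \<nu>B (mulm B x y) = mulm B (\<nu>B x) (\<nu>B y)" using autB unfolding alg_aut_def by blast
lemma nuB_one: "\<nu>B (onem B) = onem B" using autB unfolding alg_aut_def by blast
lemma nuA_add: "x \<in> carr A \<Longrightarrow> y \<in> carr A \<Longrightarrow> \<nu>A (addm A x y) = addm A (\<nu>A x) (\<nu>A y)" using autA unfolding alg_aut_def by blast
lemma nuA_mul: "x \<in> carr A \<Longrightarrow> y \<in> carr A \<Longrightarrow> \<nu>A (mulm A x y) = mulm A (\<nu>A x) (\<nu>A y)" using autA unfolding alg_aut_def by blast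
lemma nuA_one: "\<nu>A (onem A) = onem A" using autA unfolding alg_aut_def by blast
lemma nuB_closed: "x \<in> carr B \<Longrightarrow> \<nu>B x \<in> carr B" using nuB_bij bij_betwE by blast
lemma nuA_closed: "x \<in> carr A \<Longrightarrow> \<nu>A x \<in> carr A" using nuA_bij bij_betwE by blast

definition "iA b = the_inv_into (carr A) \<nu>A b"
definition "\<beta> b = \<nu>B (iA b)"

lemma iA_nuA: "x \<in> carr A \<Longrightarrow> iA (\<nu>A x) = x"
  unfolding iA_def using nuA_bij by (simp add: bij_betw_def the_inv_into_f_f)

lemma iA_B: assumes "b \<in> carr B" shows "iA b \<in> carr B" "\<nu>A (iA b) = b"
proof -
  obtain b' where b': "b' \<in> carr B" "b = \<nu>A b'" using assms nAB by blast
  thus "iA b \<in> carr B" using iA_nuA subB' by simp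
  show "\<nu>A (iA b) = b" using b' iA_nuA subB' by simp
qed

lemma iA_mul: assumes "x \<in> carr B" "y \<in> carr B" shows "iA (mulm B x y) = mulm B (iA x) (iA y)"
proof -
  have "mulm B x y = \<nu>A (mulm B (iA x) (iA y))"
    using assms iA_B subB' by (simp add: sub_mul nuA_mul KB.m_closed)
  thus ?thesis using iA_nuA assms iA_B subB' KB.m_closed by simp
qed

lemma iA_add: assumes "x \<in> carr B" "y \<in> carr B" shows "iA (addm B x y) = addm B (iA x) (iA y)"
proof -
  have "addm B x y = \<nu>A (addm B (iA x) (iA y))"
    using assms iA_B subB' by (simp add: sub_add nuA_add)
  thus ?thesis using iA_nuA assms iA_B subB' KB.add_closed by simp
qed

lemma iA_one: "iA (onem B) = onem B"
  using iA_nuA[of "onem A"] nuA_one sub_one by simp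

lemma beta_closed[simp,intro]: "b \<in> carr B \<Longrightarrow> \<beta> b \<in> carr B" unfolding \<beta>_def using iA_B nuB_closed by blast
lemma beta_add: "x \<in> carr B \<Longrightarrow> y \<in> carr B \<Longrightarrow> \<beta> (addm B x y) = addm B (\<beta> x) (\<beta> y)"
  unfolding \<beta>_def using iA_add iA_B nuB_add by simp
lemma beta_mul: "x \<in> carr B \<Longrightarrow> y \<in> carr B \<Longrightarrow> \<beta> (mulm B x y) = mulm B (\<beta> x) (\<beta> y)"
  unfolding \<beta>_def using iA_mul iA_B nuB_mul by simp
lemma beta_one: "\<beta> (onem B) = onem B" unfolding \<beta>_def using iA_one nuB_one by simp
lemma beta_inj: assumes "x \<in> carr B" "y \<in> carr B" "\<beta> x = \<beta> y" shows "x = y"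
proof -
  have "iA x = iA y" using assms iA_B nuB_bij unfolding \<beta>_def bij_betw_def inj_on_def by blast
  thus ?thesis using iA_B assms by metis
qed
lemma beta_surj: assumes "c \<in> carr B" shows "\<exists>b\<in>carr B. \<beta> b = c"
proof -
  obtain c' where c': "c' \<in> carr B" "c = \<nu>B c'" using assms nuB_bij bij_betw_imp_surj_on by (metis imageE)
  have "\<beta> (\<nu>A c') = c" unfolding \<beta>_def using c' iA_nuA subB' by simp
  moreover have "\<nu>A c' \<in> carr B" using c' nAB by blast
  ultimately show ?thesis by blast
qed

definition "\<Psi> x = hom_ract B P' \<psi> x"
definition "\<Psi>inv g = the_inv_into (carr B) \<Psi> g"

lemma Psi_bij: "bij_betw \<Psi> (carr B) (homk B P')" using psi_bij unfolding \<Psi>_def[abs_def] .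

lemma Psi_app: "\<Psi> x c = (if c \<in> carr B then \<psi> (mulm B x c) else zerom P')"
  unfolding \<Psi>_def hom_ract_def by simp

lemma Psiinv: assumes "g \<in> homk B P'" shows "\<Psi>inv g \<in> carr B" "\<Psi> (\<Psi>inv g) = g"
  using assms Psi_bij unfolding \<Psi>inv_def bij_betw_def
  by (auto intro: the_inv_into_into f_the_inv_into_f)

lemma Psiinv_spec: assumes "g \<in> homk B P'" "c \<in> carr B" shows "\<psi> (mulm B (\<Psi>inv g) c) = g c"
  using Psiinv[OF assms(1)] Psi_app[of "\<Psi>inv g" c] assms(2) by simp

lemma Psiinv_eq: assumes "g \<in> homk B P'" "x \<in> carr B" "\<And>c. c \<in> carr B \<Longrightarrow> \<psi> (mulm B x c) = g c"
  shows "\<Psi>inv g = x"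
proof -
  have "\<Psi> x = g"
  proof
    fix c show "\<Psi> x c = g c" using assms KB.homk_ext[OF assms(1)] Psi_app by auto
  qed
  thus ?thesis unfolding \<Psi>inv_def using Psi_bij assms(2) the_inv_into_f_f[of \<Psi> "carr B" x]
    by (simp add: bij_betw_def)
qed

end




context tt begin
lemma T3_self_ext: assumes "w \<in> carr T3"
  and "\<And>X. X \<in> carr T3 \<Longrightarrow> h1 X \<in> carr T3" "\<And>X. X \<in> carr T3 \<Longrightarrow> h2 X \<in> carr T3"
  and "\<And>X Y. X \<in> carr T3 \<Longrightarrow> Y \<in> carr T3 \<Longrightarrow> h1 (addm T3 X Y) = addm T3 (h1 X) (h1 Y)"
  and "\<And>X Y. X \<in> carr T3 \<Longrightarrow> Y \<in> carr T3 \<Longrightarrow> h2 (addm T3 X Y) = addm T3 (h2 X) (h2 Y)"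
  and "\<And>x q p. x \<in> carr M \<Longrightarrow> q \<in> carr N \<Longrightarrow> p \<in> carr K \<Longrightarrow> h1 (t3 x q p) = h2 (t3 x q p)"
  shows "h1 w = h2 w"
  by (rule T3_ext[OF assms(1) O.T_kmodule assms(2-6)])
end

context frob begin

definition "lW b = W3.tm1 (\<lambda>x. mulm B (\<beta> b) x)"
definition "rW c = W3.tm1 (\<lambda>x. mulm B x c)"
abbreviation "WW \<equiv> W_bimod B \<beta> Q P"

lemma beta_eq: "(\<lambda>b. \<nu>B (the_inv_into (carr A) \<nu>A b)) = \<beta>"
  by (rule ext) (simp add: \<beta>_def iA_def)

lemma WW_simps: "bcarr WW = carr W0" "badd WW = addm W0" "bzero WW = zerom W0"
  "lact WW b = lW b" "ract WW w c = rW c w"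
  unfolding W_bimod_def Let_def lW_def rW_def W3.tm1_def by simp_all

lemma lW_lin: "b \<in> carr B \<Longrightarrow> klinear B B (\<lambda>x. mulm B (\<beta> b) x)" by (rule KB.lmul_lin) simp
lemma rW_lin: "c \<in> carr B \<Longrightarrow> klinear B B (\<lambda>x. mulm B x c)" by (rule KB.rmul_lin)

lemma lW_t3: "b \<in> carr B \<Longrightarrow> x \<in> carr B \<Longrightarrow> q \<in> carr Q \<Longrightarrow> p \<in> carr P \<Longrightarrow>
   lW b (W3.t3 x q p) = W3.t3 (mulm B (\<beta> b) x) q p"
  unfolding lW_def using W3.tm1_t3[OF lW_lin] by simp
lemma rW_t3: "c \<in> carr B \<Longrightarrow> x \<in> carr B \<Longrightarrow> q \<in> carr Q \<Longrightarrow> p \<in> carr P \<Longrightarrow>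
   rW c (W3.t3 x q p) = W3.t3 (mulm B x c) q p"
  unfolding rW_def using W3.tm1_t3[OF rW_lin] by simp
lemma lW_closed[simp,intro]: "b \<in> carr B \<Longrightarrow> w \<in> carr W0 \<Longrightarrow> lW b w \<in> carr W0"
  unfolding lW_def using W3.tm1_closed[OF lW_lin] by simp
lemma rW_closed[simp,intro]: "c \<in> carr B \<Longrightarrow> w \<in> carr W0 \<Longrightarrow> rW c w \<in> carr W0"
  unfolding rW_def using W3.tm1_closed[OF rW_lin] by simp
lemma lW_add: "b \<in> carr B \<Longrightarrow> w \<in> carr W0 \<Longrightarrow> w' \<in> carr W0 \<Longrightarrow> lW b (addm W0 w w') = addm W0 (lW b w) (lW b w')"
  unfolding lW_def using W3.tm1_add[OF lW_lin] by simp
lemma rW_add: "c \<in> carr B \<Longrightarrow> w \<in> carr W0 \<Longrightarrow> w' \<in> carr W0 \<Longrightarrow> rW c (addm W0 w w') = addm W0 (rW c w) (rW c w')"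
  unfolding rW_def using W3.tm1_add[OF rW_lin] by simp
lemma lW_smul: "b \<in> carr B \<Longrightarrow> w \<in> carr W0 \<Longrightarrow> lW b (smulm W0 r w) = smulm W0 r (lW b w)"
  unfolding lW_def using W3.tm1_smul[OF lW_lin] by simp
lemma rW_smul: "c \<in> carr B \<Longrightarrow> w \<in> carr W0 \<Longrightarrow> rW c (smulm W0 r w) = smulm W0 r (rW c w)"
  unfolding rW_def using W3.tm1_smul[OF rW_lin] by simp

lemma W0_add_comm4: "a \<in> carr W0 \<Longrightarrow> b \<in> carr W0 \<Longrightarrow> c \<in> carr W0 \<Longrightarrow> d \<in> carr W0 \<Longrightarrow>
  addm W0 (addm W0 a b) (addm W0 c d) = addm W0 (addm W0 a c) (addm W0 b d)"
  by (simp add: W3.O.T.add_assoc W3.O.T.add_lcomm)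

lemma lW_addb: assumes "b \<in> carr B" "c \<in> carr B" "w \<in> carr W0"
  shows "lW (addm B b c) w = addm W0 (lW b w) (lW c w)"
  using assms(3)
proof (rule W3.T3_self_ext)
  fix X Y assume "X \<in> carr W0" "Y \<in> carr W0"
  thus "addm W0 (lW b (addm W0 X Y)) (lW c (addm W0 X Y)) = addm W0 (addm W0 (lW b X) (lW c X)) (addm W0 (lW b Y) (lW c Y))"
    using assms by (simp add: lW_add W0_add_comm4)
next
  fix x q p assume "x \<in> carr B" "q \<in> carr Q" "p \<in> carr P"
  thus "lW (addm B b c) (W3.t3 x q p) = addm W0 (lW b (W3.t3 x q p)) (lW c (W3.t3 x q p))"
    using assms by (simp add: lW_t3 beta_add KB.distr W3.t3_add1)
qed (use assms in \<open>simp_all add: lW_add\<close>)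

lemma rW_addb: assumes "b \<in> carr B" "c \<in> carr B" "w \<in> carr W0"
  shows "rW (addm B b c) w = addm W0 (rW b w) (rW c w)"
  using assms(3)
proof (rule W3.T3_self_ext)
  fix X Y assume "X \<in> carr W0" "Y \<in> carr W0"
  thus "addm W0 (rW b (addm W0 X Y)) (rW c (addm W0 X Y)) = addm W0 (addm W0 (rW b X) (rW c X)) (addm W0 (rW b Y) (rW c Y))"
    using assms by (simp add: rW_add W0_add_comm4)
next
  fix x q p assume "x \<in> carr B" "q \<in> carr Q" "p \<in> carr P"
  thus "rW (addm B b c) (W3.t3 x q p) = addm W0 (rW b (W3.t3 x q p)) (rW c (W3.t3 x q p))"
    using assms by (simp add: rW_t3 KB.distl W3.t3_add1)
qed (use assms in \<open>simp_all add: rW_add\<close>)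

lemma lW_mulb: assumes "b \<in> carr B" "c \<in> carr B" "w \<in> carr W0"
  shows "lW (mulm B b c) w = lW b (lW c w)"
  using assms(3)
proof (rule W3.T3_self_ext)
  fix x q p assume "x \<in> carr B" "q \<in> carr Q" "p \<in> carr P"
  thus "lW (mulm B b c) (W3.t3 x q p) = lW b (lW c (W3.t3 x q p))"
    using assms by (simp add: lW_t3 beta_mul KB.m_assoc)
qed (use assms in \<open>simp_all add: lW_add\<close>)

lemma rW_mulb: assumes "b \<in> carr B" "c \<in> carr B" "w \<in> carr W0"
  shows "rW (mulm B b c) w = rW c (rW b w)"
  using assms(3)
proof (rule W3.T3_self_ext)
  fix x q p assume "x \<in> carr B" "q \<in> carr Q" "p \<in> carr P"
  thus "rW (mulm B b c) (W3.t3 x q p) = rW c (rW b (W3.t3 x q p))"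
    using assms by (simp add: rW_t3 KB.m_assoc)
qed (use assms in \<open>simp_all add: rW_add\<close>)

lemma lW_rW: assumes "b \<in> carr B" "c \<in> carr B" "w \<in> carr W0"
  shows "lW b (rW c w) = rW c (lW b w)"
  using assms(3)
proof (rule W3.T3_self_ext)
  fix x q p assume "x \<in> carr B" "q \<in> carr Q" "p \<in> carr P"
  thus "lW b (rW c (W3.t3 x q p)) = rW c (lW b (W3.t3 x q p))"
    using assms by (simp add: lW_t3 rW_t3 KB.m_assoc)
qed (use assms in \<open>simp_all add: lW_add rW_add\<close>)

lemma lW_one: assumes "w \<in> carr W0" shows "lW (onem B) w = w"
  using assms
proof (rule W3.T3_self_ext)
  fix x q p assume "x \<in> carr B" "q \<in> carr Q" "p \<in> carr P"
  thus "lW (onem B) (W3.t3 x q p) = W3.t3 x q p"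
    using assms by (simp add: lW_t3 beta_one)
qed (use assms in \<open>simp_all add: lW_add\<close>)

lemma rW_one: assumes "w \<in> carr W0" shows "rW (onem B) w = w"
  using assms
proof (rule W3.T3_self_ext)
  fix x q p assume "x \<in> carr B" "q \<in> carr Q" "p \<in> carr P"
  thus "rW (onem B) (W3.t3 x q p) = W3.t3 x q p"
    using assms by (simp add: rW_t3)
qed (use assms in \<open>simp_all add: rW_add\<close>)

lemma rW_scalar: assumes "w \<in> carr W0" shows "rW (smulm B r (onem B)) w = smulm W0 r w"
  using assms
proof (rule W3.T3_self_ext)
  fix x q p assume "x \<in> carr B" "q \<in> carr Q" "p \<in> carr P"
  thus "rW (smulm B r (onem B)) (W3.t3 x q p) = smulm W0 r (W3.t3 x q p)"
    using assms by (simp add: rW_t3 KB.smul_one W3.t3_smul1)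
qed (use assms in \<open>simp_all add: rW_add W3.O.T.smul_add\<close>)

lemma WW_bimodule: "bimodule B WW"
  unfolding bimodule_def WW_simps
proof (intro conjI ballI)
  fix x assume "x \<in> carr W0"
  thus "\<exists>y\<in>carr W0. addm W0 x y = zerom W0" by (rule W3.O.T.neg_ex)
qed (simp_all add: W3.O.T.add_assoc lW_add rW_add lW_addb rW_addb lW_mulb rW_mulb lW_rW lW_one rW_one, (rule W3.O.T.add_comm; assumption))

end




context km begin
lemma kfgp_db: assumes "kfgp M"
  obtains n :: nat and e \<xi> where "\<forall>i<n. e i \<in> carr M \<and> \<xi> i \<in> homk M kring"
      "\<forall>y\<in>carr M. y = ks M (\<lambda>i. smulm M (\<xi> i y) (e i)) {..<n}"
proof -
  obtain n e \<xi> where 1: "\<forall>i<n. e i \<in> carr M \<and> \<xi> i \<in> homk M kring"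
    "\<forall>y\<in>carr M. y = msum (addm M) (zerom M) (\<lambda>i. smulm M (\<xi> i y) (e i)) n"
    using assms unfolding kfgp_def by (elim exE conjE) (rule that, assumption+)
  have B: "\<forall>y\<in>carr M. y = ks M (\<lambda>i. smulm M (\<xi> i y) (e i)) {..<n}"
  proof
    fix y assume y: "y \<in> carr M"
    have "y = msum (addm M) (zerom M) (\<lambda>i. smulm M (\<xi> i y) (e i)) n" using 1(2) y by (rule bspec)
    also have "... = ks M (\<lambda>i. smulm M (\<xi> i y) (e i)) {..<n}" using 1 homk_closed by (intro msum_ks) auto
    finally show "y = ks M (\<lambda>i. smulm M (\<xi> i y) (e i)) {..<n}" .
  qed
  show ?thesis by (rule that[OF 1(1) B])
qed
end

locale frob2 = frob A B P P' \<nu>A \<nu>B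
  for A B :: "('k::comm_ring_1, 'a) kalg" and P :: "('k, 'p) kmod" and P' :: "('k, 'q) kmod"
    and \<nu>A \<nu>B :: "'a \<Rightarrow> 'a" +
  fixes np :: nat and pl :: "nat \<Rightarrow> 'p" and \<pi>l :: "nat \<Rightarrow> 'p \<Rightarrow> 'k"
    and I1 :: "(nat \<times> nat) set" and qg :: "nat \<times> nat \<Rightarrow> 'q \<Rightarrow> 'k" and yg :: "nat \<times> nat \<Rightarrow> 'q"
    and ne :: nat and e :: "nat \<Rightarrow> 'q" and \<xi> :: "nat \<Rightarrow> 'q \<Rightarrow> 'k"
    and I2 :: "(nat \<times> nat) set" and \<pi>g :: "nat \<times> nat \<Rightarrow> 'p \<Rightarrow> 'k" and pg :: "nat \<times> nat \<Rightarrow> 'p"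
    and nb :: nat and bb :: "nat \<Rightarrow> 'a" and \<beta>b :: "nat \<Rightarrow> 'a \<Rightarrow> 'k"
  assumes dbP: "\<forall>i<np. pl i \<in> carr P \<and> \<pi>l i \<in> homk P kring"
      "\<forall>y\<in>carr P. y = ks P (\<lambda>i. smulm P (\<pi>l i y) (pl i)) {..<np}"
    and gP': "finite I1" "\<forall>i\<in>I1. qg i \<in> homk P' kring \<and> yg i \<in> carr P'" "(\<Sum>i\<in>I1. qg i (yg i)) = 1"
    and dbP': "\<forall>i<ne. e i \<in> carr P' \<and> \<xi> i \<in> homk P' kring"
      "\<forall>y\<in>carr P'. y = ks P' (\<lambda>i. smulm P' (\<xi> i y) (e i)) {..<ne}"
    and gP: "finite I2" "\<forall>i\<in>I2. \<pi>g i \<in> homk P kring \<and> pg i \<in> carr P" "(\<Sum>i\<in>I2. \<pi>g i (pg i)) = 1"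
    and dbB: "\<forall>i<nb. bb i \<in> carr B \<and> \<beta>b i \<in> homk B kring"
      "\<forall>y\<in>carr B. y = ks B (\<lambda>i. smulm B (\<beta>b i y) (bb i)) {..<nb}"
begin

lemma pl_c[simp,intro]: "i < np \<Longrightarrow> pl i \<in> carr P" using dbP by blast
lemma \<pi>l_h[simp,intro]: "i < np \<Longrightarrow> \<pi>l i \<in> homk P kring" using dbP by blast
lemma qg_h[simp,intro]: "i \<in> I1 \<Longrightarrow> qg i \<in> homk P' kring" using gP' by blast
lemma qg_Q[simp,intro]: "i \<in> I1 \<Longrightarrow> qg i \<in> carr Q" using gP' by simp
lemma yg_c[simp,intro]: "i \<in> I1 \<Longrightarrow> yg i \<in> carr P'" using gP' by blast
lemma e_c[simp,intro]: "i < ne \<Longrightarrow> e i \<in> carr P'" using dbP' by blast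
lemma \<xi>_h[simp,intro]: "i < ne \<Longrightarrow> \<xi> i \<in> homk P' kring" using dbP' by blast
lemma \<xi>_Q[simp,intro]: "i < ne \<Longrightarrow> \<xi> i \<in> carr Q" using dbP' by simp
lemma \<pi>g_h[simp,intro]: "i \<in> I2 \<Longrightarrow> \<pi>g i \<in> homk P kring" using gP by blast
lemma pg_c[simp,intro]: "i \<in> I2 \<Longrightarrow> pg i \<in> carr P" using gP by blast
lemma bb_c[simp,intro]: "i < nb \<Longrightarrow> bb i \<in> carr B" using dbB by blast
lemma \<beta>b_h[simp,intro]: "i < nb \<Longrightarrow> \<beta>b i \<in> homk B kring" using dbB by blast

lemma Q_h: "q \<in> carr Q \<Longrightarrow> q \<in> homk P' kring" by simp

lemma psi_c[simp,intro]: "x \<in> carr B \<Longrightarrow> \<psi> x \<in> carr P'" using psi_homk KB.homk_closed by blast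
lemma psi_add: "x \<in> carr B \<Longrightarrow> y \<in> carr B \<Longrightarrow> \<psi> (addm B x y) = addm P' (\<psi> x) (\<psi> y)"
  using psi_homk KB.homk_add by blast
lemma psi_smul: "x \<in> carr B \<Longrightarrow> \<psi> (smulm B r x) = smulm P' r (\<psi> x)"
  using psi_homk KB.homk_smul by blast

lemma q_add: "q \<in> carr Q \<Longrightarrow> x \<in> carr P' \<Longrightarrow> y \<in> carr P' \<Longrightarrow> q (addm P' x y) = q x + q y"
  using iP'.homk_add[of q kring] by simp
lemma q_smul: "q \<in> carr Q \<Longrightarrow> x \<in> carr P' \<Longrightarrow> q (smulm P' r x) = r * q x"
  using iP'.homk_smul[of q kring] by simp
lemma q_ext: "q \<in> carr Q \<Longrightarrow> x \<notin> carr P' \<Longrightarrow> q x = 0"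
  using iP'.homk_ext[of q kring] by simp

lemma kP_add: "\<pi> \<in> homk P kring \<Longrightarrow> x \<in> carr P \<Longrightarrow> y \<in> carr P \<Longrightarrow> \<pi> (addm P x y) = \<pi> x + \<pi> y"
  using iP.homk_add[of \<pi> kring] by simp
lemma kP_smul: "\<pi> \<in> homk P kring \<Longrightarrow> x \<in> carr P \<Longrightarrow> \<pi> (smulm P r x) = r * \<pi> x"
  using iP.homk_smul[of \<pi> kring] by simp
lemma kB_add: "\<pi> \<in> homk B kring \<Longrightarrow> x \<in> carr B \<Longrightarrow> y \<in> carr B \<Longrightarrow> \<pi> (addm B x y) = \<pi> x + \<pi> y"
  using KB.homk_add[of \<pi> kring] by simp
lemma kB_smul: "\<pi> \<in> homk B kring \<Longrightarrow> x \<in> carr B \<Longrightarrow> \<pi> (smulm B r x) = r * \<pi> x"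
  using KB.homk_smul[of \<pi> kring] by simp

definition "f\<Theta> x q p = smulm P (q (\<psi> x)) p"
definition "\<Theta>1 w = W3.tl3 P f\<Theta> w"

lemma tril_\<Theta>: "W3.tril P f\<Theta>"
  unfolding W3.tril_def bil_def f\<Theta>_def
  by (intro conjI ballI allI)
     (simp_all add: psi_add psi_smul q_add q_smul iP.add_smul iP.smul_add iP.smul_smul[symmetric] mult.commute distrib_right)

lemmas \<Theta>1_all = W3.tl3[OF iP.kmod tril_\<Theta>, folded \<Theta>1_def]
lemma \<Theta>1_t3: "x \<in> carr B \<Longrightarrow> q \<in> carr Q \<Longrightarrow> p \<in> carr P \<Longrightarrow> \<Theta>1 (W3.t3 x q p) = smulm P (q (\<psi> x)) p"
  using \<Theta>1_all(1) f\<Theta>_def by simp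
lemma \<Theta>1_c[simp,intro]: "w \<in> carr W0 \<Longrightarrow> \<Theta>1 w \<in> carr P" using \<Theta>1_all(2) by blast
lemma \<Theta>1_add: "w \<in> carr W0 \<Longrightarrow> w' \<in> carr W0 \<Longrightarrow> \<Theta>1 (addm W0 w w') = addm P (\<Theta>1 w) (\<Theta>1 w')" using \<Theta>1_all(3) by blast
lemma \<Theta>1_smul: "w \<in> carr W0 \<Longrightarrow> \<Theta>1 (smulm W0 r w) = smulm P r (\<Theta>1 w)" using \<Theta>1_all(4) by blast

definition "f\<theta> y \<pi> x q p = smulm B (q y * \<pi> p) x"
definition "\<theta> y \<pi> w = (if w \<in> carr W0 then W3.tl3 B (f\<theta> y \<pi>) w else zerom B)"

lemma tril_\<theta>: "y \<in> carr P' \<Longrightarrow> \<pi> \<in> homk P kring \<Longrightarrow> W3.tril B (f\<theta> y \<pi>)"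
  unfolding W3.tril_def bil_def f\<theta>_def
  by (intro conjI ballI allI)
     (simp_all add: kP_add kP_smul KB.add_smul KB.smul_add KB.smul_smul[symmetric] mult.commute distrib_right distrib_left mult.left_commute)

lemma \<theta>_all: assumes "y \<in> carr P'" "\<pi> \<in> homk P kring"
  shows "\<And>x q p. x \<in> carr B \<Longrightarrow> q \<in> carr Q \<Longrightarrow> p \<in> carr P \<Longrightarrow> \<theta> y \<pi> (W3.t3 x q p) = smulm B (q y * \<pi> p) x"
    "\<And>w. w \<in> carr W0 \<Longrightarrow> \<theta> y \<pi> w \<in> carr B"
    "\<And>w w'. w \<in> carr W0 \<Longrightarrow> w' \<in> carr W0 \<Longrightarrow> \<theta> y \<pi> (addm W0 w w') = addm B (\<theta> y \<pi> w) (\<theta> y \<pi> w')"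
    "\<And>w. w \<notin> carr W0 \<Longrightarrow> \<theta> y \<pi> w = zerom B"
  using W3.tl3[OF KB.kmod tril_\<theta>[OF assms]] unfolding \<theta>_def f\<theta>_def by auto

lemma \<theta>_rW: assumes "y \<in> carr P'" "\<pi> \<in> homk P kring" "b \<in> carr B" "w \<in> carr W0"
  shows "\<theta> y \<pi> (rW b w) = mulm B (\<theta> y \<pi> w) b"
  using assms(4)
proof (rule W3.T3_ext[OF _ KB.kmod])
  fix x q p assume "x \<in> carr B" "q \<in> carr Q" "p \<in> carr P"
  thus "\<theta> y \<pi> (rW b (W3.t3 x q p)) = mulm B (\<theta> y \<pi> (W3.t3 x q p)) b"
    using assms by (simp add: rW_t3 \<theta>_all KB.smul_m1)
qed (use assms in \<open>simp_all add: \<theta>_all rW_add KB.distr\<close>)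

lemma \<theta>_rhom: "y \<in> carr P' \<Longrightarrow> \<pi> \<in> homk P kring \<Longrightarrow> \<theta> y \<pi> \<in> rhom B WW (alg_bimod B)"
  unfolding rhom_def WW_simps alg_bimod_def using \<theta>_all \<theta>_rW by simp

lemma \<theta>_lW: assumes "y \<in> carr P'" "\<pi> \<in> homk P kring" "b \<in> carr B" "x \<in> carr B" "q \<in> carr Q" "p \<in> carr P"
  shows "\<theta> y \<pi> (lW b (W3.t3 x q p)) = mulm B (\<beta> b) (\<theta> y \<pi> (W3.t3 x q p))"
  using assms by (simp add: lW_t3 \<theta>_all KB.smul_m2)

definition "fT m y x q p = smulm P (\<beta>b m x * q y) p"
definition "Tm m y w = W3.tl3 P (fT m y) w"

lemma tril_T: "m < nb \<Longrightarrow> y \<in> carr P' \<Longrightarrow> W3.tril P (fT m y)"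
  unfolding W3.tril_def bil_def fT_def using \<beta>b_h[of m]
  by (intro conjI ballI allI)
     (simp_all add: kB_add kB_smul iP.add_smul iP.smul_add iP.smul_smul[symmetric] mult.commute distrib_right distrib_left mult.left_commute)

lemma T_all: assumes "m < nb" "y \<in> carr P'"
  shows "\<And>x q p. x \<in> carr B \<Longrightarrow> q \<in> carr Q \<Longrightarrow> p \<in> carr P \<Longrightarrow> Tm m y (W3.t3 x q p) = smulm P (\<beta>b m x * q y) p"
    "\<And>w. w \<in> carr W0 \<Longrightarrow> Tm m y w \<in> carr P"
    "\<And>w w'. w \<in> carr W0 \<Longrightarrow> w' \<in> carr W0 \<Longrightarrow> Tm m y (addm W0 w w') = addm P (Tm m y w) (Tm m y w')"
    "\<And>w. w \<in> carr W0 \<Longrightarrow> Tm m y (smulm W0 r w) = smulm P r (Tm m y w)"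
  using W3.tl3[OF iP.kmod tril_T[OF assms]] unfolding Tm_def fT_def by auto

end




context frob2 begin

lemma P'_add4: "a \<in> carr P' \<Longrightarrow> b \<in> carr P' \<Longrightarrow> c \<in> carr P' \<Longrightarrow> d \<in> carr P' \<Longrightarrow>
  addm P' (addm P' a b) (addm P' c d) = addm P' (addm P' a c) (addm P' b d)"
  by (simp add: iP'.add_assoc iP'.add_lcomm)

lemma homkB_add: assumes "g1 \<in> homk B P'" "g2 \<in> homk B P'"
  shows "(\<lambda>c. if c \<in> carr B then addm P' (g1 c) (g2 c) else zerom P') \<in> homk B P'"
  using assms
  by (intro KB.homkI) (simp_all add: KB.homk_closed KB.homk_add KB.homk_smul P'_add4 iP'.smul_add)

lemma homkB_smul: assumes "g \<in> homk B P'"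
  shows "(\<lambda>c. if c \<in> carr B then smulm P' r (g c) else zerom P') \<in> homk B P'"
  using assms
  by (intro KB.homkI) (simp_all add: KB.homk_closed KB.homk_add KB.homk_smul iP'.smul_add iP'.smul_smul[symmetric] mult.commute)

lemma Psiinv_add: assumes "g1 \<in> homk B P'" "g2 \<in> homk B P'"
  shows "\<Psi>inv (\<lambda>c. if c \<in> carr B then addm P' (g1 c) (g2 c) else zerom P') = addm B (\<Psi>inv g1) (\<Psi>inv g2)"
  using homkB_add[OF assms] Psiinv[OF assms(1)] Psiinv[OF assms(2)]
  by (intro Psiinv_eq) (simp_all add: KB.distr psi_add Psiinv_spec assms)

lemma Psiinv_smul: assumes "g \<in> homk B P'"
  shows "\<Psi>inv (\<lambda>c. if c \<in> carr B then smulm P' r (g c) else zerom P') = smulm B r (\<Psi>inv g)"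
  using homkB_smul[OF assms] Psiinv[OF assms]
  by (intro Psiinv_eq) (simp_all add: KB.smul_m1 psi_smul Psiinv_spec assms)

lemma Psiinv_shift: assumes "g \<in> homk B P'" "b \<in> carr B"
  shows "\<Psi>inv (\<lambda>c. if c \<in> carr B then g (mulm B b c) else zerom P') = mulm B (\<Psi>inv g) b"
proof (rule Psiinv_eq)
  show "(\<lambda>c. if c \<in> carr B then g (mulm B b c) else zerom P') \<in> homk B P'"
    using assms by (intro KB.homkI) (simp_all add: KB.homk_closed KB.homk_add KB.homk_smul KB.distl KB.smul_m2)
  show "mulm B (\<Psi>inv g) b \<in> carr B" using assms Psiinv by simp
  fix c assume "c \<in> carr B"
  thus "\<psi> (mulm B (mulm B (\<Psi>inv g) b) c) = (if c \<in> carr B then g (mulm B b c) else zerom P')"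
    using assms Psiinv by (simp add: KB.m_assoc Psiinv_spec)
qed

lemma Psiinv_twist: assumes "g \<in> homk B P'" "b \<in> carr B"
  shows "\<Psi>inv (\<lambda>c. if c \<in> carr B then g (mulm B c b) else zerom P') = mulm B (\<nu>B b) (\<Psi>inv g)"
proof (rule Psiinv_eq)
  show "(\<lambda>c. if c \<in> carr B then g (mulm B c b) else zerom P') \<in> homk B P'"
    using assms by (intro KB.homkI) (simp_all add: KB.homk_closed KB.homk_add KB.homk_smul KB.distr KB.smul_m1)
  show "mulm B (\<nu>B b) (\<Psi>inv g) \<in> carr B" using assms Psiinv nuB_closed by simp
  fix c assume c: "c \<in> carr B"
  have "\<psi> (mulm B (mulm B (\<nu>B b) (\<Psi>inv g)) c) = \<psi> (mulm B (\<nu>B b) (mulm B (\<Psi>inv g) c))"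
    using assms c Psiinv nuB_closed by (simp add: KB.m_assoc)
  also have "... = \<psi> (mulm B (mulm B (\<Psi>inv g) c) b)"
    using assms c Psiinv by (simp add: psi_nak)
  also have "... = \<psi> (mulm B (\<Psi>inv g) (mulm B c b))"
    using assms c Psiinv by (simp add: KB.m_assoc)
  also have "... = g (mulm B c b)" using assms c by (simp add: Psiinv_spec)
  finally show "\<psi> (mulm B (mulm B (\<nu>B b) (\<Psi>inv g)) c) = (if c \<in> carr B then g (mulm B c b) else zerom P')"
    using c by simp
qed

definition "Gu u l j = (\<lambda>c. if c \<in> carr B then smulm P' (\<pi>l l (\<phi> (mulm A u c))) (yg j) else zerom P')"
definition "Hu u = ks W0 (\<lambda>lj. W3.t3 (\<Psi>inv (Gu u (fst lj) (snd lj))) (qg (snd lj)) (pl (fst lj))) ({..<np} \<times> I1)"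
definition "H a = (\<lambda>z. if z \<in> carr A then Hu (mulm A a z) else zerom W0)"

lemma phi_c: "x \<in> carr A \<Longrightarrow> \<phi> x \<in> carr P" using phi_homk KA.homk_closed by blast
lemma phi_add: "x \<in> carr A \<Longrightarrow> y \<in> carr A \<Longrightarrow> \<phi> (addm A x y) = addm P (\<phi> x) (\<phi> y)"
  using phi_homk KA.homk_add by blast
lemma phi_smul: "x \<in> carr A \<Longrightarrow> \<phi> (smulm A r x) = smulm P r (\<phi> x)"
  using phi_homk KA.homk_smul by blast

lemma phiu_add: "u \<in> carr A \<Longrightarrow> c \<in> carr B \<Longrightarrow> c' \<in> carr B \<Longrightarrow>
  \<phi> (mulm A u (addm B c c')) = addm P (\<phi> (mulm A u c)) (\<phi> (mulm A u c'))"
  by (simp add: sub_add subB' KA.distl phi_add)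
lemma phiu_smul: "u \<in> carr A \<Longrightarrow> c \<in> carr B \<Longrightarrow>
  \<phi> (mulm A u (smulm B r c)) = smulm P r (\<phi> (mulm A u c))"
  by (simp add: sub_smul subB' KA.smul_m2 phi_smul)

lemma Gu_homk: assumes "u \<in> carr A" "l < np" "j \<in> I1" shows "Gu u l j \<in> homk B P'"
  unfolding Gu_def using assms \<pi>l_h[OF assms(2)]
  by (intro KB.homkI) (simp_all add: subB' phiu_add phiu_smul phi_c
      kP_add kP_smul iP'.add_smul iP'.smul_smul)

lemma Psiinv_Gu[simp,intro]: "u \<in> carr A \<Longrightarrow> l < np \<Longrightarrow> j \<in> I1 \<Longrightarrow> \<Psi>inv (Gu u l j) \<in> carr B"
  using Gu_homk Psiinv by blast

lemma Hu_term_c: "u \<in> carr A \<Longrightarrow> lj \<in> {..<np} \<times> I1 \<Longrightarrow>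
   W3.t3 (\<Psi>inv (Gu u (fst lj) (snd lj))) (qg (snd lj)) (pl (fst lj)) \<in> carr W0"
  by (rule W3.t3_closed) (auto intro!: Psiinv_Gu)

lemma Hu_c[simp,intro]: "u \<in> carr A \<Longrightarrow> Hu u \<in> carr W0"
  unfolding Hu_def using Hu_term_c by (intro W3.O.T.ks_closed) auto

lemma Gu_add: assumes "u \<in> carr A" "u' \<in> carr A" "l < np" "j \<in> I1"
  shows "Gu (addm A u u') l j = (\<lambda>c. if c \<in> carr B then addm P' (Gu u l j c) (Gu u' l j c) else zerom P')"
  unfolding Gu_def using assms \<pi>l_h[OF assms(3)]
  by (intro ext) (simp add: subB' KA.distr phi_add phi_c kP_add iP'.add_smul)

lemma Hu_add: assumes "u \<in> carr A" "u' \<in> carr A" shows "Hu (addm A u u') = addm W0 (Hu u) (Hu u')"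
proof -
  have "Hu (addm A u u') = ks W0 (\<lambda>lj. addm W0 (W3.t3 (\<Psi>inv (Gu u (fst lj) (snd lj))) (qg (snd lj)) (pl (fst lj)))
         (W3.t3 (\<Psi>inv (Gu u' (fst lj) (snd lj))) (qg (snd lj)) (pl (fst lj)))) ({..<np} \<times> I1)"
    unfolding Hu_def
  proof (rule W3.O.T.ks_cong[OF refl])
    fix lj assume "lj \<in> {..<np} \<times> I1"
    then obtain l j where lj: "lj = (l, j)" "l < np" "j \<in> I1" by blast
    show "W3.t3 (\<Psi>inv (Gu (addm A u u') (fst lj) (snd lj))) (qg (snd lj)) (pl (fst lj)) =
       addm W0 (W3.t3 (\<Psi>inv (Gu u (fst lj) (snd lj))) (qg (snd lj)) (pl (fst lj)))
         (W3.t3 (\<Psi>inv (Gu u' (fst lj) (snd lj))) (qg (snd lj)) (pl (fst lj)))"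
      using assms lj by (simp add: Gu_add Psiinv_add Gu_homk W3.t3_add1)
    show "addm W0 (W3.t3 (\<Psi>inv (Gu u (fst lj) (snd lj))) (qg (snd lj)) (pl (fst lj)))
         (W3.t3 (\<Psi>inv (Gu u' (fst lj) (snd lj))) (qg (snd lj)) (pl (fst lj))) \<in> carr W0"
      using assms lj by simp
  qed
  also have "... = addm W0 (Hu u) (Hu u')" unfolding Hu_def using assms Hu_term_c
    by (intro W3.O.T.ks_add) auto
  finally show ?thesis .
qed

lemma rW_lin_map: "b \<in> carr B \<Longrightarrow> klinear W0 W0 (rW b)"
  unfolding klinear_def using rW_add rW_smul by simp
lemma lW_lin_map: "b \<in> carr B \<Longrightarrow> klinear W0 W0 (lW b)"
  unfolding klinear_def using lW_add lW_smul by simp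

lemma Hu_shift: assumes "u \<in> carr A" "b \<in> carr B" shows "Hu (mulm A u b) = rW b (Hu u)"
proof -
  have G: "Gu (mulm A u b) l j = (\<lambda>c. if c \<in> carr B then Gu u l j (mulm B b c) else zerom P')" for l j
  proof
    fix c show "Gu (mulm A u b) l j c = (if c \<in> carr B then Gu u l j (mulm B b c) else zerom P')"
    proof (cases "c \<in> carr B")
      case True
      have "mulm A (mulm A u b) c = mulm A u (mulm B b c)" using assms True by (simp add: subB' sub_mul KA.m_assoc)
      thus ?thesis unfolding Gu_def using True assms by simp
    qed (simp add: Gu_def)
  qed
  have "rW b (Hu u) = ks W0 (\<lambda>lj. rW b (W3.t3 (\<Psi>inv (Gu u (fst lj) (snd lj))) (qg (snd lj)) (pl (fst lj)))) ({..<np} \<times> I1)"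
    unfolding Hu_def using assms Hu_term_c W3.O.T.km_axioms
    by (intro km2.lin_ks[OF km2.intro rW_lin_map]) auto
  also have "... = Hu (mulm A u b)" unfolding Hu_def
  proof (rule W3.O.T.ks_cong[OF refl])
    fix lj assume "lj \<in> {..<np} \<times> I1"
    then obtain l j where lj: "lj = (l, j)" "l < np" "j \<in> I1" by blast
    show "rW b (W3.t3 (\<Psi>inv (Gu u (fst lj) (snd lj))) (qg (snd lj)) (pl (fst lj))) =
      W3.t3 (\<Psi>inv (Gu (mulm A u b) (fst lj) (snd lj))) (qg (snd lj)) (pl (fst lj))"
      using assms lj by (simp add: rW_t3 G Psiinv_shift Gu_homk)
    show "W3.t3 (\<Psi>inv (Gu (mulm A u b) (fst lj) (snd lj))) (qg (snd lj)) (pl (fst lj)) \<in> carr W0"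
      using assms lj by (simp add: subB')
  qed
  finally show ?thesis by simp
qed

lemma Hu_twist: assumes "u \<in> carr A" "b \<in> carr B" shows "Hu (mulm A b u) = lW b (Hu u)"
proof -
  have b': "iA b \<in> carr B" "\<nu>A (iA b) = b" using iA_B assms by auto
  have G: "Gu (mulm A b u) l j = (\<lambda>c. if c \<in> carr B then Gu u l j (mulm B c (iA b)) else zerom P')" for l j
  proof
    fix c show "Gu (mulm A b u) l j c = (if c \<in> carr B then Gu u l j (mulm B c (iA b)) else zerom P')"
    proof (cases "c \<in> carr B")
      case True
      have "\<phi> (mulm A (mulm A b u) c) = \<phi> (mulm A (\<nu>A (iA b)) (mulm A u c))"
        using assms True b' by (simp add: subB' KA.m_assoc)
      also have "... = \<phi> (mulm A (mulm A u c) (iA b))" using assms True b' by (simp add: subB' phi_nak)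
      also have "... = \<phi> (mulm A u (mulm B c (iA b)))" using assms True b' by (simp add: subB' sub_mul KA.m_assoc)
      finally show ?thesis unfolding Gu_def using True b' by simp
    qed (simp add: Gu_def)
  qed
  have "lW b (Hu u) = ks W0 (\<lambda>lj. lW b (W3.t3 (\<Psi>inv (Gu u (fst lj) (snd lj))) (qg (snd lj)) (pl (fst lj)))) ({..<np} \<times> I1)"
    unfolding Hu_def using assms Hu_term_c W3.O.T.km_axioms
    by (intro km2.lin_ks[OF km2.intro lW_lin_map]) auto
  also have "... = Hu (mulm A b u)" unfolding Hu_def
  proof (rule W3.O.T.ks_cong[OF refl])
    fix lj assume "lj \<in> {..<np} \<times> I1"
    then obtain l j where lj: "lj = (l, j)" "l < np" "j \<in> I1" by blast
    show "lW b (W3.t3 (\<Psi>inv (Gu u (fst lj) (snd lj))) (qg (snd lj)) (pl (fst lj))) =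
      W3.t3 (\<Psi>inv (Gu (mulm A b u) (fst lj) (snd lj))) (qg (snd lj)) (pl (fst lj))"
      using assms lj b' by (simp add: lW_t3 G Psiinv_twist Gu_homk \<beta>_def)
    show "W3.t3 (\<Psi>inv (Gu (mulm A b u) (fst lj) (snd lj))) (qg (snd lj)) (pl (fst lj)) \<in> carr W0"
      using assms lj by (simp add: subB')
  qed
  finally show ?thesis by simp
qed

lemma H_rhom: assumes "a \<in> carr A" shows "H a \<in> rhom B (alg_bimod A) WW"
  unfolding rhom_def WW_simps alg_bimod_def H_def
  using assms by (auto simp: KA.distl Hu_add subB' KA.m_assoc[symmetric] Hu_shift WW_simps)

lemma H_add: assumes "x \<in> carr A" "y \<in> carr A"
  shows "H (addm A x y) = (\<lambda>z. if z \<in> carr A then badd WW (H x z) (H y z) else bzero WW)"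
  unfolding H_def WW_simps using assms by (intro ext) (simp add: KA.distr Hu_add)

lemma H_mul: assumes "b \<in> carr B" "x \<in> carr A" "a \<in> carr A"
  shows "H (mulm A (mulm A b x) a) = (\<lambda>z. if z \<in> carr A then lact WW b (H x (mulm A a z)) else bzero WW)"
  unfolding H_def WW_simps using assms
  by (intro ext) (simp add: subB' KA.m_assoc Hu_twist)

end




context frob2 begin

declare iP'.kdual_carr[simp del]
lemma carrQ: "carr Q = homk P' kring" by (rule iP'.kdual_carr)
lemma smulQ: "smulm Q r q = (\<lambda>x. r * q x)" by (simp add: iP'.kdual_carr)
lemma addQ: "addm Q q q' = (\<lambda>x. q x + q' x)" by (simp add: iP'.kdual_carr)
lemma zeroQ: "zerom Q = (\<lambda>x. 0)" by (simp add: iP'.kdual_carr)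

lemma km2_W0P: "km2 W0 P" by (rule km2.intro, rule W3.O.T.km_axioms, rule iP.km_axioms)
lemma km2_QW0: "km2 Q W0" by (rule km2.intro, rule KQ.km_axioms, rule W3.O.T.km_axioms)
lemma km2_PW0: "km2 P W0" by (rule km2.intro, rule iP.km_axioms, rule W3.O.T.km_axioms)

lemma \<Theta>1_lin: "klinear W0 P \<Theta>1" unfolding klinear_def using \<Theta>1_add \<Theta>1_smul by simp

lemma t3_lin2: "x \<in> carr B \<Longrightarrow> p \<in> carr P \<Longrightarrow> klinear Q W0 (\<lambda>q. W3.t3 x q p)"
  unfolding klinear_def using W3.t3_add2 W3.t3_smul2 by simp
lemma t3_lin3: "x \<in> carr B \<Longrightarrow> q \<in> carr Q \<Longrightarrow> klinear P W0 (\<lambda>p. W3.t3 x q p)"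
  unfolding klinear_def using W3.t3_add3 W3.t3_smul3 by simp

lemma \<Theta>1_Hu: assumes u: "u \<in> carr A" shows "\<Theta>1 (Hu u) = \<phi> u"
proof -
  have t: "\<And>l j. l < np \<Longrightarrow> j \<in> I1 \<Longrightarrow> \<Theta>1 (W3.t3 (\<Psi>inv (Gu u l j)) (qg j) (pl l)) =
      smulm P (\<pi>l l (\<phi> u) * qg j (yg j)) (pl l)"
  proof -
    fix l j assume lj: "l < np" "j \<in> I1"
    have "\<psi> (\<Psi>inv (Gu u l j)) = \<psi> (mulm B (\<Psi>inv (Gu u l j)) (onem B))" using u lj by simp
    also have "... = Gu u l j (onem B)" by (rule Psiinv_spec[OF Gu_homk[OF u lj] KB.one_closed])
    also have "... = smulm P' (\<pi>l l (\<phi> u)) (yg j)" unfolding Gu_def using u KB.one_closed by (simp add: sub_one)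
    finally show "?thesis l j" using u lj by (simp add: \<Theta>1_t3 q_smul)
  qed
  have "\<Theta>1 (Hu u) = ks P (\<lambda>lj. \<Theta>1 (W3.t3 (\<Psi>inv (Gu u (fst lj) (snd lj))) (qg (snd lj)) (pl (fst lj)))) ({..<np} \<times> I1)"
    unfolding Hu_def using u Hu_term_c by (intro km2.lin_ks[OF km2_W0P \<Theta>1_lin]) auto
  also have "... = ks P (\<lambda>lj. smulm P (\<pi>l (fst lj) (\<phi> u) * qg (snd lj) (yg (snd lj))) (pl (fst lj))) ({..<np} \<times> I1)"
  proof (rule iP.ks_cong[OF refl])
    fix lj assume "lj \<in> {..<np} \<times> I1"
    then obtain l j where lj: "lj = (l, j)" "l < np" "j \<in> I1" by blast
    thus "\<Theta>1 (W3.t3 (\<Psi>inv (Gu u (fst lj) (snd lj))) (qg (snd lj)) (pl (fst lj))) =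
      smulm P (\<pi>l (fst lj) (\<phi> u) * qg (snd lj) (yg (snd lj))) (pl (fst lj))" using t by simp
    show "smulm P (\<pi>l (fst lj) (\<phi> u) * qg (snd lj) (yg (snd lj))) (pl (fst lj)) \<in> carr P" using lj by simp
  qed
  also have "... = ks P (\<lambda>l. ks P (\<lambda>j. smulm P (\<pi>l l (\<phi> u) * qg j (yg j)) (pl l)) I1) {..<np}"
    using gP' by (subst iP.ks_prod) auto
  also have "... = ks P (\<lambda>l. smulm P (\<pi>l l (\<phi> u)) (pl l)) {..<np}"
  proof (rule iP.ks_cong[OF refl])
    fix l assume l: "l \<in> {..<np}"
    have "ks P (\<lambda>j. smulm P (\<pi>l l (\<phi> u) * qg j (yg j)) (pl l)) I1 = smulm P (\<Sum>j\<in>I1. \<pi>l l (\<phi> u) * qg j (yg j)) (pl l)"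
      using l by (intro iP.smul_ks[symmetric]) auto
    also have "... = smulm P (\<pi>l l (\<phi> u)) (pl l)" using gP' by (simp add: sum_distrib_left[symmetric])
    finally show "ks P (\<lambda>j. smulm P (\<pi>l l (\<phi> u) * qg j (yg j)) (pl l)) I1 = smulm P (\<pi>l l (\<phi> u)) (pl l)" .
    show "smulm P (\<pi>l l (\<phi> u)) (pl l) \<in> carr P" using l by simp
  qed
  also have "... = \<phi> u" using dbP phi_c[OF u] by simp
  finally show ?thesis .
qed

lemma H_inj: "inj_on H (carr A)"
proof (rule inj_onI)
  fix a a' assume a: "a \<in> carr A" "a' \<in> carr A" "H a = H a'"
  have "hom_ract A P \<phi> a = hom_ract A P \<phi> a'"
  proof
    fix z show "hom_ract A P \<phi> a z = hom_ract A P \<phi> a' z"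
    proof (cases "z \<in> carr A")
      case True
      have "H a z = H a' z" using a by simp
      hence "\<Theta>1 (Hu (mulm A a z)) = \<Theta>1 (Hu (mulm A a' z))" unfolding H_def using True by simp
      thus ?thesis unfolding hom_ract_def using True a by (simp add: \<Theta>1_Hu)
    qed (simp add: hom_ract_def)
  qed
  thus "a = a'" using phi_bij a unfolding bij_betw_def inj_on_def by blast
qed

lemma rW_smulb: assumes "c \<in> carr B" "w \<in> carr W0" shows "rW (smulm B r c) w = smulm W0 r (rW c w)"
  using assms(2)
proof (rule W3.T3_self_ext)
  fix x q p assume "x \<in> carr B" "q \<in> carr Q" "p \<in> carr P"
  thus "rW (smulm B r c) (W3.t3 x q p) = smulm W0 r (rW c (W3.t3 x q p))"
    using assms by (simp add: rW_t3 KB.smul_m2 W3.t3_smul1)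
qed (use assms in \<open>simp_all add: rW_add W3.O.T.smul_add\<close>)

definition "Gw w l j = (\<lambda>c. if c \<in> carr B then smulm P' (\<pi>l l (\<Theta>1 (rW c w))) (yg j) else zerom P')"
definition "Rc w = ks W0 (\<lambda>lj. W3.t3 (\<Psi>inv (Gw w (fst lj) (snd lj))) (qg (snd lj)) (pl (fst lj))) ({..<np} \<times> I1)"

lemma Gw_homk: assumes "w \<in> carr W0" "l < np" "j \<in> I1" shows "Gw w l j \<in> homk B P'"
  unfolding Gw_def using assms
  by (intro KB.homkI) (simp_all add: rW_addb rW_smulb \<Theta>1_add \<Theta>1_smul kP_add kP_smul iP'.add_smul iP'.smul_smul)

lemma Psiinv_Gw[simp,intro]: "w \<in> carr W0 \<Longrightarrow> l < np \<Longrightarrow> j \<in> I1 \<Longrightarrow> \<Psi>inv (Gw w l j) \<in> carr B"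
  using Gw_homk Psiinv by blast

lemma Rc_term_c: "w \<in> carr W0 \<Longrightarrow> lj \<in> {..<np} \<times> I1 \<Longrightarrow>
   W3.t3 (\<Psi>inv (Gw w (fst lj) (snd lj))) (qg (snd lj)) (pl (fst lj)) \<in> carr W0"
  by (rule W3.t3_closed) (auto intro!: Psiinv_Gw)

lemma Rc_c[simp,intro]: "w \<in> carr W0 \<Longrightarrow> Rc w \<in> carr W0"
  unfolding Rc_def using Rc_term_c by (intro W3.O.T.ks_closed) auto

lemma Gw_add: assumes "w \<in> carr W0" "w' \<in> carr W0" "l < np" "j \<in> I1"
  shows "Gw (addm W0 w w') l j = (\<lambda>c. if c \<in> carr B then addm P' (Gw w l j c) (Gw w' l j c) else zerom P')"
  unfolding Gw_def using assms
  by (intro ext) (simp add: rW_add \<Theta>1_add kP_add iP'.add_smul)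

lemma Rc_add: assumes "w \<in> carr W0" "w' \<in> carr W0" shows "Rc (addm W0 w w') = addm W0 (Rc w) (Rc w')"
proof -
  have "Rc (addm W0 w w') = ks W0 (\<lambda>lj. addm W0 (W3.t3 (\<Psi>inv (Gw w (fst lj) (snd lj))) (qg (snd lj)) (pl (fst lj)))
         (W3.t3 (\<Psi>inv (Gw w' (fst lj) (snd lj))) (qg (snd lj)) (pl (fst lj)))) ({..<np} \<times> I1)"
    unfolding Rc_def
  proof (rule W3.O.T.ks_cong[OF refl])
    fix lj assume "lj \<in> {..<np} \<times> I1"
    then obtain l j where lj: "lj = (l, j)" "l < np" "j \<in> I1" by blast
    show "W3.t3 (\<Psi>inv (Gw (addm W0 w w') (fst lj) (snd lj))) (qg (snd lj)) (pl (fst lj)) =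
       addm W0 (W3.t3 (\<Psi>inv (Gw w (fst lj) (snd lj))) (qg (snd lj)) (pl (fst lj)))
         (W3.t3 (\<Psi>inv (Gw w' (fst lj) (snd lj))) (qg (snd lj)) (pl (fst lj)))"
      using assms lj by (simp add: Gw_add Psiinv_add Gw_homk W3.t3_add1)
    show "addm W0 (W3.t3 (\<Psi>inv (Gw w (fst lj) (snd lj))) (qg (snd lj)) (pl (fst lj)))
         (W3.t3 (\<Psi>inv (Gw w' (fst lj) (snd lj))) (qg (snd lj)) (pl (fst lj))) \<in> carr W0"
      using assms lj by simp
  qed
  also have "... = addm W0 (Rc w) (Rc w')" unfolding Rc_def using assms Rc_term_c
    by (intro W3.O.T.ks_add) auto
  finally show ?thesis .
qed

lemma ks_Q_app: assumes "\<And>i. i \<in> I \<Longrightarrow> F i \<in> carr Q" shows "ks Q F I = (\<lambda>y. \<Sum>i\<in>I. F i y)"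
  using assms
proof (induction I rule: infinite_finite_induct)
  case (infinite A)
  hence "ks Q F A = zerom Q" using KQ.ks_infinite by blast
  thus ?case using infinite by (simp add: zeroQ)
next
  case empty thus ?case by (simp add: zeroQ)
next
  case (insert x F') thus ?case by (simp add: KQ.ks_insert addQ)
qed

lemma q_decomp: assumes q: "q \<in> carr Q" shows "ks Q (\<lambda>j. smulm Q (iP'.rr q (yg j)) (qg j)) I1 = q"
proof -
  have "ks Q (\<lambda>j. smulm Q (iP'.rr q (yg j)) (qg j)) I1 = (\<lambda>y. \<Sum>j\<in>I1. smulm Q (iP'.rr q (yg j)) (qg j) y)"
    by (rule ks_Q_app) simp
  also have "... = q"
  proof
    fix y show "(\<Sum>j\<in>I1. smulm Q (iP'.rr q (yg j)) (qg j) y) = q y"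
    proof (cases "y \<in> carr P'")
      case True
      have "(\<Sum>j\<in>I1. smulm Q (iP'.rr q (yg j)) (qg j) y) = (\<Sum>j\<in>I1. qg j (smulm P' (iP'.rr q (yg j)) y))"
        using True by (intro sum.cong refl) (simp add: q_smul smulQ)
      also have "... = (\<Sum>j\<in>I1. qg j (smulm P' (q y) (yg j)))"
        using True q by (intro sum.cong refl) (simp add: iP'.rr_spec[symmetric] carrQ)
      also have "... = (\<Sum>j\<in>I1. q y * qg j (yg j))" by (intro sum.cong refl) (simp add: q_smul)
      also have "... = q y" using gP' by (simp add: sum_distrib_left[symmetric])
      finally show ?thesis .
    next
      case False thus ?thesis using q by (simp add: q_ext smulQ)
    qed
  qed
  finally show ?thesis .
qed

lemma Rc_t3: assumes x: "x \<in> carr B" and q: "q \<in> carr Q" and p: "p \<in> carr P"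
  shows "Rc (W3.t3 x q p) = W3.t3 x q p"
proof -
  have Psi: "\<Psi>inv (Gw (W3.t3 x q p) l j) = smulm B (\<pi>l l p * iP'.rr q (yg j)) x" if lj: "l < np" "j \<in> I1" for l j
  proof (rule Psiinv_eq)
    show "Gw (W3.t3 x q p) l j \<in> homk B P'" using assms lj by (intro Gw_homk) auto
    show "smulm B (\<pi>l l p * iP'.rr q (yg j)) x \<in> carr B" using x by simp
    fix c assume c: "c \<in> carr B"
    have "\<psi> (mulm B (smulm B (\<pi>l l p * iP'.rr q (yg j)) x) c) = smulm P' (\<pi>l l p) (smulm P' (iP'.rr q (yg j)) (\<psi> (mulm B x c)))"
      using x c by (simp add: KB.smul_m1 psi_smul iP'.smul_smul)
    also have "... = smulm P' (\<pi>l l p) (smulm P' (q (\<psi> (mulm B x c))) (yg j))"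
      using x c q lj by (simp add: iP'.rr_spec[symmetric] carrQ)
    also have "... = Gw (W3.t3 x q p) l j c"
      unfolding Gw_def using assms c lj by (simp add: rW_t3 \<Theta>1_t3 kP_smul iP'.smul_smul mult.commute)
    finally show "\<psi> (mulm B (smulm B (\<pi>l l p * iP'.rr q (yg j)) x) c) = Gw (W3.t3 x q p) l j c" .
  qed
  have "Rc (W3.t3 x q p) = ks W0 (\<lambda>lj. W3.t3 x (smulm Q (iP'.rr q (yg (snd lj))) (qg (snd lj))) (smulm P (\<pi>l (fst lj) p) (pl (fst lj)))) ({..<np} \<times> I1)"
    unfolding Rc_def
  proof (rule W3.O.T.ks_cong[OF refl])
    fix lj assume "lj \<in> {..<np} \<times> I1"
    then obtain l j where lj: "lj = (l, j)" "l < np" "j \<in> I1" by blast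
    show "W3.t3 (\<Psi>inv (Gw (W3.t3 x q p) (fst lj) (snd lj))) (qg (snd lj)) (pl (fst lj)) =
      W3.t3 x (smulm Q (iP'.rr q (yg (snd lj))) (qg (snd lj))) (smulm P (\<pi>l (fst lj) p) (pl (fst lj)))"
      using lj assms Psi[OF lj(2,3)]
      by (simp add: W3.t3_smul1 W3.t3_smul2 W3.t3_smul3 W3.O.T.smul_smul[symmetric] mult.commute)
    show "W3.t3 x (smulm Q (iP'.rr q (yg (snd lj))) (qg (snd lj))) (smulm P (\<pi>l (fst lj) p) (pl (fst lj))) \<in> carr W0"
      using lj assms by (intro W3.t3_closed KQ.smul_closed iP.smul_closed) auto
  qed
  also have "... = ks W0 (\<lambda>l. ks W0 (\<lambda>j. W3.t3 x (smulm Q (iP'.rr q (yg j)) (qg j)) (smulm P (\<pi>l l p) (pl l))) I1) {..<np}"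
    using gP' assms by (subst W3.O.T.ks_prod) (auto intro!: W3.t3_closed KQ.smul_closed iP.smul_closed)
  also have "... = ks W0 (\<lambda>l. W3.t3 x q (smulm P (\<pi>l l p) (pl l))) {..<np}"
  proof (rule W3.O.T.ks_cong[OF refl])
    fix l assume l: "l \<in> {..<np}"
    have "ks W0 (\<lambda>j. W3.t3 x (smulm Q (iP'.rr q (yg j)) (qg j)) (smulm P (\<pi>l l p) (pl l))) I1 =
        W3.t3 x (ks Q (\<lambda>j. smulm Q (iP'.rr q (yg j)) (qg j)) I1) (smulm P (\<pi>l l p) (pl l))"
      using l x by (intro km2.lin_ks[OF km2_QW0 t3_lin2, symmetric]) auto
    thus "ks W0 (\<lambda>j. W3.t3 x (smulm Q (iP'.rr q (yg j)) (qg j)) (smulm P (\<pi>l l p) (pl l))) I1 =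
        W3.t3 x q (smulm P (\<pi>l l p) (pl l))" using q_decomp[OF q] by simp
    show "W3.t3 x q (smulm P (\<pi>l l p) (pl l)) \<in> carr W0" using l assms by simp
  qed
  also have "... = W3.t3 x q (ks P (\<lambda>l. smulm P (\<pi>l l p) (pl l)) {..<np})"
    using x q by (intro km2.lin_ks[OF km2_PW0 t3_lin3, symmetric]) auto
  also have "... = W3.t3 x q p" using dbP p by simp
  finally show ?thesis .
qed

lemma Rc_id: "w \<in> carr W0 \<Longrightarrow> Rc w = w"
  by (rule W3.T3_self_ext) (simp_all add: Rc_add Rc_t3)

lemma H_surj: assumes F: "F \<in> rhom B (alg_bimod A) WW" shows "\<exists>a\<in>carr A. H a = F"
proof -
  have Fc: "\<And>z. z \<in> carr A \<Longrightarrow> F z \<in> carr W0" using F unfolding rhom_def alg_bimod_def WW_simps by simp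
  have Fa: "\<And>z z'. z \<in> carr A \<Longrightarrow> z' \<in> carr A \<Longrightarrow> F (addm A z z') = addm W0 (F z) (F z')"
    using F unfolding rhom_def alg_bimod_def WW_simps by simp
  have Fr: "\<And>z b. z \<in> carr A \<Longrightarrow> b \<in> carr B \<Longrightarrow> F (mulm A z b) = rW b (F z)"
    using F unfolding rhom_def alg_bimod_def by (simp add: WW_simps)
  have Fe: "\<And>z. z \<notin> carr A \<Longrightarrow> F z = zerom W0"
    using F unfolding rhom_def alg_bimod_def WW_simps by simp
  have Fs: "\<And>z r. z \<in> carr A \<Longrightarrow> F (smulm A r z) = smulm W0 r (F z)"
  proof -
    fix z r assume z: "z \<in> carr A"
    have "smulm B r (onem B) = smulm A r (onem A)" using sub_smul[of "onem B" r] sub_one KB.one_closed by simp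
    hence "smulm A r z = mulm A z (smulm B r (onem B))" using z by (simp add: KA.smul_one)
    hence "F (smulm A r z) = rW (smulm B r (onem B)) (F z)" using Fr z by simp
    thus "F (smulm A r z) = smulm W0 r (F z)" using rW_scalar Fc z by simp
  qed
  define g where "g z = (if z \<in> carr A then \<Theta>1 (F z) else zerom P)" for z
  have g: "g \<in> homk A P" unfolding g_def
    by (intro KA.homkI) (simp_all add: Fc Fa Fs \<Theta>1_add \<Theta>1_smul)
  have "g \<in> hom_ract A P \<phi> ` carr A" using g phi_bij bij_betw_imp_surj_on by metis
  then obtain a where a: "a \<in> carr A" "hom_ract A P \<phi> a = g" by (rule imageE) (rule that, assumption, rule sym)
  have ga: "\<And>z. z \<in> carr A \<Longrightarrow> \<phi> (mulm A a z) = \<Theta>1 (F z)"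
  proof -
    fix z assume z: "z \<in> carr A"
    have "hom_ract A P \<phi> a z = g z" using a by simp
    thus "\<phi> (mulm A a z) = \<Theta>1 (F z)" using z unfolding hom_ract_def g_def by simp
  qed
  have "H a = F"
  proof
    fix z show "H a z = F z"
    proof (cases "z \<in> carr A")
      case z: True
      have G: "Gw (F z) l j = Gu (mulm A a z) l j" for l j
      proof
        fix c show "Gw (F z) l j c = Gu (mulm A a z) l j c"
        proof (cases "c \<in> carr B")
          case True
          have "\<Theta>1 (rW c (F z)) = \<Theta>1 (F (mulm A z c))" using Fr z True by simp
          also have "... = \<phi> (mulm A a (mulm A z c))" using ga z True subB' by simp
          also have "... = \<phi> (mulm A (mulm A a z) c)" using a z True subB' by (simp add: KA.m_assoc)
          finally show ?thesis unfolding Gw_def Gu_def using True by simp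
        qed (simp add: Gw_def Gu_def)
      qed
      have "F z = Rc (F z)" using Rc_id Fc z by simp
      also have "... = Hu (mulm A a z)" unfolding Rc_def Hu_def G ..
      finally show ?thesis unfolding H_def using z by simp
    next
      case False thus ?thesis unfolding H_def using Fe by simp
    qed
  qed
  thus ?thesis using a(1) by (intro bexI[of _ a])
qed

lemma H_bij: "bij_betw H (carr A) (rhom B (alg_bimod A) WW)"
  unfolding bij_betw_def using H_inj H_rhom H_surj by blast

end




context km begin
lemma ks_bij_msum: assumes "bij_betw h {..<n} I" "\<And>i. i \<in> I \<Longrightarrow> f i \<in> carr M"
  shows "ks M f I = msum (addm M) (zerom M) (f \<circ> h) n"
proof -
  have "ks M f I = ks M f (h ` {..<n})" using assms(1) by (simp add: bij_betw_def)
  also have "... = ks M (f \<circ> h) {..<n}" using assms by (intro ks_reindex) (auto simp: bij_betw_def)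
  also have "... = msum (addm M) (zerom M) (f \<circ> h) n"
    using assms bij_betwE by (intro msum_ks[symmetric]) fastforce
  finally show ?thesis .
qed
end

context frob2 begin

lemma Q_decomp: assumes q: "q \<in> carr Q" shows "ks Q (\<lambda>i. smulm Q (q (e i)) (\<xi> i)) {..<ne} = q"
proof -
  have "ks Q (\<lambda>i. smulm Q (q (e i)) (\<xi> i)) {..<ne} = (\<lambda>y. \<Sum>i<ne. smulm Q (q (e i)) (\<xi> i) y)"
    by (rule ks_Q_app) simp
  also have "... = q"
  proof
    fix y show "(\<Sum>i<ne. smulm Q (q (e i)) (\<xi> i) y) = q y"
    proof (cases "y \<in> carr P'")
      case True
      have "(\<Sum>i<ne. smulm Q (q (e i)) (\<xi> i) y) = (\<Sum>i<ne. q (smulm P' (\<xi> i y) (e i)))"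
        using True q by (intro sum.cong refl) (simp add: smulQ q_smul mult.commute)
      also have "... = q (ks P' (\<lambda>i. smulm P' (\<xi> i y) (e i)) {..<ne})"
        using q True by (intro iP'.dual_ks[symmetric]) (auto simp: carrQ)
      also have "... = q y" using dbP' True by simp
      finally show ?thesis .
    next
      case False thus ?thesis using q dbP' by (simp add: q_ext smulQ carrQ iP'.homk_ext)
    qed
  qed
  finally show ?thesis .
qed

lemma P_decomp: "p \<in> carr P \<Longrightarrow> ks P (\<lambda>l. smulm P (\<pi>l l p) (pl l)) {..<np} = p"
  using dbP by simp

lemma B_decomp: "x \<in> carr B \<Longrightarrow> ks B (\<lambda>m. smulm B (\<beta>b m x) (bb m)) {..<nb} = x"
  using dbB by simp

lemma km2_BW0: "km2 B W0" by (rule km2.intro, rule KB.km_axioms, rule W3.O.T.km_axioms)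
lemma t3_lin1: "q \<in> carr Q \<Longrightarrow> p \<in> carr P \<Longrightarrow> klinear B W0 (\<lambda>x. W3.t3 x q p)"
  unfolding klinear_def using W3.t3_add1 W3.t3_smul1 by simp

lemma t3_ks2: "x \<in> carr B \<Longrightarrow> p \<in> carr P \<Longrightarrow> (\<And>i. i \<in> I \<Longrightarrow> f i \<in> carr Q) \<Longrightarrow>
   ks W0 (\<lambda>i. W3.t3 x (f i) p) I = W3.t3 x (ks Q f I) p"
  by (rule km2.lin_ks[OF km2_QW0 t3_lin2, symmetric])
lemma t3_ks3: "x \<in> carr B \<Longrightarrow> q \<in> carr Q \<Longrightarrow> (\<And>i. i \<in> I \<Longrightarrow> f i \<in> carr P) \<Longrightarrow>
   ks W0 (\<lambda>i. W3.t3 x q (f i)) I = W3.t3 x q (ks P f I)"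
  by (rule km2.lin_ks[OF km2_PW0 t3_lin3, symmetric])
lemma t3_ks1: "q \<in> carr Q \<Longrightarrow> p \<in> carr P \<Longrightarrow> (\<And>i. i \<in> I \<Longrightarrow> f i \<in> carr B) \<Longrightarrow>
   ks W0 (\<lambda>i. W3.t3 (f i) q p) I = W3.t3 (ks B f I) q p"
  by (rule km2.lin_ks[OF km2_BW0 t3_lin1, symmetric])

text \<open>Dual basis of W over B\<close>

definition "DB w = ks W0 (\<lambda>al. rW (\<theta> (e (fst al)) (\<pi>l (snd al)) w) (W3.t3 (onem B) (\<xi> (fst al)) (pl (snd al)))) ({..<ne} \<times> {..<np})"

lemma DB_term_c: "w \<in> carr W0 \<Longrightarrow> al \<in> {..<ne} \<times> {..<np} \<Longrightarrow>
  rW (\<theta> (e (fst al)) (\<pi>l (snd al)) w) (W3.t3 (onem B) (\<xi> (fst al)) (pl (snd al))) \<in> carr W0"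
  by (rule rW_closed) (auto intro!: \<theta>_all(2))

lemma DB_c: "w \<in> carr W0 \<Longrightarrow> DB w \<in> carr W0"
  unfolding DB_def using DB_term_c by (intro W3.O.T.ks_closed) auto

lemma DB_add: assumes "w \<in> carr W0" "w' \<in> carr W0" shows "DB (addm W0 w w') = addm W0 (DB w) (DB w')"
proof -
  have "DB (addm W0 w w') = ks W0 (\<lambda>al. addm W0 (rW (\<theta> (e (fst al)) (\<pi>l (snd al)) w) (W3.t3 (onem B) (\<xi> (fst al)) (pl (snd al))))
     (rW (\<theta> (e (fst al)) (\<pi>l (snd al)) w') (W3.t3 (onem B) (\<xi> (fst al)) (pl (snd al))))) ({..<ne} \<times> {..<np})"
    unfolding DB_def
  proof (rule W3.O.T.ks_cong[OF refl])
    fix al assume "al \<in> {..<ne} \<times> {..<np}"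
    then obtain a l where al: "al = (a, l)" "a < ne" "l < np" by blast
    show "rW (\<theta> (e (fst al)) (\<pi>l (snd al)) (addm W0 w w')) (W3.t3 (onem B) (\<xi> (fst al)) (pl (snd al))) =
      addm W0 (rW (\<theta> (e (fst al)) (\<pi>l (snd al)) w) (W3.t3 (onem B) (\<xi> (fst al)) (pl (snd al))))
       (rW (\<theta> (e (fst al)) (\<pi>l (snd al)) w') (W3.t3 (onem B) (\<xi> (fst al)) (pl (snd al))))"
      using al assms by (simp add: \<theta>_all rW_addb)
    show "addm W0 (rW (\<theta> (e (fst al)) (\<pi>l (snd al)) w) (W3.t3 (onem B) (\<xi> (fst al)) (pl (snd al))))
       (rW (\<theta> (e (fst al)) (\<pi>l (snd al)) w') (W3.t3 (onem B) (\<xi> (fst al)) (pl (snd al)))) \<in> carr W0"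
      using al assms by (simp add: \<theta>_all)
  qed
  also have "... = addm W0 (DB w) (DB w')" unfolding DB_def using assms DB_term_c
    by (intro W3.O.T.ks_add) auto
  finally show ?thesis .
qed

lemma DB_t3: assumes x: "x \<in> carr B" and q: "q \<in> carr Q" and p: "p \<in> carr P"
  shows "DB (W3.t3 x q p) = W3.t3 x q p"
proof -
  have "DB (W3.t3 x q p) = ks W0 (\<lambda>al. W3.t3 x (smulm Q (q (e (fst al))) (\<xi> (fst al))) (smulm P (\<pi>l (snd al) p) (pl (snd al)))) ({..<ne} \<times> {..<np})"
    unfolding DB_def
  proof (rule W3.O.T.ks_cong[OF refl])
    fix al assume "al \<in> {..<ne} \<times> {..<np}"
    then obtain a l where al: "al = (a, l)" "a < ne" "l < np" by blast
    show "rW (\<theta> (e (fst al)) (\<pi>l (snd al)) (W3.t3 x q p)) (W3.t3 (onem B) (\<xi> (fst al)) (pl (snd al))) =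
      W3.t3 x (smulm Q (q (e (fst al))) (\<xi> (fst al))) (smulm P (\<pi>l (snd al) p) (pl (snd al)))"
      using al assms by (simp add: \<theta>_all rW_t3 W3.t3_smul1 W3.t3_smul2 W3.t3_smul3 W3.O.T.smul_smul[symmetric] mult.commute)
    show "W3.t3 x (smulm Q (q (e (fst al))) (\<xi> (fst al))) (smulm P (\<pi>l (snd al) p) (pl (snd al))) \<in> carr W0"
      using al assms by (intro W3.t3_closed KQ.smul_closed iP.smul_closed) auto
  qed
  also have "... = ks W0 (\<lambda>a. ks W0 (\<lambda>l. W3.t3 x (smulm Q (q (e a)) (\<xi> a)) (smulm P (\<pi>l l p) (pl l))) {..<np}) {..<ne}"
    using assms by (subst W3.O.T.ks_prod) (auto intro!: W3.t3_closed KQ.smul_closed iP.smul_closed)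
  also have "... = ks W0 (\<lambda>a. W3.t3 x (smulm Q (q (e a)) (\<xi> a)) p) {..<ne}"
  proof (rule W3.O.T.ks_cong[OF refl])
    fix a assume a: "a \<in> {..<ne}"
    have "ks W0 (\<lambda>l. W3.t3 x (smulm Q (q (e a)) (\<xi> a)) (smulm P (\<pi>l l p) (pl l))) {..<np} =
       W3.t3 x (smulm Q (q (e a)) (\<xi> a)) (ks P (\<lambda>l. smulm P (\<pi>l l p) (pl l)) {..<np})"
      using a assms by (intro t3_ks3) auto
    thus "ks W0 (\<lambda>l. W3.t3 x (smulm Q (q (e a)) (\<xi> a)) (smulm P (\<pi>l l p) (pl l))) {..<np} =
       W3.t3 x (smulm Q (q (e a)) (\<xi> a)) p" using P_decomp[OF p] by simp
    show "W3.t3 x (smulm Q (q (e a)) (\<xi> a)) p \<in> carr W0" using a assms by (intro W3.t3_closed KQ.smul_closed) auto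
  qed
  also have "... = W3.t3 x (ks Q (\<lambda>a. smulm Q (q (e a)) (\<xi> a)) {..<ne}) p"
    using assms by (intro t3_ks2) auto
  also have "... = W3.t3 x q p" using Q_decomp[OF q] by simp
  finally show ?thesis .
qed

lemma DB_id: "w \<in> carr W0 \<Longrightarrow> DB w = w"
  by (rule W3.T3_self_ext) (simp_all add: DB_add DB_t3 DB_c)

lemma WW_rfgp: "rfgp B WW"
proof -
  define J where "J = {..<ne} \<times> {..<np}"
  obtain h where h: "bij_betw h {..<card J} J" unfolding J_def
    using ex_bij_betw_nat_finite lessThan_atLeast0 finite_cartesian_product finite_lessThan by metis
  have hJ: "\<And>i. i < card J \<Longrightarrow> h i \<in> J" using h bij_betwE by blast
  have hJ': "\<And>i. i < card J \<Longrightarrow> fst (h i) < ne \<and> snd (h i) < np" using hJ unfolding J_def by force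
  define xx where "xx i = W3.t3 (onem B) (\<xi> (fst (h i))) (pl (snd (h i)))" for i
  define ff where "ff i = \<theta> (e (fst (h i))) (\<pi>l (snd (h i)))" for i
  have 1: "\<forall>i<card J. xx i \<in> bcarr WW \<and> ff i \<in> rhom B WW (alg_bimod B)"
    using hJ' unfolding xx_def ff_def WW_simps by (auto intro!: \<theta>_rhom W3.t3_closed)
  have 2: "\<forall>y\<in>bcarr WW. y = msum (badd WW) (bzero WW) (\<lambda>i. ract WW (xx i) (ff i y)) (card J)"
  proof
    fix y assume y: "y \<in> bcarr WW"
    hence y': "y \<in> carr W0" using WW_simps by simp
    have "y = DB y" using DB_id y' by simp
    also have "... = msum (addm W0) (zerom W0) ((\<lambda>al. rW (\<theta> (e (fst al)) (\<pi>l (snd al)) y) (W3.t3 (onem B) (\<xi> (fst al)) (pl (snd al)))) \<circ> h) (card J)"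
      unfolding DB_def J_def[symmetric] using h DB_term_c y' by (intro W3.O.T.ks_bij_msum) (auto simp: J_def)
    finally show "y = msum (badd WW) (bzero WW) (\<lambda>i. ract WW (xx i) (ff i y)) (card J)"
      by (simp add: WW_simps xx_def ff_def comp_def)
  qed
  show ?thesis unfolding rfgp_def using 1 2 by blast
qed

text \<open>Generator condition\<close>

definition "gw js = W3.t3 (onem B) (qg (fst js)) (pg (snd js))"
definition "gf js = \<theta> (yg (fst js)) (\<pi>g (snd js))"

lemma gw_c: "js \<in> I1 \<times> I2 \<Longrightarrow> gw js \<in> carr W0" unfolding gw_def by auto
lemma gf_rhom: "js \<in> I1 \<times> I2 \<Longrightarrow> gf js \<in> rhom B WW (alg_bimod B)" unfolding gf_def by (auto intro!: \<theta>_rhom)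

lemma gen_sum: "ks B (\<lambda>js. gf js (gw js)) (I1 \<times> I2) = onem B"
proof -
  have "ks B (\<lambda>js. gf js (gw js)) (I1 \<times> I2) = ks B (\<lambda>js. smulm B (qg (fst js) (yg (fst js)) * \<pi>g (snd js) (pg (snd js))) (onem B)) (I1 \<times> I2)"
    by (rule KB.ks_cong[OF refl]) (auto simp: gf_def gw_def \<theta>_all)
  also have "... = smulm B (\<Sum>js\<in>I1 \<times> I2. qg (fst js) (yg (fst js)) * \<pi>g (snd js) (pg (snd js))) (onem B)"
    by (rule KB.smul_ks[symmetric]) simp
  also have "(\<Sum>js\<in>I1 \<times> I2. qg (fst js) (yg (fst js)) * \<pi>g (snd js) (pg (snd js))) = (\<Sum>j\<in>I1. qg j (yg j)) * (\<Sum>s\<in>I2. \<pi>g s (pg s))"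
    by (simp add: sum_product sum.cartesian_product case_prod_beta)
  finally show ?thesis using gP' gP by simp
qed

lemma WW_gen: "\<exists>n w f. (\<forall>i<n. w i \<in> bcarr WW \<and> f i \<in> rhom B WW (alg_bimod B)) \<and>
         msum (addm B) (zerom B) (\<lambda>i. f i (w i)) n = onem B"
proof -
  define J where "J = I1 \<times> I2"
  have fin: "finite J" unfolding J_def using gP gP' by simp
  obtain h where h: "bij_betw h {..<card J} J"
    using ex_bij_betw_nat_finite lessThan_atLeast0 fin by metis
  have hJ: "\<And>i. i < card J \<Longrightarrow> h i \<in> J" using h bij_betwE by blast
  have 1: "\<forall>i<card J. (gw \<circ> h) i \<in> bcarr WW \<and> (gf \<circ> h) i \<in> rhom B WW (alg_bimod B)"
    using hJ gw_c gf_rhom unfolding J_def WW_simps by simp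
  have "onem B = ks B (\<lambda>js. gf js (gw js)) J" using gen_sum J_def by simp
  also have "... = msum (addm B) (zerom B) ((\<lambda>js. gf js (gw js)) \<circ> h) (card J)"
    using h gw_c gf_rhom unfolding J_def
    by (intro KB.ks_bij_msum) (auto simp: rhom_def WW_simps alg_bimod_def)
  finally have 2: "msum (addm B) (zerom B) (\<lambda>i. (gf \<circ> h) i ((gw \<circ> h) i)) (card J) = onem B"
    by (simp add: comp_def)
  show ?thesis using 1 2 by blast
qed

definition "Lb b = (\<lambda>x. if x \<in> bcarr WW then lact WW b x else bzero WW)"

lemma Lb_rhom: "b \<in> carr B \<Longrightarrow> Lb b \<in> rhom B WW WW"
  unfolding rhom_def Lb_def WW_simps by (simp add: lW_add lW_rW)

lemma gen_beta: assumes "b \<in> carr B" shows "ks B (\<lambda>js. gf js (lW b (gw js))) (I1 \<times> I2) = \<beta> b"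
proof -
  have "ks B (\<lambda>js. gf js (lW b (gw js))) (I1 \<times> I2) = ks B (\<lambda>js. mulm B (\<beta> b) (gf js (gw js))) (I1 \<times> I2)"
    using assms by (intro KB.ks_cong refl) (auto simp: gf_def gw_def \<theta>_lW \<theta>_all)
  also have "... = mulm B (\<beta> b) (ks B (\<lambda>js. gf js (gw js)) (I1 \<times> I2))"
    using assms KB.km_axioms
    by (intro km2.lin_ks[OF km2.intro KB.lmul_lin, symmetric]) (auto simp: gf_def gw_def \<theta>_all)
  finally show ?thesis using gen_sum assms by simp
qed

lemma Lb_inj: "inj_on Lb (carr B)"
proof (rule inj_onI)
  fix b b' assume b: "b \<in> carr B" "b' \<in> carr B" "Lb b = Lb b'"
  have "\<And>w. w \<in> carr W0 \<Longrightarrow> lW b w = lW b' w"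
  proof -
    fix w assume "w \<in> carr W0"
    have "Lb b w = Lb b' w" using b by simp
    thus "lW b w = lW b' w" using \<open>w \<in> carr W0\<close> unfolding Lb_def WW_simps by simp
  qed
  hence "ks B (\<lambda>js. gf js (lW b (gw js))) (I1 \<times> I2) = ks B (\<lambda>js. gf js (lW b' (gw js))) (I1 \<times> I2)"
    using gw_c b by (intro KB.ks_cong refl) (auto simp: gf_def intro!: \<theta>_all(2) lW_closed gw_c)
  hence "\<beta> b = \<beta> b'" using gen_beta b by simp
  thus "b = b'" using beta_inj b by blast
qed

end




context frob2 begin

lemma Tm_addy: assumes "m < nb" "y \<in> carr P'" "y' \<in> carr P'" "w \<in> carr W0"
  shows "Tm m (addm P' y y') w = addm P (Tm m y w) (Tm m y' w)"
  using assms(4)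
proof (rule W3.T3_ext[OF _ iP.kmod])
  fix X Y assume "X \<in> carr W0" "Y \<in> carr W0"
  thus "addm P (Tm m y (addm W0 X Y)) (Tm m y' (addm W0 X Y)) = addm P (addm P (Tm m y X) (Tm m y' X)) (addm P (Tm m y Y) (Tm m y' Y))"
    using assms by (simp add: T_all iP.add_assoc iP.add_lcomm)
qed (use assms in \<open>simp_all add: T_all q_add distrib_left distrib_right iP.add_smul\<close>)

lemma Tm_smuly: assumes "m < nb" "y \<in> carr P'" "w \<in> carr W0"
  shows "Tm m (smulm P' s y) w = smulm P s (Tm m y w)"
  using assms(3)
proof (rule W3.T3_ext[OF _ iP.kmod])
qed (use assms in \<open>simp_all add: T_all q_smul iP.smul_smul iP.smul_add mult.left_commute\<close>)

definition "RT w = ks W0 (\<lambda>mi. W3.t3 (bb (fst mi)) (\<xi> (snd mi)) (Tm (fst mi) (e (snd mi)) w)) ({..<nb} \<times> {..<ne})"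

lemma RT_term_c: "w \<in> carr W0 \<Longrightarrow> mi \<in> {..<nb} \<times> {..<ne} \<Longrightarrow>
  W3.t3 (bb (fst mi)) (\<xi> (snd mi)) (Tm (fst mi) (e (snd mi)) w) \<in> carr W0"
  by (rule W3.t3_closed) (auto intro!: T_all(2))

lemma RT_c: "w \<in> carr W0 \<Longrightarrow> RT w \<in> carr W0"
  unfolding RT_def using RT_term_c by (intro W3.O.T.ks_closed) auto

lemma RT_add: assumes "w \<in> carr W0" "w' \<in> carr W0" shows "RT (addm W0 w w') = addm W0 (RT w) (RT w')"
proof -
  have "RT (addm W0 w w') = ks W0 (\<lambda>mi. addm W0 (W3.t3 (bb (fst mi)) (\<xi> (snd mi)) (Tm (fst mi) (e (snd mi)) w))
      (W3.t3 (bb (fst mi)) (\<xi> (snd mi)) (Tm (fst mi) (e (snd mi)) w'))) ({..<nb} \<times> {..<ne})"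
    unfolding RT_def
  proof (rule W3.O.T.ks_cong[OF refl])
    fix mi assume "mi \<in> {..<nb} \<times> {..<ne}"
    then obtain m i where mi: "mi = (m, i)" "m < nb" "i < ne" by blast
    show "W3.t3 (bb (fst mi)) (\<xi> (snd mi)) (Tm (fst mi) (e (snd mi)) (addm W0 w w')) =
      addm W0 (W3.t3 (bb (fst mi)) (\<xi> (snd mi)) (Tm (fst mi) (e (snd mi)) w))
      (W3.t3 (bb (fst mi)) (\<xi> (snd mi)) (Tm (fst mi) (e (snd mi)) w'))"
      using mi assms by (simp add: T_all W3.t3_add3)
    show "addm W0 (W3.t3 (bb (fst mi)) (\<xi> (snd mi)) (Tm (fst mi) (e (snd mi)) w))
      (W3.t3 (bb (fst mi)) (\<xi> (snd mi)) (Tm (fst mi) (e (snd mi)) w')) \<in> carr W0"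
      using mi assms by (simp add: T_all)
  qed
  also have "... = addm W0 (RT w) (RT w')" unfolding RT_def using assms RT_term_c
    by (intro W3.O.T.ks_add) auto
  finally show ?thesis .
qed

lemma RT_t3: assumes x: "x \<in> carr B" and q: "q \<in> carr Q" and p: "p \<in> carr P"
  shows "RT (W3.t3 x q p) = W3.t3 x q p"
proof -
  have "RT (W3.t3 x q p) = ks W0 (\<lambda>mi. W3.t3 (smulm B (\<beta>b (fst mi) x) (bb (fst mi))) (smulm Q (q (e (snd mi))) (\<xi> (snd mi))) p) ({..<nb} \<times> {..<ne})"
    unfolding RT_def
  proof (rule W3.O.T.ks_cong[OF refl])
    fix mi assume "mi \<in> {..<nb} \<times> {..<ne}"
    then obtain m i where mi: "mi = (m, i)" "m < nb" "i < ne" by blast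
    show "W3.t3 (bb (fst mi)) (\<xi> (snd mi)) (Tm (fst mi) (e (snd mi)) (W3.t3 x q p)) =
      W3.t3 (smulm B (\<beta>b (fst mi) x) (bb (fst mi))) (smulm Q (q (e (snd mi))) (\<xi> (snd mi))) p"
      using mi assms by (simp add: T_all W3.t3_smul1 W3.t3_smul2 W3.t3_smul3 W3.O.T.smul_smul[symmetric] mult.commute)
    show "W3.t3 (smulm B (\<beta>b (fst mi) x) (bb (fst mi))) (smulm Q (q (e (snd mi))) (\<xi> (snd mi))) p \<in> carr W0"
      using mi assms by (intro W3.t3_closed KQ.smul_closed KB.smul_closed) auto
  qed
  also have "... = ks W0 (\<lambda>m. ks W0 (\<lambda>i. W3.t3 (smulm B (\<beta>b m x) (bb m)) (smulm Q (q (e i)) (\<xi> i)) p) {..<ne}) {..<nb}"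
    using assms by (subst W3.O.T.ks_prod) (auto intro!: W3.t3_closed KQ.smul_closed KB.smul_closed)
  also have "... = ks W0 (\<lambda>m. W3.t3 (smulm B (\<beta>b m x) (bb m)) q p) {..<nb}"
  proof (rule W3.O.T.ks_cong[OF refl])
    fix m assume m: "m \<in> {..<nb}"
    have "ks W0 (\<lambda>i. W3.t3 (smulm B (\<beta>b m x) (bb m)) (smulm Q (q (e i)) (\<xi> i)) p) {..<ne} =
       W3.t3 (smulm B (\<beta>b m x) (bb m)) (ks Q (\<lambda>i. smulm Q (q (e i)) (\<xi> i)) {..<ne}) p"
      using m assms by (intro t3_ks2) auto
    thus "ks W0 (\<lambda>i. W3.t3 (smulm B (\<beta>b m x) (bb m)) (smulm Q (q (e i)) (\<xi> i)) p) {..<ne} =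
       W3.t3 (smulm B (\<beta>b m x) (bb m)) q p" using Q_decomp[OF q] by simp
    show "W3.t3 (smulm B (\<beta>b m x) (bb m)) q p \<in> carr W0" using m assms by (intro W3.t3_closed KB.smul_closed) auto
  qed
  also have "... = W3.t3 (ks B (\<lambda>m. smulm B (\<beta>b m x) (bb m)) {..<nb}) q p"
    using assms by (intro t3_ks1) auto
  also have "... = W3.t3 x q p" using B_decomp[OF x] by simp
  finally show ?thesis .
qed

lemma RT_id: "w \<in> carr W0 \<Longrightarrow> RT w = w"
  by (rule W3.T3_self_ext) (simp_all add: RT_add RT_t3 RT_c)

lemma Lb_surj: assumes F: "F \<in> rhom B WW WW" shows "\<exists>b\<in>carr B. Lb b = F"
proof -
  have Fc: "\<And>w. w \<in> carr W0 \<Longrightarrow> F w \<in> carr W0" using F unfolding rhom_def WW_simps by simp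
  have Fa: "\<And>w w'. w \<in> carr W0 \<Longrightarrow> w' \<in> carr W0 \<Longrightarrow> F (addm W0 w w') = addm W0 (F w) (F w')"
    using F unfolding rhom_def WW_simps by simp
  have Fr: "\<And>w c. w \<in> carr W0 \<Longrightarrow> c \<in> carr B \<Longrightarrow> F (rW c w) = rW c (F w)"
    using F unfolding rhom_def by (simp add: WW_simps)
  have Fe: "\<And>w. w \<notin> carr W0 \<Longrightarrow> F w = zerom W0" using F unfolding rhom_def WW_simps by simp
  have Fs: "\<And>w r. w \<in> carr W0 \<Longrightarrow> F (smulm W0 r w) = smulm W0 r (F w)"
  proof -
    fix w r assume w: "w \<in> carr W0"
    have "F (smulm W0 r w) = F (rW (smulm B r (onem B)) w)" using rW_scalar w by simp
    also have "... = rW (smulm B r (onem B)) (F w)" using Fr w by simp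
    finally show "F (smulm W0 r w) = smulm W0 r (F w)" using rW_scalar Fc w by simp
  qed
  have Flin: "klinear W0 W0 F" unfolding klinear_def using Fc Fa Fs by simp
  define hq where "hq m q y = (\<lambda>p. if p \<in> carr P then Tm m y (F (W3.t3 (onem B) q p)) else zerom P)" for m q y
  have hq: "hq m q y \<in> homk P P" if "m < nb" "q \<in> carr Q" "y \<in> carr P'" for m q y
    unfolding hq_def using that
    by (intro iP.homkI) (simp_all add: T_all Fc Fa Fs W3.t3_add3 W3.t3_smul3)
  define rF where "rF m q y = sc P (hq m q y)" for m q y
  have rF: "Tm m y (F (W3.t3 (onem B) q p)) = smulm P (rF m q y) p"
    if "m < nb" "q \<in> carr Q" "y \<in> carr P'" "p \<in> carr P" for m q y p
    using iP.sc_spec[OF hq[OF that(1-3)] that(4)] that unfolding rF_def hq_def by simp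
  have rF_addy: "rF m q (addm P' y y') = rF m q y + rF m q y'"
    if "m < nb" "q \<in> carr Q" "y \<in> carr P'" "y' \<in> carr P'" for m q y y'
  proof (rule iP.faithful)
    fix p assume p: "p \<in> carr P"
    show "smulm P (rF m q (addm P' y y')) p = smulm P (rF m q y + rF m q y') p"
      using that p rF[symmetric] by (simp add: iP.add_smul Tm_addy Fc)
  qed
  have rF_smuly: "rF m q (smulm P' s y) = s * rF m q y"
    if "m < nb" "q \<in> carr Q" "y \<in> carr P'" for m q y s
  proof (rule iP.faithful)
    fix p assume p: "p \<in> carr P"
    show "smulm P (rF m q (smulm P' s y)) p = smulm P (s * rF m q y) p"
      using that p rF[symmetric] by (simp add: iP.smul_smul Tm_smuly Fc)
  qed
  have rF_q: "rF m q y = (\<Sum>i<ne. q (e i) * rF m (\<xi> i) y)"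
    if "m < nb" "q \<in> carr Q" "y \<in> carr P'" for m q y
  proof (rule iP.faithful)
    fix p assume p: "p \<in> carr P"
    have "smulm P (rF m q y) p = Tm m y (F (W3.t3 (onem B) q p))" using rF that p by simp
    also have "W3.t3 (onem B) q p = ks W0 (\<lambda>i. W3.t3 (onem B) (smulm Q (q (e i)) (\<xi> i)) p) {..<ne}"
      using t3_ks2[of "onem B" p "{..<ne}" "\<lambda>i. smulm Q (q (e i)) (\<xi> i)"] Q_decomp that p by simp
    also have "F ... = ks W0 (\<lambda>i. F (W3.t3 (onem B) (smulm Q (q (e i)) (\<xi> i)) p)) {..<ne}"
      using p by (intro km2.lin_ks[OF km2.intro[OF W3.O.T.km_axioms W3.O.T.km_axioms] Flin]) auto
    also have "Tm m y ... = ks P (\<lambda>i. Tm m y (F (W3.t3 (onem B) (smulm Q (q (e i)) (\<xi> i)) p))) {..<ne}"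
      using p that Fc by (intro km2.lin_ks[OF km2_W0P]) (auto simp: klinear_def T_all)
    also have "... = ks P (\<lambda>i. smulm P (q (e i) * rF m (\<xi> i) y) p) {..<ne}"
    proof (rule iP.ks_cong[OF refl])
      fix i assume i: "i \<in> {..<ne}"
      have "Tm m y (F (W3.t3 (onem B) (smulm Q (q (e i)) (\<xi> i)) p)) = smulm P (q (e i)) (Tm m y (F (W3.t3 (onem B) (\<xi> i) p)))"
        using i p that by (simp add: W3.t3_smul2 Fs Fc T_all)
      thus "Tm m y (F (W3.t3 (onem B) (smulm Q (q (e i)) (\<xi> i)) p)) = smulm P (q (e i) * rF m (\<xi> i) y) p"
        using i p that rF by (simp add: iP.smul_smul)
      show "smulm P (q (e i) * rF m (\<xi> i) y) p \<in> carr P" using p by simp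
    qed
    also have "... = smulm P (\<Sum>i<ne. q (e i) * rF m (\<xi> i) y) p" using p by (rule iP.smul_ks[symmetric])
    finally show "smulm P (rF m q y) p = smulm P (\<Sum>i<ne. q (e i) * rF m (\<xi> i) y) p" .
  qed
  define D where "D m y = (if y \<in> carr P' then ks P' (\<lambda>i. smulm P' (rF m (\<xi> i) y) (e i)) {..<ne} else zerom P')" for m y
  have D: "D m \<in> homk P' P'" if m: "m < nb" for m
  proof (rule iP'.homkI)
    fix y assume "y \<in> carr P'" thus "D m y \<in> carr P'" unfolding D_def by (simp, intro iP'.ks_closed) auto
  next
    fix y y' assume y: "y \<in> carr P'" "y' \<in> carr P'"
    have "D m (addm P' y y') = ks P' (\<lambda>i. addm P' (smulm P' (rF m (\<xi> i) y) (e i)) (smulm P' (rF m (\<xi> i) y') (e i))) {..<ne}"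
      unfolding D_def using y m by (simp, intro iP'.ks_cong refl) (auto simp: rF_addy iP'.add_smul)
    also have "... = addm P' (D m y) (D m y')" unfolding D_def using y by (simp, intro iP'.ks_add) auto
    finally show "D m (addm P' y y') = addm P' (D m y) (D m y')" .
  next
    fix s y assume y: "y \<in> carr P'"
    have "D m (smulm P' s y) = ks P' (\<lambda>i. smulm P' s (smulm P' (rF m (\<xi> i) y) (e i))) {..<ne}"
      unfolding D_def using y m by (simp, intro iP'.ks_cong refl) (auto simp: rF_smuly iP'.smul_smul)
    also have "... = smulm P' s (D m y)" unfolding D_def using y by (simp, intro iP'.ks_smul[symmetric]) auto
    finally show "D m (smulm P' s y) = smulm P' s (D m y)" .
  next
    fix y assume "y \<notin> carr P'" thus "D m y = zerom P'" unfolding D_def by simp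
  qed
  define cF where "cF m = sc P' (D m)" for m
  have rFc: "rF m q y = cF m * q y" if "m < nb" "q \<in> carr Q" "y \<in> carr P'" for m q y
  proof -
    have "cF m * q y = q (smulm P' (cF m) y)" using that by (simp add: q_smul)
    also have "... = q (D m y)" using iP'.sc_spec[OF D[OF that(1)] that(3)] cF_def by simp
    also have "... = (\<Sum>i<ne. q (smulm P' (rF m (\<xi> i) y) (e i)))"
      unfolding D_def using that by (simp, intro iP'.dual_ks) (auto simp: carrQ)
    also have "... = (\<Sum>i<ne. q (e i) * rF m (\<xi> i) y)" using that by (intro sum.cong refl) (simp add: q_smul mult.commute)
    also have "... = rF m q y" using rF_q that by simp
    finally show ?thesis by simp
  qed
  define c where "c = ks B (\<lambda>m. smulm B (cF m) (bb m)) {..<nb}"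
  have c: "c \<in> carr B" unfolding c_def by (intro KB.ks_closed) auto
  have F1: "F (W3.t3 (onem B) q p) = W3.t3 c q p" if q: "q \<in> carr Q" and p: "p \<in> carr P" for q p
  proof -
    have Fw: "F (W3.t3 (onem B) q p) \<in> carr W0" using Fc q p by simp
    have "F (W3.t3 (onem B) q p) = RT (F (W3.t3 (onem B) q p))" using RT_id Fw by simp
    also have "... = ks W0 (\<lambda>mi. W3.t3 (smulm B (cF (fst mi)) (bb (fst mi))) (smulm Q (q (e (snd mi))) (\<xi> (snd mi))) p) ({..<nb} \<times> {..<ne})"
      unfolding RT_def
    proof (rule W3.O.T.ks_cong[OF refl])
      fix mi assume "mi \<in> {..<nb} \<times> {..<ne}"
      then obtain m i where mi: "mi = (m, i)" "m < nb" "i < ne" by blast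
      have "Tm m (e i) (F (W3.t3 (onem B) q p)) = smulm P (cF m * q (e i)) p" using rF rFc mi q p by simp
      thus "W3.t3 (bb (fst mi)) (\<xi> (snd mi)) (Tm (fst mi) (e (snd mi)) (F (W3.t3 (onem B) q p))) =
        W3.t3 (smulm B (cF (fst mi)) (bb (fst mi))) (smulm Q (q (e (snd mi))) (\<xi> (snd mi))) p"
        using mi q p by (simp add: W3.t3_smul1 W3.t3_smul2 W3.t3_smul3 W3.O.T.smul_smul[symmetric] mult.commute)
      show "W3.t3 (smulm B (cF (fst mi)) (bb (fst mi))) (smulm Q (q (e (snd mi))) (\<xi> (snd mi))) p \<in> carr W0"
        using mi q p by (intro W3.t3_closed KQ.smul_closed KB.smul_closed) auto
    qed
    also have "... = ks W0 (\<lambda>m. ks W0 (\<lambda>i. W3.t3 (smulm B (cF m) (bb m)) (smulm Q (q (e i)) (\<xi> i)) p) {..<ne}) {..<nb}"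
      using q p by (subst W3.O.T.ks_prod) (auto intro!: W3.t3_closed KQ.smul_closed KB.smul_closed)
    also have "... = ks W0 (\<lambda>m. W3.t3 (smulm B (cF m) (bb m)) q p) {..<nb}"
    proof (rule W3.O.T.ks_cong[OF refl])
      fix m assume m: "m \<in> {..<nb}"
      have "ks W0 (\<lambda>i. W3.t3 (smulm B (cF m) (bb m)) (smulm Q (q (e i)) (\<xi> i)) p) {..<ne} =
         W3.t3 (smulm B (cF m) (bb m)) (ks Q (\<lambda>i. smulm Q (q (e i)) (\<xi> i)) {..<ne}) p"
        using m q p by (intro t3_ks2) auto
      thus "ks W0 (\<lambda>i. W3.t3 (smulm B (cF m) (bb m)) (smulm Q (q (e i)) (\<xi> i)) p) {..<ne} =
         W3.t3 (smulm B (cF m) (bb m)) q p" using Q_decomp[OF q] by simp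
      show "W3.t3 (smulm B (cF m) (bb m)) q p \<in> carr W0" using m q p by (intro W3.t3_closed KB.smul_closed) auto
    qed
    also have "... = W3.t3 c q p" unfolding c_def using q p by (intro t3_ks1) auto
    finally show ?thesis .
  qed
  obtain b where b: "b \<in> carr B" "\<beta> b = c" using beta_surj[OF c] by blast
  have "Lb b = F"
  proof
    fix w show "Lb b w = F w"
    proof (cases "w \<in> carr W0")
      case True
      have "lW b w = F w" using True
      proof (rule W3.T3_self_ext)
        fix x q p assume xqp: "x \<in> carr B" "q \<in> carr Q" "p \<in> carr P"
        have "W3.t3 x q p = rW x (W3.t3 (onem B) q p)" using xqp by (simp add: rW_t3)
        hence "F (W3.t3 x q p) = rW x (F (W3.t3 (onem B) q p))" using Fr xqp by simp
        also have "... = W3.t3 (mulm B c x) q p" using F1 xqp c by (simp add: rW_t3)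
        finally show "lW b (W3.t3 x q p) = F (W3.t3 x q p)" using b xqp by (simp add: lW_t3)
      qed (use b Fc Fa in \<open>simp_all add: lW_add\<close>)
      thus ?thesis unfolding Lb_def WW_simps using True by simp
    next
      case False thus ?thesis unfolding Lb_def WW_simps using Fe by simp
    qed
  qed
  thus ?thesis using b(1) by (intro bexI[of _ b])
qed

lemma WW_invertible: "invertible_bimod B WW"
proof -
  have "bij_betw Lb (carr B) (rhom B WW WW)"
    unfolding bij_betw_def using Lb_inj Lb_rhom Lb_surj by blast
  hence "bij_betw (\<lambda>b x. if x \<in> bcarr WW then lact WW b x else bzero WW) (carr B) (rhom B WW WW)"
    unfolding Lb_def .
  thus ?thesis unfolding invertible_bimod_def using WW_bimodule WW_rfgp WW_gen by blast
qed

lemma main: "frobenius_ext B A WW"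
  unfolding frobenius_ext_def
proof (intro conjI)
  show "subalgebra B A" by (rule sub)
  show "invertible_bimod B WW" by (rule WW_invertible)
  show "rfgp B (alg_bimod A)" by (rule rfA)
  show "\<exists>H. bij_betw H (carr A) (rhom B (alg_bimod A) WW) \<and>
        (\<forall>x\<in>carr A. \<forall>y\<in>carr A. H (addm A x y) = (\<lambda>z. if z \<in> carr A then badd WW (H x z) (H y z) else bzero WW)) \<and>
        (\<forall>b\<in>carr B. \<forall>x\<in>carr A. \<forall>a\<in>carr A. H (mulm A (mulm A b x) a) = (\<lambda>z. if z \<in> carr A then lact WW b (H x (mulm A a z)) else bzero WW))"
    using H_bij H_add H_mul by blast
qed

end




theorem theorem7p4:
  fixes A B :: "('k::comm_ring_1, 'a) kalg"
    and P :: "('k, 'p) kmod" and P' :: "('k, 'q) kmod"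
    and \<nu>A \<nu>B :: "'a \<Rightarrow> 'a"
  assumes "invertible_kmod P" and "invertible_kmod P'"
    and "frobenius A P" and "frobenius B P'"
    and "subalgebra B A"
    and "rfgp B (alg_bimod A)"
    and "nakayama_aut A P \<nu>A" and "\<nu>A ` carr B = carr B"
    and "nakayama_aut B P' \<nu>B"
  shows "frobenius_ext B A
           (W_bimod B (\<lambda>b. \<nu>B (the_inv_into (carr A) \<nu>A b)) (kdual P') P)"
proof -
  interpret F: frob A B P P' \<nu>A \<nu>B using assms by unfold_locales
  obtain np :: nat and pl \<pi>l where dbP: "\<forall>i<np. pl i \<in> carr P \<and> \<pi>l i \<in> homk P kring"
      "\<forall>y\<in>carr P. y = ks P (\<lambda>i. smulm P (\<pi>l i y) (pl i)) {..<np}"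
    by (rule F.iP.dualbasis)
  obtain ne :: nat and e \<xi> where dbP': "\<forall>i<ne. e i \<in> carr P' \<and> \<xi> i \<in> homk P' kring"
      "\<forall>y\<in>carr P'. y = ks P' (\<lambda>i. smulm P' (\<xi> i y) (e i)) {..<ne}"
    by (rule F.iP'.dualbasis)
  obtain I1 :: "(nat \<times> nat) set" and qg yg where gP': "finite I1" "\<forall>i\<in>I1. qg i \<in> homk P' kring \<and> yg i \<in> carr P'"
      "(\<Sum>i\<in>I1. qg i (yg i)) = 1"
    by (rule F.iP'.generator)
  obtain I2 :: "(nat \<times> nat) set" and \<pi>g pg where gP: "finite I2" "\<forall>i\<in>I2. \<pi>g i \<in> homk P kring \<and> pg i \<in> carr P"
      "(\<Sum>i\<in>I2. \<pi>g i (pg i)) = 1"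
    by (rule F.iP.generator)
  have "kfgp B" using assms(4) unfolding frobenius_def by blast
  then obtain nb :: nat and bb \<beta>b where dbB: "\<forall>i<nb. bb i \<in> carr B \<and> \<beta>b i \<in> homk B kring"
      "\<forall>y\<in>carr B. y = ks B (\<lambda>i. smulm B (\<beta>b i y) (bb i)) {..<nb}"
    by (rule F.KB.kfgp_db)
  interpret F2: frob2 A B P P' \<nu>A \<nu>B np pl \<pi>l I1 qg yg ne e \<xi> I2 \<pi>g pg nb bb \<beta>b
    by (rule frob2.intro[OF F.frob_axioms], unfold_locales) (use dbP dbP' gP gP' dbB in auto)
  show ?thesis unfolding F.beta_eq by (rule F2.main)
qed



end
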